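(* Let $\phi$ be an instance of NAE-3SAT with boolean variables $x_1,\dots,x_n$ and clauses $C_1,\dots,C_m$, each clause consisting of three literals, and let $G$ be the bus graph constructed from $\phi$ as follows (all gadgets being vertex-disjoint): (1) for each variable $x_i$, an $(X_i,t_i,\overline{X}_i,f_i)$-variable-box, where $t_i$ and $f_i$ are the numbers of occurrences of the literals $x_i$ and $\overline{x_i}$ in $\phi$; (2) for each clause $C_q=(\ell_1\lor\ell_2\lor\ell_3)$: a $\mathcal{C}$-vertex $c_q$; an $(I_{q,1},O_{q,1})$-chain, an $(I_{q,2},O_{q,2})$-chain and an $(I_{q,3},O_{q,3})$-chain; edges $(O_{q,s},c_q)$ for $s=1,2,3$; and edges $(I_{q,s},p_s)$ for $s=1,2,3$, where, if $\ell_s$ is the $r$-th occurrence of the literal $x_i$ then $p_s=o^r_{X_i}$, and if $\ell_s$ is the $r$-th occurrence of the literal $\overline{x_i}$ then $p_s=o^r_{\overline{X}_i}$. Then $\phi$ is a yes-instance of NAE-3SAT (i.e. has a truth assignment under which every clause has at least one true and at least one false literal) if and only if $G$ is realizable.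
   Context: A bus graph is a finite bipartite graph $G=(\mathcal{B},\mathcal{C};\mathcal{E})$ with $\deg(c)\le 4$ for all $c\in\mathcal{C}$. A realization $\Gamma$ of $G$ in the integer grid is a drawing such that: (1) each $B\in\mathcal{B}$ is drawn as a closed line segment $\Gamma(B)$ along a grid line (a "bus"); (2) each $c\in\mathcal{C}$ is drawn as a grid point $\Gamma(c)$; (3) each edge $(B,c)\in\mathcal{E}$ is drawn as a closed line segment along a grid line between a point of $\Gamma(B)$ and $\Gamma(c)$, perpendicular to $\Gamma(B)$, containing no connectors or buses other than $\Gamma(B)$ and $\Gamma(c)$ (an edge may meet the bus at its endpoint; edges may cross other edges); (4) no two buses or connectors intersect. $G$ is realizable if it has a realization. An $(A,B)$-perp consists of three distinct $\mathcal{C}$-vertices $x,y,z$, five distinct $\mathcal{B}$-vertices $A,A',B,B',C$, and the twelve edges $(A,x),(A',x),(B,x),(B',x)$, $(A,y),(A',y),(B,y),(C,y)$, $(A,z),(A',z),(B',z),(C,z)$. A $(B,o)$-flipper consists of an $(A,B)$-perp (for a fresh $A$) plus a $\mathcal{C}$-vertex $o$ and edges $(B,o),(B',o)$. An $(I,O)$-chain consists of vertex-disjoint copies of an $(I,o_1)$-flipper, an $(I_1,o_2)$-flipper, an $(I_2,o_3)$-flipper and an $(I_3,O)$-perp, together with edges $(I_1,o_1),(I_2,o_2),(I_3,o_3)$. An $(A,k,B,l)$-variable-box consists of an $(A,B)$-perp together with additional $\mathcal{C}$-vertices $x_A,y_A,z_A,o^1_A,\dots,o^k_A,x_B,y_B,z_B,o^1_B,\dots,o^l_B$,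 additional $\mathcal{B}$-vertices $R_A,S_A,T_A,U_A,R_B,S_B,T_B,U_B$, and additional edges $(A,x_A),(R_A,x_A),(S_A,x_A),(U_A,x_A)$, $(A,y_A),(R_A,y_A),(T_A,y_A),(U_A,y_A)$, $(A,z_A),(S_A,z_A),(T_A,z_A),(U_A,z_A)$, $(R_A,o^i_A),(S_A,o^i_A)$ for $i=1,\dots,k$, and the analogous edges with $A$ replaced by $B$ (and $o^j_B$, $j=1,\dots,l$). *)

theory Defs
  imports "HOL-Analysis.Analysis"
begin

definition bus_graph :: "'b set \<Rightarrow> 'c set \<Rightarrow> ('b \<times> 'c) set \<Rightarrow> bool" where
  "bus_graph Bs Cs E \<longleftrightarrow> finite Bs \<and> finite Cs \<and> E \<subseteq> Bs \<times> Cs \<and>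
     (\<forall>c\<in>Cs. card {B. (B, c) \<in> E} \<le> 4)"

definition grid_point :: "real \<times> real \<Rightarrow> bool" where
  "grid_point p \<longleftrightarrow> fst p \<in> \<int> \<and> snd p \<in> \<int>"

text \<open>The flag is
only relevant for degenerate (one-point) buses, where it fixes which direction
counts as perpendicular.\<close>

definition bus_ok :: "bool \<Rightarrow> (real \<times> real) \<times> (real \<times> real) \<Rightarrow> bool" where
  "bus_ok h pq \<longleftrightarrow>
     (if h then snd (fst pq) = snd (snd pq) \<and> snd (fst pq) \<in> \<int>
           else fst (fst pq) = fst (snd pq) \<and> fst (fst pq) \<in> \<int>)"

definition seg :: "(real \<times> real) \<times> (real \<times> real) \<Rightarrow> (real \<times> real) set" where
  "seg pq = closed_segment (fst pq) (snd pq)"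

definition bus_realization ::
  "'b set \<Rightarrow> 'c set \<Rightarrow> ('b \<times> 'c) set \<Rightarrow> ('b \<Rightarrow> bool)
   \<Rightarrow> ('b \<Rightarrow> (real \<times> real) \<times> (real \<times> real)) \<Rightarrow> ('c \<Rightarrow> real \<times> real) \<Rightarrow> bool" where
  "bus_realization Bs Cs E hor bus pt \<longleftrightarrow>
     (\<forall>B\<in>Bs. bus_ok (hor B) (bus B)) \<and>
     (\<forall>c\<in>Cs. grid_point (pt c)) \<and>
     (\<forall>(B, c)\<in>E. \<exists>u\<in>seg (bus B).
        (if hor B then fst u = fst (pt c) else snd u = snd (pt c)) \<and>
        (\<forall>B'\<in>Bs. B' \<noteq> B \<longrightarrow> closed_segment u (pt c) \<inter> seg (bus B') = {}) \<and>
        (\<forall>c'\<in>Cs. c' \<noteq> c \<longrightarrow> pt c' \<notin> closed_segment u (pt c))) \<and>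
     (\<forall>B\<in>Bs. \<forall>B'\<in>Bs. B \<noteq> B' \<longrightarrow> seg (bus B) \<inter> seg (bus B') = {}) \<and>
     (\<forall>c\<in>Cs. \<forall>c'\<in>Cs. c \<noteq> c' \<longrightarrow> pt c \<noteq> pt c') \<and>
     (\<forall>B\<in>Bs. \<forall>c\<in>Cs. pt c \<notin> seg (bus B))"

definition realizable :: "'b set \<Rightarrow> 'c set \<Rightarrow> ('b \<times> 'c) set \<Rightarrow> bool" where
  "realizable Bs Cs E \<longleftrightarrow> (\<exists>hor bus pt. bus_realization Bs Cs E hor bus pt)"

datatype perpB = PA | PA' | PB | PB' | PC
datatype perpC = Px | Py | Pz

definition perp_edges :: "(perpB \<times> perpC) set" where
  "perp_edges = {(PA,Px),(PA',Px),(PB,Px),(PB',Px),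
                 (PA,Py),(PA',Py),(PB,Py),(PC,Py),
                 (PA,Pz),(PA',Pz),(PB',Pz),(PC,Pz)}"

text \<open>Variable box.  Side True is the A-side, side False the B-side of the
(A,k,B,l)-variable-box; VP r is the perp vertex with role r.\<close>
datatype vbB = VP perpB | VR bool | VS bool | VT bool | VU bool
datatype vbC = VPc perpC | Vx bool | Vy bool | Vz bool | Vo bool nat

definition vbox_base :: "bool \<Rightarrow> vbB" where
  "vbox_base s = (if s then VP PA else VP PB)"

definition vbox_edges :: "nat \<Rightarrow> nat \<Rightarrow> (vbB \<times> vbC) set" where
  "vbox_edges k l =
     map_prod VP VPc ` perp_edges \<union>
     (\<Union>s\<in>UNIV. {(vbox_base s, Vx s), (VR s, Vx s), (VS s, Vx s), (VU s, Vx s),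
                 (vbox_base s, Vy s), (VR s, Vy s), (VT s, Vy s), (VU s, Vy s),
                 (vbox_base s, Vz s), (VS s, Vz s), (VT s, Vz s), (VU s, Vz s)}) \<union>
     {(VR True, Vo True i) | i. i \<in> {1..k}} \<union> {(VS True, Vo True i) | i. i \<in> {1..k}} \<union>
     {(VR False, Vo False j) | j. j \<in> {1..l}} \<union> {(VS False, Vo False j) | j. j \<in> {1..l}}"

text \<open>Stages j = 1,2,3 are the flippers, stage 4 the final perp;
CB j r is the vertex with role r in the perp of stage j (so for j \<le> 3 the fresh A
of the flipper is CB j PA and its input is CB j PB), Co j is o_j.
Thus I = CB 1 PB, I_1 = CB 2 PB, I_2 = CB 3 PB, I_3 = CB 4 PA, O = CB 4 PB.\<close>
datatype chB = CB nat perpB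
datatype chC = CC nat perpC | Co nat

definition chain_in :: "nat \<Rightarrow> chB" where
  "chain_in j = (if j = 4 then CB 4 PA else CB j PB)"

definition chain_edges :: "(chB \<times> chC) set" where
  "chain_edges =
     (\<Union>j\<in>{1..4}. map_prod (CB j) (CC j) ` perp_edges) \<union>
     (\<Union>j\<in>{1..3}. {(CB j PB, Co j), (CB j PB', Co j)}) \<union>
     (\<Union>j\<in>{1..3}. {(chain_in (Suc j), Co j)})"

text \<open>A literal is a pair (i, p): variable x_i, positive if p, negated otherwise.
An instance has variables 0..<n and a list of clauses (lists of literals).\<close>

definition lit_val :: "(nat \<Rightarrow> bool) \<Rightarrow> nat \<times> bool \<Rightarrow> bool" where
  "lit_val a l = (a (fst l) = snd l)"

definition nae_sat :: "(nat \<times> bool) list list \<Rightarrow> bool" where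
  "nae_sat cls \<longleftrightarrow> (\<exists>a. \<forall>C\<in>set cls. (\<exists>l\<in>set C. lit_val a l) \<and> (\<exists>l\<in>set C. \<not> lit_val a l))"

text \<open>Occurrences are counted in reading order (clause by clause, left to right).
occ_num cls q s is r such that literal s of clause q is the r-th occurrence of that
literal (counting from 1).\<close>

definition occ_num :: "(nat \<times> bool) list list \<Rightarrow> nat \<Rightarrow> nat \<Rightarrow> nat" where
  "occ_num cls q s = count_list (concat (take q cls) @ take s (cls ! q)) (cls ! q ! s) + 1"

definition occ_total :: "(nat \<times> bool) list list \<Rightarrow> nat \<times> bool \<Rightarrow> nat" where
  "occ_total cls l = count_list (concat cls) l"

datatype gB = VarB nat vbB | ChB nat nat chB
datatype gC = VarC nat vbC | ChC nat nat chC | ClC nat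

definition nae_bus_edges :: "nat \<Rightarrow> (nat \<times> bool) list list \<Rightarrow> (gB \<times> gC) set" where
  "nae_bus_edges n cls =
     (\<Union>i\<in>{..<n}. map_prod (VarB i) (VarC i) `
          vbox_edges (occ_total cls (i, True)) (occ_total cls (i, False))) \<union>
     (\<Union>q\<in>{..<length cls}. \<Union>s\<in>{..<3}.
        map_prod (ChB q s) (ChC q s) ` chain_edges \<union>
        {(ChB q s (CB 4 PB), ClC q),
         (ChB q s (CB 1 PB),
            VarC (fst (cls ! q ! s)) (Vo (snd (cls ! q ! s)) (occ_num cls q s)))})"

text \<open>Every vertex of the constructed graph is incident to an edge, so its vertex
classes are the projections of its edge set.\<close>
definition nae_bus_graph :: "nat \<Rightarrow> (nat \<times> bool) list list \<Rightarrow> gB set \<times> gC set \<times> (gB \<times> gC) set" where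
  "nae_bus_graph n cls =
     (let E = nae_bus_edges n cls in (fst ` E, snd ` E, E))"

end

theory Submission
  imports Defs
begin

lemma seg_vert_mem:
  fixes a b p :: "real \<times> real"
  assumes "fst a = fst b" "fst p = fst a"
    and "min (snd a) (snd b) \<le> snd p" "snd p \<le> max (snd a) (snd b)"
  shows "p \<in> closed_segment a b"
proof -
  have "snd p \<in> closed_segment (snd a) (snd b)"
    using assms by (auto simp: closed_segment_eq_real_ivl split: if_splits)
  then obtain u where u: "0 \<le> u" "u \<le> 1" "snd p = (1 - u) * snd a + u * snd b"
    by (auto simp: closed_segment_def)
  have "p = (1 - u) *\<^sub>R a + u *\<^sub>R b"
    using u assms by (auto simp: prod_eq_iff algebra_simps)
  then show ?thesis using u by (auto simp: closed_segment_def)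
qed

lemma seg_hor_mem:
  fixes a b p :: "real \<times> real"
  assumes "snd a = snd b" "snd p = snd a"
    and "min (fst a) (fst b) \<le> fst p" "fst p \<le> max (fst a) (fst b)"
  shows "p \<in> closed_segment a b"
proof -
  have "fst p \<in> closed_segment (fst a) (fst b)"
    using assms by (auto simp: closed_segment_eq_real_ivl split: if_splits)
  then obtain u where u: "0 \<le> u" "u \<le> 1" "fst p = (1 - u) * fst a + u * fst b"
    by (auto simp: closed_segment_def)
  have "p = (1 - u) *\<^sub>R a + u *\<^sub>R b"
    using u assms by (auto simp: prod_eq_iff algebra_simps)
  then show ?thesis using u by (auto simp: closed_segment_def)
qed

lemma seg_mem_rect:
  fixes a b p :: "real \<times> real"
  assumes "p \<in> closed_segment a b"
  shows "min (fst a) (fst b) \<le> fst p \<and> fst p \<le> max (fst a) (fst b) \<and>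
         min (snd a) (snd b) \<le> snd p \<and> snd p \<le> max (snd a) (snd b)"
proof -
  obtain u where u: "0 \<le> u" "u \<le> 1" "p = (1 - u) *\<^sub>R a + u *\<^sub>R b"
    using assms by (auto simp: closed_segment_def)
  have f: "fst p = (1-u) * fst a + u * fst b" and s: "snd p = (1-u) * snd a + u * snd b"
    using u by auto
  have h: "min x y \<le> (1-u)*x + u*y \<and> (1-u)*x + u*y \<le> max x y" for x y :: real
  proof -
    have "(1-u)*x + u*y \<in> closed_segment x y" using u by (auto simp: closed_segment_def)
    then show ?thesis by (auto simp: closed_segment_eq_real_ivl split: if_splits)
  qed
  show ?thesis using h[of "fst a" "fst b"] h[of "snd a" "snd b"] f s by simp
qed

lemma closed_segment_rect:
  fixes a b :: "real \<times> real"
  assumes "fst a = fst b \<or> snd a = snd b"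
  shows "closed_segment a b = {p. min (fst a) (fst b) \<le> fst p \<and> fst p \<le> max (fst a) (fst b) \<and>
         min (snd a) (snd b) \<le> snd p \<and> snd p \<le> max (snd a) (snd b)}"
proof (rule set_eqI, rule iffI)
  fix p assume "p \<in> closed_segment a b" then show "p \<in> {p. min (fst a) (fst b) \<le> fst p \<and> fst p \<le> max (fst a) (fst b) \<and>
         min (snd a) (snd b) \<le> snd p \<and> snd p \<le> max (snd a) (snd b)}" using seg_mem_rect by blast
next
  fix p assume p: "p \<in> {p. min (fst a) (fst b) \<le> fst p \<and> fst p \<le> max (fst a) (fst b) \<and>
         min (snd a) (snd b) \<le> snd p \<and> snd p \<le> max (snd a) (snd b)}"
  show "p \<in> closed_segment a b"
  proof (cases "fst a = fst b")
    case True then show ?thesis using p by (intro seg_vert_mem) auto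
  next
    case False then have "snd a = snd b" using assms by auto
    then show ?thesis using p by (intro seg_hor_mem) auto
  qed
qed

lemma pair_conflict_v:
  fixes u1 u2 p :: "real \<times> real"
  assumes "fst u1 = fst p" "fst u2 = fst p" "u1 \<noteq> p" "u2 \<noteq> p"
    and "u2 \<in> S2" "closed_segment u1 p \<inter> S2 = {}"
    and "u1 \<in> S1" "closed_segment u2 p \<inter> S1 = {}"
  shows "(snd u1 < snd p) \<noteq> (snd u2 < snd p)"
proof
  assume eq: "(snd u1 < snd p) = (snd u2 < snd p)"
  have n1: "snd u1 \<noteq> snd p" using assms(1,3) by (auto simp: prod_eq_iff)
  have n2: "snd u2 \<noteq> snd p" using assms(2,4) by (auto simp: prod_eq_iff)
  show False
  proof (cases "snd u1 \<le> snd u2")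
    case True
    show False
    proof (cases "snd u2 < snd p")
      case True
      then have "u2 \<in> closed_segment u1 p" using \<open>snd u1 \<le> snd u2\<close> assms
        by (intro seg_vert_mem) auto
      then show False using assms(5,6) by blast
    next
      case False
      then have "u1 \<in> closed_segment u2 p" using \<open>snd u1 \<le> snd u2\<close> assms eq n1 n2
        by (intro seg_vert_mem) auto
      then show False using assms(7,8) by blast
    qed
  next
    case False
    show False
    proof (cases "snd u1 < snd p")
      case True
      then have "u1 \<in> closed_segment u2 p" using False assms
        by (intro seg_vert_mem) auto
      then show False using assms(7,8) by blast
    next
      case F2: False
      then have "u2 \<in> closed_segment u1 p" using False assms eq n1 n2
        by (intro seg_vert_mem) auto
      then show False using assms(5,6) by blast
    qed
  qed
qed

lemma pair_conflict_h:
  fixes u1 u2 p :: "real \<times> real"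
  assumes "snd u1 = snd p" "snd u2 = snd p" "u1 \<noteq> p" "u2 \<noteq> p"
    and "u2 \<in> S2" "closed_segment u1 p \<inter> S2 = {}"
    and "u1 \<in> S1" "closed_segment u2 p \<inter> S1 = {}"
  shows "(fst u1 < fst p) \<noteq> (fst u2 < fst p)"
proof
  assume eq: "(fst u1 < fst p) = (fst u2 < fst p)"
  have n1: "fst u1 \<noteq> fst p" using assms(1,3) by (auto simp: prod_eq_iff)
  have n2: "fst u2 \<noteq> fst p" using assms(2,4) by (auto simp: prod_eq_iff)
  show False
  proof (cases "fst u1 \<le> fst u2")
    case True
    show False
    proof (cases "fst u2 < fst p")
      case True
      then have "u2 \<in> closed_segment u1 p" using \<open>fst u1 \<le> fst u2\<close> assms
        by (intro seg_hor_mem) auto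
      then show False using assms(5,6) by blast
    next
      case False
      then have "u1 \<in> closed_segment u2 p" using \<open>fst u1 \<le> fst u2\<close> assms eq n1 n2
        by (intro seg_hor_mem) auto
      then show False using assms(7,8) by blast
    qed
  next
    case False
    show False
    proof (cases "fst u1 < fst p")
      case True
      then have "u1 \<in> closed_segment u2 p" using False assms
        by (intro seg_hor_mem) auto
      then show False using assms(7,8) by blast
    next
      case F2: False
      then have "u2 \<in> closed_segment u1 p" using False assms eq n1 n2
        by (intro seg_hor_mem) auto
      then show False using assms(5,6) by blast
    qed
  qed
qed

lemma no_three:
  assumes R: "bus_realization Bs Cs E hor bus pt"
    and c: "c \<in> Cs" and e: "(B1, c) \<in> E" "(B2, c) \<in> E" "(B3, c) \<in> E"
    and b: "B1 \<in> Bs" "B2 \<in> Bs" "B3 \<in> Bs"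
    and d: "B1 \<noteq> B2" "B1 \<noteq> B3" "B2 \<noteq> B3"
  shows "\<not> (hor B1 = hor B2 \<and> hor B2 = hor B3)"
proof
  assume hh: "hor B1 = hor B2 \<and> hor B2 = hor B3"
  have edge: "\<exists>u\<in>seg (bus B). (if hor B then fst u = fst (pt c) else snd u = snd (pt c)) \<and>
        (\<forall>B'\<in>Bs. B' \<noteq> B \<longrightarrow> closed_segment u (pt c) \<inter> seg (bus B') = {})"
    if "(B, c) \<in> E" for B
    using R that unfolding bus_realization_def by fast
  have notin: "pt c \<notin> seg (bus B)" if "B \<in> Bs" for B
    using R that c unfolding bus_realization_def by blast
  obtain u1 where u1: "u1 \<in> seg (bus B1)" "if hor B1 then fst u1 = fst (pt c) else snd u1 = snd (pt c)"
     "\<forall>B'\<in>Bs. B' \<noteq> B1 \<longrightarrow> closed_segment u1 (pt c) \<inter> seg (bus B') = {}"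
    using edge[OF e(1)] by blast
  obtain u2 where u2: "u2 \<in> seg (bus B2)" "if hor B2 then fst u2 = fst (pt c) else snd u2 = snd (pt c)"
     "\<forall>B'\<in>Bs. B' \<noteq> B2 \<longrightarrow> closed_segment u2 (pt c) \<inter> seg (bus B') = {}"
    using edge[OF e(2)] by blast
  obtain u3 where u3: "u3 \<in> seg (bus B3)" "if hor B3 then fst u3 = fst (pt c) else snd u3 = snd (pt c)"
     "\<forall>B'\<in>Bs. B' \<noteq> B3 \<longrightarrow> closed_segment u3 (pt c) \<inter> seg (bus B') = {}"
    using edge[OF e(3)] by blast
  have ne: "u1 \<noteq> pt c" "u2 \<noteq> pt c" "u3 \<noteq> pt c"
    using u1(1) u2(1) u3(1) notin b by auto
  show False
  proof (cases "hor B1")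
    case True
    then have f: "fst u1 = fst (pt c)" "fst u2 = fst (pt c)" "fst u3 = fst (pt c)"
      using hh u1(2) u2(2) u3(2) by auto
    have "(snd u1 < snd (pt c)) \<noteq> (snd u2 < snd (pt c))"
      by (rule pair_conflict_v[OF f(1,2) ne(1,2) u2(1) _ u1(1)]) (use u1(3) u2(3) b d in auto)
    moreover have "(snd u1 < snd (pt c)) \<noteq> (snd u3 < snd (pt c))"
      by (rule pair_conflict_v[OF f(1,3) ne(1,3) u3(1) _ u1(1)]) (use u1(3) u3(3) b d in auto)
    moreover have "(snd u2 < snd (pt c)) \<noteq> (snd u3 < snd (pt c))"
      by (rule pair_conflict_v[OF f(2,3) ne(2,3) u3(1) _ u2(1)]) (use u2(3) u3(3) b d in auto)
    ultimately show False by blast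
  next
    case False
    then have f: "snd u1 = snd (pt c)" "snd u2 = snd (pt c)" "snd u3 = snd (pt c)"
      using hh u1(2) u2(2) u3(2) by auto
    have "(fst u1 < fst (pt c)) \<noteq> (fst u2 < fst (pt c))"
      by (rule pair_conflict_h[OF f(1,2) ne(1,2) u2(1) _ u1(1)]) (use u1(3) u2(3) b d in auto)
    moreover have "(fst u1 < fst (pt c)) \<noteq> (fst u3 < fst (pt c))"
      by (rule pair_conflict_h[OF f(1,3) ne(1,3) u3(1) _ u1(1)]) (use u1(3) u3(3) b d in auto)
    moreover have "(fst u2 < fst (pt c)) \<noteq> (fst u3 < fst (pt c))"
      by (rule pair_conflict_h[OF f(2,3) ne(2,3) u3(1) _ u2(1)]) (use u2(3) u3(3) b d in auto)
    ultimately show False by blast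
  qed
qed

context
  fixes E :: "('b \<times> 'c) set" and hor bus pt
  assumes R: "bus_realization (fst ` E) (snd ` E) E hor bus pt"
begin

lemma nt:
  assumes "(B1, c) \<in> E" "(B2, c) \<in> E" "(B3, c) \<in> E" "B1 \<noteq> B2" "B1 \<noteq> B3" "B2 \<noteq> B3"
  shows "\<not> (hor B1 = hor B2 \<and> hor B2 = hor B3)"
  by (rule no_three[OF R]) (use assms in \<open>force+\<close>)

lemma perp_orient:
  assumes e: "\<forall>(b, c)\<in>perp_edges. (fB b, fC c) \<in> E" and inj: "inj fB"
  shows "hor (fB PA') = hor (fB PA) \<and> hor (fB PB') = hor (fB PB) \<and>
         hor (fB PC) = hor (fB PB) \<and> hor (fB PB) \<noteq> hor (fB PA)"
proof -
  have m: "(fB PA, fC Px) \<in> E" "(fB PA', fC Px) \<in> E" "(fB PB, fC Px) \<in> E" "(fB PB', fC Px) \<in> E"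
          "(fB PA, fC Py) \<in> E" "(fB PA', fC Py) \<in> E" "(fB PB, fC Py) \<in> E" "(fB PC, fC Py) \<in> E"
          "(fB PA, fC Pz) \<in> E" "(fB PA', fC Pz) \<in> E" "(fB PB', fC Pz) \<in> E" "(fB PC, fC Pz) \<in> E"
    using e by (auto simp: perp_edges_def)
  have d: "fB x \<noteq> fB y" if "x \<noteq> y" for x y using inj that by (auto dest: injD)
  have "\<not> (hor (fB PA) = hor (fB PA') \<and> hor (fB PA') = hor (fB PB))" by (rule nt[OF m(1,2,3)]) (auto intro!: d)
  moreover have "\<not> (hor (fB PA) = hor (fB PA') \<and> hor (fB PA') = hor (fB PB'))" by (rule nt[OF m(1,2,4)]) (auto intro!: d)
  moreover have "\<not> (hor (fB PA) = hor (fB PB) \<and> hor (fB PB) = hor (fB PB'))" by (rule nt[OF m(1,3,4)]) (auto intro!: d)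
  moreover have "\<not> (hor (fB PA') = hor (fB PB) \<and> hor (fB PB) = hor (fB PB'))" by (rule nt[OF m(2,3,4)]) (auto intro!: d)
  moreover have "\<not> (hor (fB PA) = hor (fB PA') \<and> hor (fB PA') = hor (fB PC))" by (rule nt[OF m(5,6,8)]) (auto intro!: d)
  moreover have "\<not> (hor (fB PA) = hor (fB PB) \<and> hor (fB PB) = hor (fB PC))" by (rule nt[OF m(5,7,8)]) (auto intro!: d)
  moreover have "\<not> (hor (fB PA') = hor (fB PB) \<and> hor (fB PB) = hor (fB PC))" by (rule nt[OF m(6,7,8)]) (auto intro!: d)
  moreover have "\<not> (hor (fB PA) = hor (fB PB') \<and> hor (fB PB') = hor (fB PC))" by (rule nt[OF m(9,11,12)]) (auto intro!: d)
  moreover have "\<not> (hor (fB PA') = hor (fB PB') \<and> hor (fB PB') = hor (fB PC))" by (rule nt[OF m(10,11,12)]) (auto intro!: d)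
  ultimately show ?thesis by blast
qed

end

definition sideB :: "bool \<Rightarrow> perpB \<Rightarrow> vbB" where
  "sideB p b = (case b of PA \<Rightarrow> vbox_base p | PA' \<Rightarrow> VU p | PB \<Rightarrow> VR p | PB' \<Rightarrow> VS p | PC \<Rightarrow> VT p)"
definition sideC :: "bool \<Rightarrow> perpC \<Rightarrow> vbC" where
  "sideC p c = (case c of Px \<Rightarrow> Vx p | Py \<Rightarrow> Vy p | Pz \<Rightarrow> Vz p)"

lemma inj_sideB: "inj (sideB p)"
  by (auto simp: inj_def sideB_def vbox_base_def split: perpB.splits)

lemma mem_vbox: "i < n \<Longrightarrow> (b, c) \<in> vbox_edges (occ_total cls (i, True)) (occ_total cls (i, False)) \<Longrightarrow>
   (VarB i b, VarC i c) \<in> nae_bus_edges n cls"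
  unfolding nae_bus_edges_def by (rule UnI1, rule UN_I[of i]) (auto intro!: image_eqI)

lemma mem_chain: "q < length cls \<Longrightarrow> s < 3 \<Longrightarrow> (b, c) \<in> chain_edges \<Longrightarrow>
   (ChB q s b, ChC q s c) \<in> nae_bus_edges n cls"
  unfolding nae_bus_edges_def by (rule UnI2, rule UN_I[of q], simp, rule UN_I[of s]) (auto intro!: image_eqI)

lemma mem_clause: "q < length cls \<Longrightarrow> s < 3 \<Longrightarrow> (ChB q s (CB 4 PB), ClC q) \<in> nae_bus_edges n cls"
  unfolding nae_bus_edges_def by (rule UnI2, rule UN_I[of q], simp, rule UN_I[of s]) auto

lemma mem_lit: "q < length cls \<Longrightarrow> s < 3 \<Longrightarrow>
  (ChB q s (CB 1 PB), VarC (fst (cls ! q ! s)) (Vo (snd (cls ! q ! s)) (occ_num cls q s))) \<in> nae_bus_edges n cls"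
  unfolding nae_bus_edges_def by (rule UnI2, rule UN_I[of q], simp, rule UN_I[of s]) auto

lemma mem_core: "i < n \<Longrightarrow> \<forall>(b, c)\<in>perp_edges. (VarB i (VP b), VarC i (VPc c)) \<in> nae_bus_edges n cls"
  by (auto intro!: mem_vbox simp: vbox_edges_def)

lemma mem_side: "i < n \<Longrightarrow> \<forall>(b, c)\<in>perp_edges. (VarB i (sideB p b), VarC i (sideC p c)) \<in> nae_bus_edges n cls"
  by (auto intro!: mem_vbox simp: vbox_edges_def perp_edges_def sideB_def sideC_def)

lemma mem_o: "i < n \<Longrightarrow> 1 \<le> r \<Longrightarrow> r \<le> occ_total cls (i, p) \<Longrightarrow>
   (VarB i (VR p), VarC i (Vo p r)) \<in> nae_bus_edges n cls \<and> (VarB i (VS p), VarC i (Vo p r)) \<in> nae_bus_edges n cls"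
  by (cases p) (auto intro!: mem_vbox simp: vbox_edges_def)

lemma perp_in_chain: "(b, c) \<in> perp_edges \<Longrightarrow> j \<in> {1..4} \<Longrightarrow> (CB j b, CC j c) \<in> chain_edges"
  unfolding chain_edges_def
  by (rule UnI1, rule UnI1, rule UN_I[of j], assumption, rule image_eqI[where x="(b,c)"]) auto

lemma mem_cperp: "q < length cls \<Longrightarrow> s < 3 \<Longrightarrow> j \<in> {1..4} \<Longrightarrow>
  \<forall>(b, c)\<in>perp_edges. (ChB q s (CB j b), ChC q s (CC j c)) \<in> nae_bus_edges n cls"
  by (auto intro!: mem_chain perp_in_chain)

lemma mem_co: "q < length cls \<Longrightarrow> s < 3 \<Longrightarrow> j \<in> {1..3} \<Longrightarrow>
  (ChB q s (CB j PB), ChC q s (Co j)) \<in> nae_bus_edges n cls \<and>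
  (ChB q s (CB j PB'), ChC q s (Co j)) \<in> nae_bus_edges n cls \<and>
  (ChB q s (chain_in (Suc j)), ChC q s (Co j)) \<in> nae_bus_edges n cls"
  by (auto intro!: mem_chain simp: chain_edges_def)

lemma occ_bound:
  assumes "q < length cls" "s < length (cls ! q)"
  shows "1 \<le> occ_num cls q s \<and> occ_num cls q s \<le> occ_total cls (cls ! q ! s)"
proof -
  have c1: "concat cls = concat (take q cls) @ cls ! q @ concat (drop (Suc q) cls)"
    using assms(1) by (metis append_Cons concat.simps(2) concat_append id_take_nth_drop)
  have c2: "cls ! q = take s (cls ! q) @ cls ! q ! s # drop (Suc s) (cls ! q)"
    using assms(2) by (rule id_take_nth_drop)
  have "count_list (concat cls) (cls ! q ! s) =
        count_list (concat (take q cls)) (cls ! q ! s) + count_list (take s (cls ! q)) (cls ! q ! s) + 1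
        + count_list (drop (Suc s) (cls ! q)) (cls ! q ! s) + count_list (concat (drop (Suc q) cls)) (cls ! q ! s)"
    by (subst c1, subst c2) simp
  then show ?thesis unfolding occ_num_def occ_total_def by simp
qed

context
  fixes n cls hor bus pt
  assumes R: "bus_realization (fst ` nae_bus_edges n cls) (snd ` nae_bus_edges n cls) (nae_bus_edges n cls) hor bus pt"
    and ok: "\<forall>C\<in>set cls. length C = 3 \<and> (\<forall>l\<in>set C. fst l < n)"
begin

lemma chain_val:
  assumes q: "q < length cls" and s: "s < 3"
  shows "hor (ChB q s (CB 4 PB)) = lit_val (\<lambda>i. hor (VarB i (VP PA))) (cls ! q ! s)"
proof -
  define l where "l = cls ! q ! s"
  define i where "i = fst l"
  define p where "p = snd l"
  define r where "r = occ_num cls q s"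
  have lq: "length (cls ! q) = 3" using ok q by auto
  have lin: "l \<in> set (cls ! q)" using lq s unfolding l_def by auto
  have i: "i < n" using ok q lin unfolding i_def by auto
  have rb: "1 \<le> r \<and> r \<le> occ_total cls (i, p)"
    using occ_bound[OF q] lq s unfolding r_def i_def p_def l_def by auto
  note PO = perp_orient[OF R]
  have side: "hor (VarB i (VS p)) = hor (VarB i (VR p)) \<and> hor (VarB i (VR p)) \<noteq> hor (VarB i (vbox_base p))"
    using PO[of "\<lambda>b. VarB i (sideB p b)" "\<lambda>c. VarC i (sideC p c)"] mem_side[OF i, of p cls] inj_sideB[of p]
    by (auto simp: sideB_def inj_def)
  have core: "hor (VarB i (VP PB)) \<noteq> hor (VarB i (VP PA))"
    using PO[of "\<lambda>b. VarB i (VP b)" "\<lambda>c. VarC i (VPc c)"] mem_core[OF i, of cls]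
    by (auto simp: inj_def)
  have mo: "(VarB i (VR p), VarC i (Vo p r)) \<in> nae_bus_edges n cls" "(VarB i (VS p), VarC i (Vo p r)) \<in> nae_bus_edges n cls"
    using mem_o[OF i] rb by auto
  have ml: "(ChB q s (CB 1 PB), VarC i (Vo p r)) \<in> nae_bus_edges n cls"
    using mem_lit[OF q s, of n] unfolding i_def p_def r_def l_def by simp
  have I: "hor (ChB q s (CB 1 PB)) \<noteq> hor (VarB i (VR p))"
    using nt[OF R mo(1) mo(2) ml] side by auto
  have cp: "hor (ChB q s (CB j PB')) = hor (ChB q s (CB j PB)) \<and> hor (ChB q s (CB j PB)) \<noteq> hor (ChB q s (CB j PA))"
    if "j \<in> {1..4}" for j
    using PO[of "\<lambda>b. ChB q s (CB j b)" "\<lambda>c. ChC q s (CC j c)"] mem_cperp[OF q s that, of n]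
    by (auto simp: inj_def)
  have co: "hor (ChB q s (chain_in (Suc j))) \<noteq> hor (ChB q s (CB j PB))" if "j \<in> {1..3}" for j
  proof -
    have m: "(ChB q s (CB j PB), ChC q s (Co j)) \<in> nae_bus_edges n cls"
      "(ChB q s (CB j PB'), ChC q s (Co j)) \<in> nae_bus_edges n cls"
      "(ChB q s (chain_in (Suc j)), ChC q s (Co j)) \<in> nae_bus_edges n cls"
      using mem_co[OF q s that, of n] by auto
    have d: "chain_in (Suc j) \<noteq> CB j PB" "chain_in (Suc j) \<noteq> CB j PB'"
      using that by (auto simp: chain_in_def)
    show ?thesis using nt[OF R m(1) m(2) m(3)] d cp[of j] that by auto
  qed
  have "hor (ChB q s (CB 4 PB)) = hor (ChB q s (CB 1 PB))"
    using co[of 1] co[of 2] co[of 3] cp[of 4] by (simp add: chain_in_def numeral_eq_Suc)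
  also have "\<dots> = hor (VarB i (vbox_base p))" using I side by auto
  also have "\<dots> = lit_val (\<lambda>i. hor (VarB i (VP PA))) l"
    using core unfolding lit_val_def i_def p_def vbox_base_def by (cases "snd l") auto
  finally show ?thesis unfolding l_def .
qed

lemma easy_dir: "nae_sat cls"
proof -
  define a where "a = (\<lambda>i. hor (VarB i (VP PA)))"
  have "(\<exists>l\<in>set C. lit_val a l) \<and> (\<exists>l\<in>set C. \<not> lit_val a l)" if C: "C \<in> set cls" for C
  proof -
    obtain q where q: "q < length cls" "C = cls ! q" using C by (metis in_set_conv_nth)
    have lC: "length C = 3" using ok C by auto
    have setC: "set C = {C ! 0, C ! 1, C ! 2}"
      using lC by (auto simp: set_conv_nth less_Suc_eq numeral_eq_Suc)
    have m: "(ChB q s (CB 4 PB), ClC q) \<in> nae_bus_edges n cls" if "s < 3" for s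
      using mem_clause[OF q(1) that] .
    have "\<not> (hor (ChB q 0 (CB 4 PB)) = hor (ChB q 1 (CB 4 PB)) \<and> hor (ChB q 1 (CB 4 PB)) = hor (ChB q 2 (CB 4 PB)))"
      by (rule nt[OF R m m m]) auto
    then have "\<not> (lit_val a (C ! 0) = lit_val a (C ! 1) \<and> lit_val a (C ! 1) = lit_val a (C ! 2))"
      using chain_val[OF q(1)] q(2) unfolding a_def by auto
    then show ?thesis unfolding setC by auto
  qed
  then show ?thesis unfolding nae_sat_def by blast
qed

end

type_synonym rect = "int \<times> int \<times> int \<times> int"

definition rx1 :: "rect \<Rightarrow> int" where "rx1 R = fst R"
definition rx2 :: "rect \<Rightarrow> int" where "rx2 R = fst (snd R)"
definition ry1 :: "rect \<Rightarrow> int" where "ry1 R = fst (snd (snd R))"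
definition ry2 :: "rect \<Rightarrow> int" where "ry2 R = snd (snd (snd R))"
lemma rsel[simp]: "rx1 (a,b,c,d) = a" "rx2 (a,b,c,d) = b" "ry1 (a,b,c,d) = c" "ry2 (a,b,c,d) = d"
  by (auto simp: rx1_def rx2_def ry1_def ry2_def)

definition wfr :: "rect \<Rightarrow> bool" where "wfr R \<longleftrightarrow> rx1 R \<le> rx2 R \<and> ry1 R \<le> ry2 R"
definition ovl :: "rect \<Rightarrow> rect \<Rightarrow> bool" where
  "ovl R S \<longleftrightarrow> rx1 R \<le> rx2 S \<and> rx1 S \<le> rx2 R \<and> ry1 R \<le> ry2 S \<and> ry1 S \<le> ry2 R"
definition inr :: "int \<times> int \<Rightarrow> rect \<Rightarrow> bool" where
  "inr p R \<longleftrightarrow> rx1 R \<le> fst p \<and> fst p \<le> rx2 R \<and> ry1 R \<le> snd p \<and> snd p \<le> ry2 R"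
definition ins :: "rect \<Rightarrow> rect \<Rightarrow> bool" where
  "ins R S \<longleftrightarrow> rx1 S \<le> rx1 R \<and> rx2 R \<le> rx2 S \<and> ry1 S \<le> ry1 R \<and> ry2 R \<le> ry2 S"

definition rset :: "rect \<Rightarrow> (real \<times> real) set" where
  "rset R = {p. of_int (rx1 R) \<le> fst p \<and> fst p \<le> of_int (rx2 R) \<and> of_int (ry1 R) \<le> snd p \<and> snd p \<le> of_int (ry2 R)}"

definition rpt :: "int \<times> int \<Rightarrow> real \<times> real" where "rpt p = (of_int (fst p), of_int (snd p))"

lemma ovl_iff: assumes "wfr R" "wfr S" shows "ovl R S \<longleftrightarrow> rset R \<inter> rset S \<noteq> {}"
proof
  assume o: "ovl R S"
  let ?p = "(of_int (max (rx1 R) (rx1 S)), of_int (max (ry1 R) (ry1 S))) :: real \<times> real"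
  have "?p \<in> rset R \<inter> rset S" using o assms unfolding ovl_def wfr_def rset_def by auto
  then show "rset R \<inter> rset S \<noteq> {}" by blast
next
  assume "rset R \<inter> rset S \<noteq> {}"
  then obtain p where "p \<in> rset R" "p \<in> rset S" by blast
  then show "ovl R S" unfolding rset_def ovl_def by (auto; linarith)
qed

lemma inr_iff: "inr p R \<longleftrightarrow> rpt p \<in> rset R"
  unfolding inr_def rset_def rpt_def by auto

definition busR :: "rect \<Rightarrow> (real \<times> real) \<times> (real \<times> real)" where
  "busR R = ((of_int (rx1 R), of_int (ry1 R)), (of_int (rx2 R), of_int (ry2 R)))"

definition eRect :: "bool \<Rightarrow> rect \<Rightarrow> int \<times> int \<Rightarrow> rect" where
  "eRect h R p = (if h then (fst p, fst p, min (ry1 R) (snd p), max (ry1 R) (snd p))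
                  else (min (rx1 R) (fst p), max (rx1 R) (fst p), snd p, snd p))"

lemma seg_busR: "wfr R \<Longrightarrow> rx1 R = rx2 R \<or> ry1 R = ry2 R \<Longrightarrow> seg (busR R) = rset R"
  unfolding seg_def busR_def rset_def wfr_def
  by (subst closed_segment_rect) auto

lemma wf_eRect: "wfr (eRect h R p)" unfolding wfr_def eRect_def by auto

definition uPt :: "bool \<Rightarrow> rect \<Rightarrow> int \<times> int \<Rightarrow> real \<times> real" where
  "uPt h R p = (if h then (of_int (fst p), of_int (ry1 R)) else (of_int (rx1 R), of_int (snd p)))"

lemma seg_eRect: "closed_segment (uPt h R p) (rpt p) = rset (eRect h R p)"
  unfolding uPt_def rpt_def eRect_def rset_def
  by (subst closed_segment_rect) (auto simp: min_def max_def)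

definition int_real :: "'b set \<Rightarrow> 'c set \<Rightarrow> ('b \<times> 'c) set \<Rightarrow> ('b \<Rightarrow> bool) \<Rightarrow> ('b \<Rightarrow> rect) \<Rightarrow> ('c \<Rightarrow> int \<times> int) \<Rightarrow> bool" where
  "int_real Bs Cs E hB bR cP \<longleftrightarrow>
    (\<forall>B\<in>Bs. wfr (bR B) \<and> (if hB B then ry1 (bR B) = ry2 (bR B) else rx1 (bR B) = rx2 (bR B))) \<and>
    (\<forall>(B, c)\<in>E. (if hB B then rx1 (bR B) \<le> fst (cP c) \<and> fst (cP c) \<le> rx2 (bR B)
                         else ry1 (bR B) \<le> snd (cP c) \<and> snd (cP c) \<le> ry2 (bR B)) \<and>
       (\<forall>B'\<in>Bs. B' \<noteq> B \<longrightarrow> \<not> ovl (eRect (hB B) (bR B) (cP c)) (bR B')) \<and>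
       (\<forall>c'\<in>Cs. c' \<noteq> c \<longrightarrow> \<not> inr (cP c') (eRect (hB B) (bR B) (cP c)))) \<and>
    (\<forall>B\<in>Bs. \<forall>B'\<in>Bs. B \<noteq> B' \<longrightarrow> \<not> ovl (bR B) (bR B')) \<and>
    (\<forall>c\<in>Cs. \<forall>c'\<in>Cs. c \<noteq> c' \<longrightarrow> cP c \<noteq> cP c') \<and>
    (\<forall>B\<in>Bs. \<forall>c\<in>Cs. \<not> inr (cP c) (bR B))"

lemma int_real_imp:
  assumes "E \<subseteq> Bs \<times> Cs" "int_real Bs Cs E hB bR cP"
  shows "bus_realization Bs Cs E hB (\<lambda>B. busR (bR B)) (\<lambda>c. rpt (cP c))"
proof -
  note I = assms(2)[unfolded int_real_def]
  have wf: "wfr (bR B)" "rx1 (bR B) = rx2 (bR B) \<or> ry1 (bR B) = ry2 (bR B)" if "B \<in> Bs" for B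
    using I that by (auto split: if_splits)
  have S: "seg (busR (bR B)) = rset (bR B)" if "B \<in> Bs" for B using seg_busR wf that by blast
  have ok: "bus_ok (hB B) (busR (bR B))" if "B \<in> Bs" for B
    using I that unfolding bus_ok_def busR_def by (auto split: if_splits)
  have gp: "grid_point (rpt p)" for p unfolding grid_point_def rpt_def by auto
  have edges: "\<exists>u\<in>seg (busR (bR B)).
        (if hB B then fst u = fst (rpt (cP c)) else snd u = snd (rpt (cP c))) \<and>
        (\<forall>B'\<in>Bs. B' \<noteq> B \<longrightarrow> closed_segment u (rpt (cP c)) \<inter> seg (busR (bR B')) = {}) \<and>
        (\<forall>c'\<in>Cs. c' \<noteq> c \<longrightarrow> rpt (cP c') \<notin> closed_segment u (rpt (cP c)))"
    if e: "(B, c) \<in> E" for B c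
  proof (rule bexI[of _ "uPt (hB B) (bR B) (cP c)"], intro conjI ballI impI)
    have B: "B \<in> Bs" and c: "c \<in> Cs" using e assms(1) by auto
    have att: "if hB B then rx1 (bR B) \<le> fst (cP c) \<and> fst (cP c) \<le> rx2 (bR B)
                         else ry1 (bR B) \<le> snd (cP c) \<and> snd (cP c) \<le> ry2 (bR B)"
      using I e by auto
    show "uPt (hB B) (bR B) (cP c) \<in> seg (busR (bR B))"
      unfolding S[OF B] using att wf[OF B] I B unfolding uPt_def rset_def wfr_def
      by (auto split: if_splits)
    show "if hB B then fst (uPt (hB B) (bR B) (cP c)) = fst (rpt (cP c))
          else snd (uPt (hB B) (bR B) (cP c)) = snd (rpt (cP c))"
      unfolding uPt_def rpt_def by auto
    fix B' assume B': "B' \<in> Bs" "B' \<noteq> B"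
    have "\<not> ovl (eRect (hB B) (bR B) (cP c)) (bR B')" using I e B' by fast
    then show "closed_segment (uPt (hB B) (bR B) (cP c)) (rpt (cP c)) \<inter> seg (busR (bR B')) = {}"
      unfolding seg_eRect S[OF B'(1)] using ovl_iff[OF wf_eRect wf(1)[OF B'(1)]] by blast
  next
    fix c' assume c': "c' \<in> Cs" "c' \<noteq> c"
    have "\<not> inr (cP c') (eRect (hB B) (bR B) (cP c))" using I e c' by fast
    then show "rpt (cP c') \<notin> closed_segment (uPt (hB B) (bR B) (cP c)) (rpt (cP c))"
      unfolding seg_eRect inr_iff by blast
  qed
  have bb: "seg (busR (bR B)) \<inter> seg (busR (bR B')) = {}" if "B \<in> Bs" "B' \<in> Bs" "B \<noteq> B'" for B B'
    using I that ovl_iff[OF wf(1) wf(1)] S by metis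
  have cc: "rpt (cP c) \<noteq> rpt (cP c')" if "c \<in> Cs" "c' \<in> Cs" "c \<noteq> c'" for c c'
    using I that unfolding rpt_def by (auto simp: prod_eq_iff)
  have cb: "rpt (cP c) \<notin> seg (busR (bR B))" if "B \<in> Bs" "c \<in> Cs" for B c
    using I that S inr_iff by metis
  show ?thesis unfolding bus_realization_def
    using ok gp edges bb cc cb by (auto simp: split_beta)
qed

lemma ins_ovl: "ins R1 S1 \<Longrightarrow> ins R2 S2 \<Longrightarrow> \<not> ovl S1 S2 \<Longrightarrow> \<not> ovl R1 R2"
  unfolding ins_def ovl_def by auto

lemma ins_ovl1: "ins R2 S2 \<Longrightarrow> \<not> ovl R1 S2 \<Longrightarrow> \<not> ovl R1 R2"
  unfolding ins_def ovl_def by auto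

lemma inr_ins: "inr p R \<Longrightarrow> ins R S \<Longrightarrow> inr p S"
  unfolding ins_def inr_def by auto

lemma inr_ovl: "inr p S \<Longrightarrow> ins R T \<Longrightarrow> \<not> ovl S' T \<Longrightarrow> ins S S' \<Longrightarrow> \<not> inr p R"
  unfolding ins_def inr_def ovl_def by auto

lemma inr_not_ovl: "inr p S \<Longrightarrow> \<not> ovl R S \<Longrightarrow> \<not> inr p R"
  unfolding inr_def ovl_def by auto

lemma inr_ne: "inr p S \<Longrightarrow> inr p' S' \<Longrightarrow> \<not> ovl S S' \<Longrightarrow> p \<noteq> p'"
  unfolding inr_def ovl_def by auto

lemma box_combine:
  assumes H1: "\<forall>B\<in>Bs. valid (boxB B) \<and> ins (bR B) (rectOf (boxB B))"
    and H2: "\<forall>c\<in>Cs. valid (boxC c) \<and> inr (cP c) (rectOf (boxC c))"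
    and H3: "\<forall>b b'. valid b \<longrightarrow> valid b' \<longrightarrow> b \<noteq> b' \<longrightarrow> \<not> ovl (rectOf b) (rectOf b')"
    and H4: "\<forall>(B, c)\<in>E. boxB B = boxC c \<longrightarrow> ins (eRect (hB B) (bR B) (cP c)) (rectOf (boxB B))"
    and H5: "\<forall>(B, c)\<in>E. boxB B \<noteq> boxC c \<longrightarrow> (\<forall>b. valid b \<longrightarrow> b \<noteq> boxB B \<longrightarrow> b \<noteq> boxC c \<longrightarrow>
                 \<not> ovl (eRect (hB B) (bR B) (cP c)) (rectOf b))"
    and H6: "\<forall>(B, c)\<in>E. \<forall>B'\<in>Bs. B' \<noteq> B \<longrightarrow> (boxB B' = boxB B \<or> boxB B' = boxC c) \<longrightarrow>
                 \<not> ovl (eRect (hB B) (bR B) (cP c)) (bR B')"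
    and H7: "\<forall>(B, c)\<in>E. \<forall>c'\<in>Cs. c' \<noteq> c \<longrightarrow> (boxC c' = boxB B \<or> boxC c' = boxC c) \<longrightarrow>
                 \<not> inr (cP c') (eRect (hB B) (bR B) (cP c))"
    and H8: "\<forall>B\<in>Bs. \<forall>B'\<in>Bs. B \<noteq> B' \<longrightarrow> boxB B = boxB B' \<longrightarrow> \<not> ovl (bR B) (bR B')"
    and H9: "\<forall>c\<in>Cs. \<forall>c'\<in>Cs. c \<noteq> c' \<longrightarrow> boxC c = boxC c' \<longrightarrow> cP c \<noteq> cP c'"
    and H10: "\<forall>B\<in>Bs. \<forall>c\<in>Cs. boxB B = boxC c \<longrightarrow> \<not> inr (cP c) (bR B)"
    and W: "\<forall>B\<in>Bs. wfr (bR B) \<and> (if hB B then ry1 (bR B) = ry2 (bR B) else rx1 (bR B) = rx2 (bR B))"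
    and A: "\<forall>(B, c)\<in>E. if hB B then rx1 (bR B) \<le> fst (cP c) \<and> fst (cP c) \<le> rx2 (bR B)
                         else ry1 (bR B) \<le> snd (cP c) \<and> snd (cP c) \<le> ry2 (bR B)"
    and EB: "E \<subseteq> Bs \<times> Cs"
  shows "int_real Bs Cs E hB bR cP"
  unfolding int_real_def
proof (intro conjI)
  show "\<forall>B\<in>Bs. wfr (bR B) \<and> (if hB B then ry1 (bR B) = ry2 (bR B) else rx1 (bR B) = rx2 (bR B))" by (rule W)
  show "\<forall>(B, c)\<in>E. (if hB B then rx1 (bR B) \<le> fst (cP c) \<and> fst (cP c) \<le> rx2 (bR B)
                         else ry1 (bR B) \<le> snd (cP c) \<and> snd (cP c) \<le> ry2 (bR B)) \<and>
       (\<forall>B'\<in>Bs. B' \<noteq> B \<longrightarrow> \<not> ovl (eRect (hB B) (bR B) (cP c)) (bR B')) \<and>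
       (\<forall>c'\<in>Cs. c' \<noteq> c \<longrightarrow> \<not> inr (cP c') (eRect (hB B) (bR B) (cP c)))"
  proof (intro ballI, clarify, intro conjI ballI impI)
    fix B c assume e: "(B, c) \<in> E"
    have B: "B \<in> Bs" and c: "c \<in> Cs" using e EB by auto
    show "if hB B then rx1 (bR B) \<le> fst (cP c) \<and> fst (cP c) \<le> rx2 (bR B)
                         else ry1 (bR B) \<le> snd (cP c) \<and> snd (cP c) \<le> ry2 (bR B)" using A e by auto
    let ?e = "eRect (hB B) (bR B) (cP c)"
    fix B' assume B': "B' \<in> Bs" "B' \<noteq> B"
    show "\<not> ovl ?e (bR B')"
    proof (cases "boxB B' = boxB B \<or> boxB B' = boxC c")
      case True then show ?thesis using H6 e B' by fast
    next
      case False
      show ?thesis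
      proof (cases "boxB B = boxC c")
        case True
        have "ins ?e (rectOf (boxB B))" using H4 e True by fast
        moreover have "ins (bR B') (rectOf (boxB B'))" using H1 B' by auto
        moreover have "\<not> ovl (rectOf (boxB B)) (rectOf (boxB B'))" using H3 H1 B B' False by metis
        ultimately show ?thesis by (rule ins_ovl)
      next
        case F2: False
        have "\<not> ovl ?e (rectOf (boxB B'))" using H5 e F2 False H1 B' by fast
        then show ?thesis using H1 B' ins_ovl1 by blast
      qed
    qed
  next
    fix B c assume e: "(B, c) \<in> E"
    have B: "B \<in> Bs" and c: "c \<in> Cs" using e EB by auto
    let ?e = "eRect (hB B) (bR B) (cP c)"
    fix c' assume c': "c' \<in> Cs" "c' \<noteq> c"
    show "\<not> inr (cP c') ?e"
    proof (cases "boxC c' = boxB B \<or> boxC c' = boxC c")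
      case True then show ?thesis using H7 e c' by fast
    next
      case False
      have ic: "inr (cP c') (rectOf (boxC c'))" using H2 c' by auto
      show ?thesis
      proof (cases "boxB B = boxC c")
        case True
        have "ins ?e (rectOf (boxB B))" using H4 e True by fast
        moreover have "\<not> ovl (rectOf (boxB B)) (rectOf (boxC c'))" using H3 H1 H2 B c' False by metis
        ultimately show ?thesis using ic unfolding ins_def inr_def ovl_def by auto
      next
        case F2: False
        have "\<not> ovl ?e (rectOf (boxC c'))" using H5 e F2 False H2 c' by fast
        then show ?thesis using ic inr_not_ovl by blast
      qed
    qed
  qed
  show "\<forall>B\<in>Bs. \<forall>B'\<in>Bs. B \<noteq> B' \<longrightarrow> \<not> ovl (bR B) (bR B')"
  proof (intro ballI impI)
    fix B B' assume b: "B \<in> Bs" "B' \<in> Bs" "B \<noteq> B'"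
    show "\<not> ovl (bR B) (bR B')"
    proof (cases "boxB B = boxB B'")
      case True then show ?thesis using H8 b by blast
    next
      case False then show ?thesis using H1 H3 b ins_ovl by metis
    qed
  qed
  show "\<forall>c\<in>Cs. \<forall>c'\<in>Cs. c \<noteq> c' \<longrightarrow> cP c \<noteq> cP c'"
  proof (intro ballI impI)
    fix c c' assume cc: "c \<in> Cs" "c' \<in> Cs" "c \<noteq> c'"
    show "cP c \<noteq> cP c'"
    proof (cases "boxC c = boxC c'")
      case True then show ?thesis using H9 cc by blast
    next
      case False then show ?thesis using H2 H3 cc inr_ne by metis
    qed
  qed
  show "\<forall>B\<in>Bs. \<forall>c\<in>Cs. \<not> inr (cP c) (bR B)"
  proof (intro ballI)
    fix B c assume bc: "B \<in> Bs" "c \<in> Cs"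
    show "\<not> inr (cP c) (bR B)"
    proof (cases "boxB B = boxC c")
      case True then show ?thesis using H10 bc by blast
    next
      case False
      have n: "\<not> ovl (rectOf (boxB B)) (rectOf (boxC c))" using H1 H2 H3 bc False by metis
      have i1: "ins (bR B) (rectOf (boxB B))" and i2: "inr (cP c) (rectOf (boxC c))" using H1 H2 bc by auto
      show ?thesis using n i1 i2 unfolding ins_def inr_def ovl_def by linarith
    qed
  qed
qed

definition swP :: "bool \<Rightarrow> int \<times> int \<Rightarrow> int \<times> int" where
  "swP b p = (if b then p else (snd p, fst p))"
definition swR :: "bool \<Rightarrow> rect \<Rightarrow> rect" where
  "swR b R = (if b then R else (ry1 R, ry2 R, rx1 R, rx2 R))"
definition shP :: "int \<Rightarrow> int \<Rightarrow> int \<times> int \<Rightarrow> int \<times> int" where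
  "shP dx dy p = (fst p + dx, snd p + dy)"
definition shR :: "int \<Rightarrow> int \<Rightarrow> rect \<Rightarrow> rect" where
  "shR dx dy R = (rx1 R + dx, rx2 R + dx, ry1 R + dy, ry2 R + dy)"

lemma swR_sel[simp]: "rx1 (swR b R) = (if b then rx1 R else ry1 R)" "rx2 (swR b R) = (if b then rx2 R else ry2 R)"
  "ry1 (swR b R) = (if b then ry1 R else rx1 R)" "ry2 (swR b R) = (if b then ry2 R else rx2 R)"
  by (auto simp: swR_def)
lemma shR_sel[simp]: "rx1 (shR dx dy R) = rx1 R + dx" "rx2 (shR dx dy R) = rx2 R + dx"
  "ry1 (shR dx dy R) = ry1 R + dy" "ry2 (shR dx dy R) = ry2 R + dy"
  by (auto simp: shR_def)
lemma swP_sel[simp]: "fst (swP b p) = (if b then fst p else snd p)" "snd (swP b p) = (if b then snd p else fst p)"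
  by (auto simp: swP_def)
lemma shP_sel[simp]: "fst (shP dx dy p) = fst p + dx" "snd (shP dx dy p) = snd p + dy"
  by (auto simp: shP_def)

lemma ovl_sw[simp]: "ovl (swR b R) (swR b S) = ovl R S" unfolding ovl_def by auto
lemma inr_sw[simp]: "inr (swP b p) (swR b R) = inr p R" unfolding inr_def by auto
lemma ins_sw[simp]: "ins (swR b R) (swR b S) = ins R S" unfolding ins_def by auto
lemma ovl_sh[simp]: "ovl (shR dx dy R) (shR dx dy S) = ovl R S" unfolding ovl_def by auto
lemma inr_sh[simp]: "inr (shP dx dy p) (shR dx dy R) = inr p R" unfolding inr_def by auto
lemma ins_sh[simp]: "ins (shR dx dy R) (shR dx dy S) = ins R S" unfolding ins_def by auto
lemma swP_eq[simp]: "(swP b p = swP b q) = (p = q)" by (auto simp: swP_def prod_eq_iff)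
lemma shP_eq[simp]: "(shP dx dy p = shP dx dy q) = (p = q)" by (auto simp: shP_def prod_eq_iff)
lemma wfr_sw[simp]: "wfr (swR b R) = wfr R" unfolding wfr_def by auto
lemma wfr_sh[simp]: "wfr (shR dx dy R) = wfr R" unfolding wfr_def by auto

lemma eRect_sw: "eRect (h = b) (swR b R) (swP b p) = swR b (eRect h R p)"
  by (cases b) (auto simp: eRect_def swR_def swP_def)
lemma eRect_sh: "eRect h (shR dx dy R) (shP dx dy p) = shR dx dy (eRect h R p)"
  by (auto simp: eRect_def shR_def shP_def min_add_distrib_left max_add_distrib_left)

definition fFB :: "perpB \<Rightarrow> bool \<times> rect" where
  "fFB r = (case r of PA \<Rightarrow> (False, (-6,-6,-4,-1)) | PA' \<Rightarrow> (False, (-1,-1,-4,-1))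
     | PB \<Rightarrow> (True, (-5,1,-5,-5)) | PB' \<Rightarrow> (True, (-4,1,1,1)) | PC \<Rightarrow> (True, (-5,-4,-2,-2)))"
definition fFC :: "perpC \<Rightarrow> int \<times> int" where
  "fFC p = (case p of Px \<Rightarrow> (-3,-4) | Py \<Rightarrow> (-5,-3) | Pz \<Rightarrow> (-4,-1))"
definition gDB :: "perpB \<Rightarrow> bool \<times> rect" where
  "gDB r = (case r of PA \<Rightarrow> (False, (-2,-2,19,22)) | PA' \<Rightarrow> (False, (3,3,19,22))
     | PB \<Rightarrow> (True, (-1,1,18,18)) | PB' \<Rightarrow> (True, (0,1,24,24)) | PC \<Rightarrow> (True, (-1,0,21,21)))"
definition gDC :: "perpC \<Rightarrow> int \<times> int" where
  "gDC p = (case p of Px \<Rightarrow> (1,19) | Py \<Rightarrow> (-1,20) | Pz \<Rightarrow> (0,22))"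
definition gUB :: "perpB \<Rightarrow> bool \<times> rect" where
  "gUB r = (case r of PA \<Rightarrow> (False, (-2,-2,18,21)) | PA' \<Rightarrow> (False, (3,3,18,21))
     | PB \<Rightarrow> (True, (-1,1,22,22)) | PB' \<Rightarrow> (True, (0,1,16,16)) | PC \<Rightarrow> (True, (-1,0,19,19)))"
definition gUC :: "perpC \<Rightarrow> int \<times> int" where
  "gUC p = (case p of Px \<Rightarrow> (1,21) | Py \<Rightarrow> (-1,20) | Pz \<Rightarrow> (0,18))"

definition relB :: "bool \<Rightarrow> chB \<Rightarrow> bool \<times> rect" where
  "relB up b = (case b of CB j r \<Rightarrow>
     if j = 1 then fFB r
     else if j = 2 then (\<not> fst (fFB r), shR (-40) 0 (swR False (snd (fFB r))))
     else if j = 3 then (fst (fFB r), shR (-40) 20 (snd (fFB r)))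
     else if up then gUB r else gDB r)"
definition relC :: "bool \<Rightarrow> chC \<Rightarrow> int \<times> int" where
  "relC up c = (case c of
       CC j p \<Rightarrow> if j = 1 then fFC p
          else if j = 2 then shP (-40) 0 (swP False (fFC p))
          else if j = 3 then shP (-40) 20 (fFC p)
          else if up then gUC p else gDC p
     | Co j \<Rightarrow> if j = 1 then (1, 0) else if j = 2 then (-40, 1) else (-39, 20))"

definition chbox :: "chB \<Rightarrow> nat" where "chbox b = (case b of CB j r \<Rightarrow> if j = 1 then 1 else 2)"
definition chcbox :: "chC \<Rightarrow> nat" where "chcbox c = (case c of CC j p \<Rightarrow> if j = 1 then 1 else 2 | Co j \<Rightarrow> if j = 1 then 1 else 2)"
definition chBok :: "chB \<Rightarrow> bool" where "chBok b = (case b of CB j r \<Rightarrow> j \<in> {1..4})"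
definition chCok :: "chC \<Rightarrow> bool" where "chCok c = (case c of CC j p \<Rightarrow> j \<in> {1..4} | Co j \<Rightarrow> j \<in> {1..3})"
definition relrect :: "nat \<Rightarrow> rect" where
  "relrect k = (if k = 1 then (-6, 1, -5, 1) else (-46, 3, -6, 24))"
definition nodeX :: "int \<Rightarrow> int \<Rightarrow> nat \<Rightarrow> int" where "nodeX ox Q k = (if k = 1 then ox else Q)"

definition chFB :: "int \<Rightarrow> int \<Rightarrow> int \<Rightarrow> bool \<Rightarrow> chB \<Rightarrow> bool \<times> rect" where
  "chFB ox P Q up b = (fst (relB up b), shR (nodeX ox Q (chbox b)) P (snd (relB up b)))"
definition chFC :: "int \<Rightarrow> int \<Rightarrow> int \<Rightarrow> bool \<Rightarrow> chC \<Rightarrow> int \<times> int" where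
  "chFC ox P Q up c = shP (nodeX ox Q (chcbox c)) P (relC up c)"
definition chrect :: "int \<Rightarrow> int \<Rightarrow> int \<Rightarrow> nat \<Rightarrow> rect" where
  "chrect ox P Q k = shR (nodeX ox Q k) P (relrect k)"

lemma all_perpB: "(\<forall>r. P r) \<longleftrightarrow> P PA \<and> P PA' \<and> P PB \<and> P PB' \<and> P PC"
  by (metis perpB.exhaust)
lemma all_perpC: "(\<forall>r. P r) \<longleftrightarrow> P Px \<and> P Py \<and> P Pz"
  by (metis perpC.exhaust)
lemma all_j4: "(\<forall>j::nat. j \<in> {1..4} \<longrightarrow> P j) \<longleftrightarrow> P 1 \<and> P 2 \<and> P 3 \<and> P 4"
  by (auto simp: le_Suc_eq numeral_eq_Suc)
lemma all_j3: "(\<forall>j::nat. j \<in> {1..3} \<longrightarrow> P j) \<longleftrightarrow> P 1 \<and> P 2 \<and> P 3"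
  by (auto simp: le_Suc_eq numeral_eq_Suc)

lemma all_chB: "(\<forall>b. chBok b \<longrightarrow> P b) \<longleftrightarrow> (\<forall>j::nat. j \<in> {1..4} \<longrightarrow> (\<forall>r. P (CB j r)))"
  by (metis chB.exhaust chBok_def chB.case)
lemma all_chC: "(\<forall>c. chCok c \<longrightarrow> P c) \<longleftrightarrow> (\<forall>j::nat. j \<in> {1..4} \<longrightarrow> (\<forall>r. P (CC j r))) \<and> (\<forall>j::nat. j \<in> {1..3} \<longrightarrow> P (Co j))"
  by (smt (verit) chC.exhaust chCok_def chC.case)

definition rgood :: "bool \<Rightarrow> chB \<Rightarrow> chC \<Rightarrow> bool" where
  "rgood up b c \<longleftrightarrow>
    (let h = fst (relB up b); R = snd (relB up b); p = relC up c; e = eRect h R p in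
     (if h then rx1 R \<le> fst p \<and> fst p \<le> rx2 R else ry1 R \<le> snd p \<and> snd p \<le> ry2 R) \<and>
     (\<forall>b'. chBok b' \<longrightarrow> b' \<noteq> b \<longrightarrow> chbox b' = chbox b \<longrightarrow> \<not> ovl e (snd (relB up b'))) \<and>
     (\<forall>c'. chCok c' \<longrightarrow> c' \<noteq> c \<longrightarrow> chcbox c' = chbox b \<longrightarrow> \<not> inr (relC up c') e) \<and>
     ins e (relrect (chbox b)))"

lemmas rdefs = relB_def relC_def fFB_def fFC_def gUB_def gUC_def gDB_def gDC_def chbox_def chcbox_def relrect_def
   eRect_def ovl_def inr_def ins_def swR_def swP_def shR_def shP_def

lemma four_set: "{1..4::nat} = {1,2,3,4}" "{1..3::nat} = {1,2,3}" by auto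

definition chlist :: "(chB \<times> chC) list" where
  "chlist = [(CB j b, CC j c). j \<leftarrow> [1,2,3,4], (b, c) \<leftarrow> [(PA,Px),(PA',Px),(PB,Px),(PB',Px),
                 (PA,Py),(PA',Py),(PB,Py),(PC,Py),
                 (PA,Pz),(PA',Pz),(PB',Pz),(PC,Pz)]] @
   [(CB 1 PB, Co 1), (CB 1 PB', Co 1), (CB 2 PB, Co 2), (CB 2 PB', Co 2), (CB 3 PB, Co 3), (CB 3 PB', Co 3),
    (CB 2 PB, Co 1), (CB 3 PB, Co 2), (CB 4 PA, Co 3)]"

lemma chain_edges_sub: "chain_edges \<subseteq> set chlist"
  unfolding chain_edges_def perp_edges_def chain_in_def chlist_def four_set by auto

lemma relB_simps:
  "relB up (CB (Suc 0) r) = fFB r"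
  "relB up (CB 2 r) = (\<not> fst (fFB r), shR (-40) 0 (swR False (snd (fFB r))))"
  "relB up (CB 3 r) = (fst (fFB r), shR (-40) 20 (snd (fFB r)))"
  "relB up (CB 4 r) = (if up then gUB r else gDB r)"
  by (auto simp: relB_def)
lemma relC_simps:
  "relC up (CC (Suc 0) p) = fFC p"
  "relC up (CC 2 p) = shP (-40) 0 (swP False (fFC p))"
  "relC up (CC 3 p) = shP (-40) 20 (fFC p)"
  "relC up (CC 4 p) = (if up then gUC p else gDC p)"
  "relC up (Co (Suc 0)) = (1,0)" "relC up (Co 2) = (-40, 1)" "relC up (Co 3) = (-39, 20)"
  by (auto simp: relC_def)
lemma box_simps: "chbox (CB (Suc 0) r) = 1" "chbox (CB 2 r) = 2" "chbox (CB 3 r) = 2" "chbox (CB 4 r) = 2"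
  "chcbox (CC (Suc 0) p) = 1" "chcbox (CC 2 p) = 2" "chcbox (CC 3 p) = 2" "chcbox (CC 4 p) = 2"
  "chcbox (Co (Suc 0)) = 1" "chcbox (Co 2) = 2" "chcbox (Co 3) = 2"
  by (auto simp: chbox_def chcbox_def)

lemmas tdefs = relB_simps relC_simps box_simps fFB_def fFC_def gUB_def gUC_def gDB_def gDC_def relrect_def
   eRect_def ovl_def inr_def ins_def swR_def swP_def shR_def shP_def

lemma chlist_eq: "chlist = [(CB 1 PA, CC 1 Px), (CB 1 PA', CC 1 Px), (CB 1 PB, CC 1 Px), (CB 1 PB', CC 1 Px), (CB 1 PA, CC 1 Py), (CB 1 PA', CC 1 Py), (CB 1 PB, CC 1 Py), (CB 1 PC, CC 1 Py), (CB 1 PA, CC 1 Pz), (CB 1 PA', CC 1 Pz), (CB 1 PB', CC 1 Pz), (CB 1 PC, CC 1 Pz), (CB 2 PA, CC 2 Px), (CB 2 PA', CC 2 Px), (CB 2 PB, CC 2 Px), (CB 2 PB', CC 2 Px), (CB 2 PA, CC 2 Py), (CB 2 PA', CC 2 Py), (CB 2 PB, CC 2 Py), (CB 2 PC, CC 2 Py), (CB 2 PA, CC 2 Pz), (CB 2 PA', CC 2 Pz), (CB 2 PB', CC 2 Pz), (CB 2 PC, CC 2 Pz), (CB 3 PA, CC 3 Px), (CB 3 PA', CC 3 Px), (CB 3 PB, CC 3 Px), (CB 3 PB', CC 3 Px), (CB 3 PA, CC 3 Py), (CB 3 PA', CC 3 Py), (CB 3 PB, CC 3 Py), (CB 3 PC,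 CC 3 Py), (CB 3 PA, CC 3 Pz), (CB 3 PA', CC 3 Pz), (CB 3 PB', CC 3 Pz), (CB 3 PC, CC 3 Pz), (CB 4 PA, CC 4 Px), (CB 4 PA', CC 4 Px), (CB 4 PB, CC 4 Px), (CB 4 PB', CC 4 Px), (CB 4 PA, CC 4 Py), (CB 4 PA', CC 4 Py), (CB 4 PB, CC 4 Py), (CB 4 PC, CC 4 Py), (CB 4 PA, CC 4 Pz), (CB 4 PA', CC 4 Pz), (CB 4 PB', CC 4 Pz), (CB 4 PC, CC 4 Pz), (CB 1 PB, Co 1), (CB 1 PB', Co 1), (CB 2 PB, Co 2), (CB 2 PB', Co 2), (CB 3 PB, Co 3), (CB 3 PB', Co 3), (CB 2 PB, Co 1), (CB 3 PB, Co 2), (CB 4 PA, Co 3)]"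
  by (simp add: chlist_def)

lemma rg0: "rgood up (CB 1 PA) (CC 1 Px)"
  unfolding rgood_def Let_def all_chB all_chC all_j4 all_j3 all_perpB all_perpC
  by (cases up) (simp_all add: tdefs)

lemma rg1: "rgood up (CB 1 PA') (CC 1 Px)"
  unfolding rgood_def Let_def all_chB all_chC all_j4 all_j3 all_perpB all_perpC
  by (cases up) (simp_all add: tdefs)

lemma rg2: "rgood up (CB 1 PB) (CC 1 Px)"
  unfolding rgood_def Let_def all_chB all_chC all_j4 all_j3 all_perpB all_perpC
  by (cases up) (simp_all add: tdefs)

lemma rg3: "rgood up (CB 1 PB') (CC 1 Px)"
  unfolding rgood_def Let_def all_chB all_chC all_j4 all_j3 all_perpB all_perpC
  by (cases up) (simp_all add: tdefs)

lemma rg4: "rgood up (CB 1 PA) (CC 1 Py)"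
  unfolding rgood_def Let_def all_chB all_chC all_j4 all_j3 all_perpB all_perpC
  by (cases up) (simp_all add: tdefs)

lemma rg5: "rgood up (CB 1 PA') (CC 1 Py)"
  unfolding rgood_def Let_def all_chB all_chC all_j4 all_j3 all_perpB all_perpC
  by (cases up) (simp_all add: tdefs)

lemma rg6: "rgood up (CB 1 PB) (CC 1 Py)"
  unfolding rgood_def Let_def all_chB all_chC all_j4 all_j3 all_perpB all_perpC
  by (cases up) (simp_all add: tdefs)

lemma rg7: "rgood up (CB 1 PC) (CC 1 Py)"
  unfolding rgood_def Let_def all_chB all_chC all_j4 all_j3 all_perpB all_perpC
  by (cases up) (simp_all add: tdefs)

lemma rg8: "rgood up (CB 1 PA) (CC 1 Pz)"
  unfolding rgood_def Let_def all_chB all_chC all_j4 all_j3 all_perpB all_perpC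
  by (cases up) (simp_all add: tdefs)

lemma rg9: "rgood up (CB 1 PA') (CC 1 Pz)"
  unfolding rgood_def Let_def all_chB all_chC all_j4 all_j3 all_perpB all_perpC
  by (cases up) (simp_all add: tdefs)

lemma rg10: "rgood up (CB 1 PB') (CC 1 Pz)"
  unfolding rgood_def Let_def all_chB all_chC all_j4 all_j3 all_perpB all_perpC
  by (cases up) (simp_all add: tdefs)

lemma rg11: "rgood up (CB 1 PC) (CC 1 Pz)"
  unfolding rgood_def Let_def all_chB all_chC all_j4 all_j3 all_perpB all_perpC
  by (cases up) (simp_all add: tdefs)

lemma rg12: "rgood up (CB 2 PA) (CC 2 Px)"
  unfolding rgood_def Let_def all_chB all_chC all_j4 all_j3 all_perpB all_perpC
  by (cases up) (simp_all add: tdefs)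

lemma rg13: "rgood up (CB 2 PA') (CC 2 Px)"
  unfolding rgood_def Let_def all_chB all_chC all_j4 all_j3 all_perpB all_perpC
  by (cases up) (simp_all add: tdefs)

lemma rg14: "rgood up (CB 2 PB) (CC 2 Px)"
  unfolding rgood_def Let_def all_chB all_chC all_j4 all_j3 all_perpB all_perpC
  by (cases up) (simp_all add: tdefs)

lemma rg15: "rgood up (CB 2 PB') (CC 2 Px)"
  unfolding rgood_def Let_def all_chB all_chC all_j4 all_j3 all_perpB all_perpC
  by (cases up) (simp_all add: tdefs)

lemma rg16: "rgood up (CB 2 PA) (CC 2 Py)"
  unfolding rgood_def Let_def all_chB all_chC all_j4 all_j3 all_perpB all_perpC
  by (cases up) (simp_all add: tdefs)

lemma rg17: "rgood up (CB 2 PA') (CC 2 Py)"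
  unfolding rgood_def Let_def all_chB all_chC all_j4 all_j3 all_perpB all_perpC
  by (cases up) (simp_all add: tdefs)

lemma rg18: "rgood up (CB 2 PB) (CC 2 Py)"
  unfolding rgood_def Let_def all_chB all_chC all_j4 all_j3 all_perpB all_perpC
  by (cases up) (simp_all add: tdefs)

lemma rg19: "rgood up (CB 2 PC) (CC 2 Py)"
  unfolding rgood_def Let_def all_chB all_chC all_j4 all_j3 all_perpB all_perpC
  by (cases up) (simp_all add: tdefs)

lemma rg20: "rgood up (CB 2 PA) (CC 2 Pz)"
  unfolding rgood_def Let_def all_chB all_chC all_j4 all_j3 all_perpB all_perpC
  by (cases up) (simp_all add: tdefs)

lemma rg21: "rgood up (CB 2 PA') (CC 2 Pz)"
  unfolding rgood_def Let_def all_chB all_chC all_j4 all_j3 all_perpB all_perpC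
  by (cases up) (simp_all add: tdefs)

lemma rg22: "rgood up (CB 2 PB') (CC 2 Pz)"
  unfolding rgood_def Let_def all_chB all_chC all_j4 all_j3 all_perpB all_perpC
  by (cases up) (simp_all add: tdefs)

lemma rg23: "rgood up (CB 2 PC) (CC 2 Pz)"
  unfolding rgood_def Let_def all_chB all_chC all_j4 all_j3 all_perpB all_perpC
  by (cases up) (simp_all add: tdefs)

lemma rg24: "rgood up (CB 3 PA) (CC 3 Px)"
  unfolding rgood_def Let_def all_chB all_chC all_j4 all_j3 all_perpB all_perpC
  by (cases up) (simp_all add: tdefs)

lemma rg25: "rgood up (CB 3 PA') (CC 3 Px)"
  unfolding rgood_def Let_def all_chB all_chC all_j4 all_j3 all_perpB all_perpC
  by (cases up) (simp_all add: tdefs)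

lemma rg26: "rgood up (CB 3 PB) (CC 3 Px)"
  unfolding rgood_def Let_def all_chB all_chC all_j4 all_j3 all_perpB all_perpC
  by (cases up) (simp_all add: tdefs)

lemma rg27: "rgood up (CB 3 PB') (CC 3 Px)"
  unfolding rgood_def Let_def all_chB all_chC all_j4 all_j3 all_perpB all_perpC
  by (cases up) (simp_all add: tdefs)

lemma rg28: "rgood up (CB 3 PA) (CC 3 Py)"
  unfolding rgood_def Let_def all_chB all_chC all_j4 all_j3 all_perpB all_perpC
  by (cases up) (simp_all add: tdefs)

lemma rg29: "rgood up (CB 3 PA') (CC 3 Py)"
  unfolding rgood_def Let_def all_chB all_chC all_j4 all_j3 all_perpB all_perpC
  by (cases up) (simp_all add: tdefs)

lemma rg30: "rgood up (CB 3 PB) (CC 3 Py)"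
  unfolding rgood_def Let_def all_chB all_chC all_j4 all_j3 all_perpB all_perpC
  by (cases up) (simp_all add: tdefs)

lemma rg31: "rgood up (CB 3 PC) (CC 3 Py)"
  unfolding rgood_def Let_def all_chB all_chC all_j4 all_j3 all_perpB all_perpC
  by (cases up) (simp_all add: tdefs)

lemma rg32: "rgood up (CB 3 PA) (CC 3 Pz)"
  unfolding rgood_def Let_def all_chB all_chC all_j4 all_j3 all_perpB all_perpC
  by (cases up) (simp_all add: tdefs)

lemma rg33: "rgood up (CB 3 PA') (CC 3 Pz)"
  unfolding rgood_def Let_def all_chB all_chC all_j4 all_j3 all_perpB all_perpC
  by (cases up) (simp_all add: tdefs)

lemma rg34: "rgood up (CB 3 PB') (CC 3 Pz)"
  unfolding rgood_def Let_def all_chB all_chC all_j4 all_j3 all_perpB all_perpC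
  by (cases up) (simp_all add: tdefs)

lemma rg35: "rgood up (CB 3 PC) (CC 3 Pz)"
  unfolding rgood_def Let_def all_chB all_chC all_j4 all_j3 all_perpB all_perpC
  by (cases up) (simp_all add: tdefs)

lemma rg36: "rgood up (CB 4 PA) (CC 4 Px)"
  unfolding rgood_def Let_def all_chB all_chC all_j4 all_j3 all_perpB all_perpC
  by (cases up) (simp_all add: tdefs)

lemma rg37: "rgood up (CB 4 PA') (CC 4 Px)"
  unfolding rgood_def Let_def all_chB all_chC all_j4 all_j3 all_perpB all_perpC
  by (cases up) (simp_all add: tdefs)

lemma rg38: "rgood up (CB 4 PB) (CC 4 Px)"
  unfolding rgood_def Let_def all_chB all_chC all_j4 all_j3 all_perpB all_perpC
  by (cases up) (simp_all add: tdefs)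

lemma rg39: "rgood up (CB 4 PB') (CC 4 Px)"
  unfolding rgood_def Let_def all_chB all_chC all_j4 all_j3 all_perpB all_perpC
  by (cases up) (simp_all add: tdefs)

lemma rg40: "rgood up (CB 4 PA) (CC 4 Py)"
  unfolding rgood_def Let_def all_chB all_chC all_j4 all_j3 all_perpB all_perpC
  by (cases up) (simp_all add: tdefs)

lemma rg41: "rgood up (CB 4 PA') (CC 4 Py)"
  unfolding rgood_def Let_def all_chB all_chC all_j4 all_j3 all_perpB all_perpC
  by (cases up) (simp_all add: tdefs)

lemma rg42: "rgood up (CB 4 PB) (CC 4 Py)"
  unfolding rgood_def Let_def all_chB all_chC all_j4 all_j3 all_perpB all_perpC
  by (cases up) (simp_all add: tdefs)

lemma rg43: "rgood up (CB 4 PC) (CC 4 Py)"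
  unfolding rgood_def Let_def all_chB all_chC all_j4 all_j3 all_perpB all_perpC
  by (cases up) (simp_all add: tdefs)

lemma rg44: "rgood up (CB 4 PA) (CC 4 Pz)"
  unfolding rgood_def Let_def all_chB all_chC all_j4 all_j3 all_perpB all_perpC
  by (cases up) (simp_all add: tdefs)

lemma rg45: "rgood up (CB 4 PA') (CC 4 Pz)"
  unfolding rgood_def Let_def all_chB all_chC all_j4 all_j3 all_perpB all_perpC
  by (cases up) (simp_all add: tdefs)

lemma rg46: "rgood up (CB 4 PB') (CC 4 Pz)"
  unfolding rgood_def Let_def all_chB all_chC all_j4 all_j3 all_perpB all_perpC
  by (cases up) (simp_all add: tdefs)

lemma rg47: "rgood up (CB 4 PC) (CC 4 Pz)"
  unfolding rgood_def Let_def all_chB all_chC all_j4 all_j3 all_perpB all_perpC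
  by (cases up) (simp_all add: tdefs)

lemma rg48: "rgood up (CB 1 PB) (Co 1)"
  unfolding rgood_def Let_def all_chB all_chC all_j4 all_j3 all_perpB all_perpC
  by (cases up) (simp_all add: tdefs)

lemma rg49: "rgood up (CB 1 PB') (Co 1)"
  unfolding rgood_def Let_def all_chB all_chC all_j4 all_j3 all_perpB all_perpC
  by (cases up) (simp_all add: tdefs)

lemma rg50: "rgood up (CB 2 PB) (Co 2)"
  unfolding rgood_def Let_def all_chB all_chC all_j4 all_j3 all_perpB all_perpC
  by (cases up) (simp_all add: tdefs)

lemma rg51: "rgood up (CB 2 PB') (Co 2)"
  unfolding rgood_def Let_def all_chB all_chC all_j4 all_j3 all_perpB all_perpC
  by (cases up) (simp_all add: tdefs)

lemma rg52: "rgood up (CB 3 PB) (Co 3)"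
  unfolding rgood_def Let_def all_chB all_chC all_j4 all_j3 all_perpB all_perpC
  by (cases up) (simp_all add: tdefs)

lemma rg53: "rgood up (CB 3 PB') (Co 3)"
  unfolding rgood_def Let_def all_chB all_chC all_j4 all_j3 all_perpB all_perpC
  by (cases up) (simp_all add: tdefs)

lemma rg54: "rgood up (CB 3 PB) (Co 2)"
  unfolding rgood_def Let_def all_chB all_chC all_j4 all_j3 all_perpB all_perpC
  by (cases up) (simp_all add: tdefs)

lemma rg55: "rgood up (CB 4 PA) (Co 3)"
  unfolding rgood_def Let_def all_chB all_chC all_j4 all_j3 all_perpB all_perpC
  by (cases up) (simp_all add: tdefs)

lemma rgood_all: "\<forall>(b, c)\<in>set chlist. chbox b = chcbox c \<longrightarrow> rgood up b c"
  unfolding chlist_eq using rg0 rg1 rg2 rg3 rg4 rg5 rg6 rg7 rg8 rg9 rg10 rg11 rg12 rg13 rg14 rg15 rg16 rg17 rg18 rg19 rg20 rg21 rg22 rg23 rg24 rg25 rg26 rg27 rg28 rg29 rg30 rg31 rg32 rg33 rg34 rg35 rg36 rg37 rg38 rg39 rg40 rg41 rg42 rg43 rg44 rg45 rg46 rg47 rg48 rg49 rg50 rg51 rg52 rg53 rg54 rg55 by (simp add: box_simps)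

lemma rel_objs:
  "\<forall>b. chBok b \<longrightarrow> ins (snd (relB up b)) (relrect (chbox b)) \<and> wfr (snd (relB up b)) \<and>
      (if fst (relB up b) then ry1 (snd (relB up b)) = ry2 (snd (relB up b)) else rx1 (snd (relB up b)) = rx2 (snd (relB up b)))"
  "\<forall>c. chCok c \<longrightarrow> inr (relC up c) (relrect (chcbox c))"
  unfolding all_chB all_chC all_j4 all_j3 all_perpB all_perpC
  by (cases up; simp add: tdefs wfr_def)+

lemma rel_bb1: "\<forall>b. chBok b \<longrightarrow> (\<forall>b'. chBok b' \<longrightarrow> b \<noteq> b' \<longrightarrow> chbox b = chbox b' \<longrightarrow> \<not> ovl (snd (relB up b)) (snd (relB up b')))"
  unfolding all_chB all_j4 all_perpB
  by (cases up; simp add: tdefs)+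

lemma rel_cc: "\<forall>c. chCok c \<longrightarrow> (\<forall>c'. chCok c' \<longrightarrow> c \<noteq> c' \<longrightarrow> chcbox c = chcbox c' \<longrightarrow> relC up c \<noteq> relC up c')"
  unfolding all_chC all_j4 all_j3 all_perpC
  by (cases up; simp add: tdefs)+

lemma rel_cb: "\<forall>b. chBok b \<longrightarrow> (\<forall>c. chCok c \<longrightarrow> chbox b = chcbox c \<longrightarrow> \<not> inr (relC up c) (snd (relB up b)))"
  unfolding all_chB all_chC all_j4 all_j3 all_perpB all_perpC
  by (cases up; simp add: tdefs)+

lemmas fdefs = chFB_def chFC_def nodeX_def tdefs

lemma L1_local:
  assumes "ox + 100 < Q"
  shows "(let h = fst (chFB ox P Q up (CB 2 PB)); R = snd (chFB ox P Q up (CB 2 PB)); p = chFC ox P Q up (Co 1);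
            e = eRect h R p in
     (if h then rx1 R \<le> fst p \<and> fst p \<le> rx2 R else ry1 R \<le> snd p \<and> snd p \<le> ry2 R) \<and>
     (\<forall>b'. chBok b' \<longrightarrow> b' \<noteq> CB 2 PB \<longrightarrow> \<not> ovl e (snd (chFB ox P Q up b'))) \<and>
     (\<forall>c'. chCok c' \<longrightarrow> c' \<noteq> Co 1 \<longrightarrow> \<not> inr (chFC ox P Q up c') e))"
  unfolding Let_def all_chB all_chC all_j4 all_j3 all_perpB all_perpC
  using assms by (cases up; simp add: fdefs)

lemma L0_local:
  assumes "y + 10 < P"
  shows "(let h = fst (chFB ox P Q up (CB 1 PB)); R = snd (chFB ox P Q up (CB 1 PB)); p = (ox, y);
            e = eRect h R p in
     h \<and> (if h then rx1 R \<le> fst p \<and> fst p \<le> rx2 R else ry1 R \<le> snd p \<and> snd p \<le> ry2 R) \<and>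
     e = (ox, ox, y, P - 5) \<and>
     (\<forall>b'. chBok b' \<longrightarrow> b' \<noteq> CB 1 PB \<longrightarrow> chbox b' = 1 \<longrightarrow> \<not> ovl e (snd (chFB ox P Q up b'))) \<and>
     (\<forall>c'. chCok c' \<longrightarrow> chcbox c' = 1 \<longrightarrow> \<not> inr (chFC ox P Q up c') e))"
  unfolding Let_def all_chB all_chC all_j4 all_j3 all_perpB all_perpC
  using assms by (cases up; simp add: fdefs)

lemma L4_local:
  assumes "up \<Longrightarrow> P + 30 < Q" "\<not> up \<Longrightarrow> Q + 30 < P"
  shows "(let h = fst (chFB ox P Q up (CB 4 PB)); R = snd (chFB ox P Q up (CB 4 PB)); p = (Q, Q);
            e = eRect h R p in
     h \<and> (if h then rx1 R \<le> fst p \<and> fst p \<le> rx2 R else ry1 R \<le> snd p \<and> snd p \<le> ry2 R) \<and>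
     e = (if up then (Q, Q, P + 22, Q) else (Q, Q, Q, P + 18)) \<and>
     (\<forall>b'. chBok b' \<longrightarrow> b' \<noteq> CB 4 PB \<longrightarrow> chbox b' = 2 \<longrightarrow> \<not> ovl e (snd (chFB ox P Q up b'))) \<and>
     (\<forall>c'. chCok c' \<longrightarrow> chcbox c' = 2 \<longrightarrow> \<not> inr (chFC ox P Q up c') e))"
  unfolding Let_def all_chB all_chC all_j4 all_j3 all_perpB all_perpC
  using assms by (cases up; simp add: fdefs)

definition vbL :: "nat \<Rightarrow> nat \<Rightarrow> vbB \<Rightarrow> bool \<times> rect" where
  "vbL k1 k2 b = (let D = 100 * (int k2 + 1) + 5; W1 = 100 * (int k1 + 1) in
    case b of VP r \<Rightarrow> (case r of PA \<Rightarrow> (True, (1,4,0,0)) | PA' \<Rightarrow> (True, (1,4,-4,-4))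
          | PB \<Rightarrow> (False, (0,0,1-D,-1)) | PB' \<Rightarrow> (False, (3,3,-2,-1)) | PC \<Rightarrow> (False, (5,5,-3,-2)))
     | VR s \<Rightarrow> if s then (False, (0,0,1,5 + int k1)) else (True, (1, 5 + int k2, -D, -D))
     | VS s \<Rightarrow> if s then (False, (W1,W1,2,5 + int k1)) else (True, (2, 5 + int k2, -5, -5))
     | VT s \<Rightarrow> if s then (False, (3,3,1,2)) else (True, (1,2,3-D,3-D))
     | VU s \<Rightarrow> if s then (True, (1,4,5,5)) else (False, (5,5,1-D,4-D)))"

definition vbLC :: "nat \<Rightarrow> nat \<Rightarrow> vbC \<Rightarrow> int \<times> int" where
  "vbLC k1 k2 c = (let D = 100 * (int k2 + 1) + 5 in
    case c of VPc p \<Rightarrow> (case p of Px \<Rightarrow> (1,-1) | Py \<Rightarrow> (2,-3) | Pz \<Rightarrow> (4,-2))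
     | Vx s \<Rightarrow> if s then (1,3) else (3,1-D)
     | Vy s \<Rightarrow> if s then (2,1) else (1,2-D)
     | Vz s \<Rightarrow> if s then (4,2) else (2,4-D)
     | Vo s r \<Rightarrow> if s then (100 * int r, 5 + int r) else (5 + int r, 100 * int r - D))"

definition vcok :: "nat \<Rightarrow> nat \<Rightarrow> vbC \<Rightarrow> bool" where
  "vcok k1 k2 c = (case c of Vo s r \<Rightarrow> 1 \<le> r \<and> r \<le> (if s then k1 else k2) | _ \<Rightarrow> True)"

lemma all_vbB: "(\<forall>b. P b) \<longleftrightarrow> P (VP PA) \<and> P (VP PA') \<and> P (VP PB) \<and> P (VP PB') \<and> P (VP PC) \<and>
   P (VR True) \<and> P (VS True) \<and> P (VT True) \<and> P (VU True) \<and> P (VR False) \<and> P (VS False) \<and> P (VT False) \<and> P (VU False)"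
  apply (rule iffI) apply blast
  apply clarify subgoal for b by (cases b; (rename_tac x, case_tac x); simp) done

lemma all_vbC: "(\<forall>c. vcok k1 k2 c \<longrightarrow> P c) \<longleftrightarrow> P (VPc Px) \<and> P (VPc Py) \<and> P (VPc Pz) \<and>
   P (Vx True) \<and> P (Vy True) \<and> P (Vz True) \<and> P (Vx False) \<and> P (Vy False) \<and> P (Vz False) \<and>
   (\<forall>r. 1 \<le> r \<and> r \<le> k1 \<longrightarrow> P (Vo True r)) \<and> (\<forall>r. 1 \<le> r \<and> r \<le> k2 \<longrightarrow> P (Vo False r))"
  apply (rule iffI) apply (simp add: vcok_def)
  apply clarify subgoal for c by (cases c; (rename_tac x, case_tac x)?; simp add: vcok_def split: if_splits) done

definition vgood :: "nat \<Rightarrow> nat \<Rightarrow> int \<Rightarrow> vbB \<Rightarrow> vbC \<Rightarrow> bool" where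
  "vgood k1 k2 H b c \<longleftrightarrow>
    (let h = fst (vbL k1 k2 b); R = snd (vbL k1 k2 b); p = vbLC k1 k2 c; e = eRect h R p in
     (if h then rx1 R \<le> fst p \<and> fst p \<le> rx2 R else ry1 R \<le> snd p \<and> snd p \<le> ry2 R) \<and>
     (\<forall>b'. b' \<noteq> b \<longrightarrow> \<not> ovl e (snd (vbL k1 k2 b'))) \<and>
     (\<forall>c'. vcok k1 k2 c' \<longrightarrow> c' \<noteq> c \<longrightarrow> \<not> inr (vbLC k1 k2 c') e) \<and>
     ins e (-H, H - 1, -H, H - 1))"

lemmas vdefs = vbL_def vbLC_def Let_def eRect_def ovl_def inr_def ins_def

lemma vb_core: assumes "100 * (int k1 + int k2) + 300 \<le> H"
  shows "\<forall>(b, c)\<in>perp_edges. vgood k1 k2 H (VP b) (VPc c)"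
  unfolding perp_edges_def vgood_def all_vbB all_vbC using assms by (simp add: vdefs)

lemma vs0: assumes "100 * (int k1 + int k2) + 300 \<le> H" shows "vgood k1 k2 H (VP PA) (Vx True)"
  unfolding vgood_def all_vbB all_vbC using assms by (simp add: vdefs)

lemma vs1: assumes "100 * (int k1 + int k2) + 300 \<le> H" shows "vgood k1 k2 H (VR True) (Vx True)"
  unfolding vgood_def all_vbB all_vbC using assms by (simp add: vdefs)

lemma vs2: assumes "100 * (int k1 + int k2) + 300 \<le> H" shows "vgood k1 k2 H (VS True) (Vx True)"
  unfolding vgood_def all_vbB all_vbC using assms by (simp add: vdefs)

lemma vs3: assumes "100 * (int k1 + int k2) + 300 \<le> H" shows "vgood k1 k2 H (VU True) (Vx True)"
  unfolding vgood_def all_vbB all_vbC using assms by (simp add: vdefs)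

lemma vs4: assumes "100 * (int k1 + int k2) + 300 \<le> H" shows "vgood k1 k2 H (VP PA) (Vy True)"
  unfolding vgood_def all_vbB all_vbC using assms by (simp add: vdefs)

lemma vs5: assumes "100 * (int k1 + int k2) + 300 \<le> H" shows "vgood k1 k2 H (VR True) (Vy True)"
  unfolding vgood_def all_vbB all_vbC using assms by (simp add: vdefs)

lemma vs6: assumes "100 * (int k1 + int k2) + 300 \<le> H" shows "vgood k1 k2 H (VT True) (Vy True)"
  unfolding vgood_def all_vbB all_vbC using assms by (simp add: vdefs)

lemma vs7: assumes "100 * (int k1 + int k2) + 300 \<le> H" shows "vgood k1 k2 H (VU True) (Vy True)"
  unfolding vgood_def all_vbB all_vbC using assms by (simp add: vdefs)

lemma vs8: assumes "100 * (int k1 + int k2) + 300 \<le> H" shows "vgood k1 k2 H (VP PA) (Vz True)"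
  unfolding vgood_def all_vbB all_vbC using assms by (simp add: vdefs)

lemma vs9: assumes "100 * (int k1 + int k2) + 300 \<le> H" shows "vgood k1 k2 H (VS True) (Vz True)"
  unfolding vgood_def all_vbB all_vbC using assms by (simp add: vdefs)

lemma vs10: assumes "100 * (int k1 + int k2) + 300 \<le> H" shows "vgood k1 k2 H (VT True) (Vz True)"
  unfolding vgood_def all_vbB all_vbC using assms by (simp add: vdefs)

lemma vs11: assumes "100 * (int k1 + int k2) + 300 \<le> H" shows "vgood k1 k2 H (VU True) (Vz True)"
  unfolding vgood_def all_vbB all_vbC using assms by (simp add: vdefs)

lemma vs12: assumes "100 * (int k1 + int k2) + 300 \<le> H" shows "vgood k1 k2 H (VP PB) (Vx False)"
  unfolding vgood_def all_vbB all_vbC using assms by (simp add: vdefs)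

lemma vs13: assumes "100 * (int k1 + int k2) + 300 \<le> H" shows "vgood k1 k2 H (VR False) (Vx False)"
  unfolding vgood_def all_vbB all_vbC using assms by (simp add: vdefs)

lemma vs14: assumes "100 * (int k1 + int k2) + 300 \<le> H" shows "vgood k1 k2 H (VS False) (Vx False)"
  unfolding vgood_def all_vbB all_vbC using assms by (simp add: vdefs)

lemma vs15: assumes "100 * (int k1 + int k2) + 300 \<le> H" shows "vgood k1 k2 H (VU False) (Vx False)"
  unfolding vgood_def all_vbB all_vbC using assms by (simp add: vdefs)

lemma vs16: assumes "100 * (int k1 + int k2) + 300 \<le> H" shows "vgood k1 k2 H (VP PB) (Vy False)"
  unfolding vgood_def all_vbB all_vbC using assms by (simp add: vdefs)

lemma vs17: assumes "100 * (int k1 + int k2) + 300 \<le> H" shows "vgood k1 k2 H (VR False) (Vy False)"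
  unfolding vgood_def all_vbB all_vbC using assms by (simp add: vdefs)

lemma vs18: assumes "100 * (int k1 + int k2) + 300 \<le> H" shows "vgood k1 k2 H (VT False) (Vy False)"
  unfolding vgood_def all_vbB all_vbC using assms by (simp add: vdefs)

lemma vs19: assumes "100 * (int k1 + int k2) + 300 \<le> H" shows "vgood k1 k2 H (VU False) (Vy False)"
  unfolding vgood_def all_vbB all_vbC using assms by (simp add: vdefs)

lemma vs20: assumes "100 * (int k1 + int k2) + 300 \<le> H" shows "vgood k1 k2 H (VP PB) (Vz False)"
  unfolding vgood_def all_vbB all_vbC using assms by (simp add: vdefs)

lemma vs21: assumes "100 * (int k1 + int k2) + 300 \<le> H" shows "vgood k1 k2 H (VS False) (Vz False)"
  unfolding vgood_def all_vbB all_vbC using assms by (simp add: vdefs)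

lemma vs22: assumes "100 * (int k1 + int k2) + 300 \<le> H" shows "vgood k1 k2 H (VT False) (Vz False)"
  unfolding vgood_def all_vbB all_vbC using assms by (simp add: vdefs)

lemma vs23: assumes "100 * (int k1 + int k2) + 300 \<le> H" shows "vgood k1 k2 H (VU False) (Vz False)"
  unfolding vgood_def all_vbB all_vbC using assms by (simp add: vdefs)

lemma voVRTrue: assumes "100 * (int k1 + int k2) + 300 \<le> H" "1 \<le> r" "r \<le> k1" shows "vgood k1 k2 H (VR True) (Vo True r)"
  unfolding vgood_def all_vbB all_vbC using assms by (simp add: vdefs; linarith?)

lemma voVSTrue: assumes "100 * (int k1 + int k2) + 300 \<le> H" "1 \<le> r" "r \<le> k1" shows "vgood k1 k2 H (VS True) (Vo True r)"
  unfolding vgood_def all_vbB all_vbC using assms by (simp add: vdefs; linarith?)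

lemma voVRFalse: assumes "100 * (int k1 + int k2) + 300 \<le> H" "1 \<le> r" "r \<le> k2" shows "vgood k1 k2 H (VR False) (Vo False r)"
  unfolding vgood_def all_vbB all_vbC using assms by (simp add: vdefs; linarith?)

lemma voVSFalse: assumes "100 * (int k1 + int k2) + 300 \<le> H" "1 \<le> r" "r \<le> k2" shows "vgood k1 k2 H (VS False) (Vo False r)"
  unfolding vgood_def all_vbB all_vbC using assms by (simp add: vdefs; linarith?)

lemma vb_objs: assumes "100 * (int k1 + int k2) + 300 \<le> H"
  shows "\<forall>b. ins (snd (vbL k1 k2 b)) (-H, H - 1, -H, H - 1) \<and> wfr (snd (vbL k1 k2 b)) \<and>
      (if fst (vbL k1 k2 b) then ry1 (snd (vbL k1 k2 b)) = ry2 (snd (vbL k1 k2 b)) else rx1 (snd (vbL k1 k2 b)) = rx2 (snd (vbL k1 k2 b)))"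
    "\<forall>c. vcok k1 k2 c \<longrightarrow> inr (vbLC k1 k2 c) (-H, H - 1, -H, H - 1)"
  unfolding all_vbB all_vbC using assms by (simp_all add: vdefs wfr_def)

lemma vb_bb: "\<forall>b b'. b \<noteq> b' \<longrightarrow> \<not> ovl (snd (vbL k1 k2 b)) (snd (vbL k1 k2 b'))"
  unfolding all_vbB by (simp add: vdefs)

lemma vb_cc: "\<forall>c. vcok k1 k2 c \<longrightarrow> (\<forall>c'. vcok k1 k2 c' \<longrightarrow> c \<noteq> c' \<longrightarrow> vbLC k1 k2 c \<noteq> vbLC k1 k2 c')"
  unfolding all_vbC by (simp add: vdefs; linarith?)

lemma vb_cb: "\<forall>b. \<forall>c. vcok k1 k2 c \<longrightarrow> \<not> inr (vbLC k1 k2 c) (snd (vbL k1 k2 b))"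
  unfolding all_vbB all_vbC by (simp add: vdefs)

lemma vb_corr: assumes "100 * (int k1 + int k2) + 300 \<le> H" "H \<le> Y" "1 \<le> r" "r \<le> (if s then k1 else k2)"
  shows "\<forall>b. \<not> ovl (fst (swP s (vbLC k1 k2 (Vo s r))), fst (swP s (vbLC k1 k2 (Vo s r))), snd (swP s (vbLC k1 k2 (Vo s r))), Y)
                       (swR s (snd (vbL k1 k2 b)))"
    "\<forall>c'. vcok k1 k2 c' \<longrightarrow> c' \<noteq> Vo s r \<longrightarrow>
        \<not> inr (swP s (vbLC k1 k2 c')) (fst (swP s (vbLC k1 k2 (Vo s r))), fst (swP s (vbLC k1 k2 (Vo s r))), snd (swP s (vbLC k1 k2 (Vo s r))), Y)"
  unfolding all_vbB all_vbC using assms by (cases s; simp add: vdefs swR_def swP_def; linarith?)+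

lemma vb_edges: assumes a: "100 * (int k1 + int k2) + 300 \<le> H" and e: "(b, c) \<in> vbox_edges k1 k2"
  shows "vgood k1 k2 H b c \<and> vcok k1 k2 c"
proof -
  have core: "vgood k1 k2 H (VP r) (VPc p)" if "(r, p) \<in> perp_edges" for r p
    using vb_core[OF a] that by auto
  have sides: "vgood k1 k2 H (vbox_base s) (Vx s) \<and> vgood k1 k2 H (VR s) (Vx s) \<and> vgood k1 k2 H (VS s) (Vx s) \<and>
     vgood k1 k2 H (VU s) (Vx s) \<and> vgood k1 k2 H (vbox_base s) (Vy s) \<and> vgood k1 k2 H (VR s) (Vy s) \<and>
     vgood k1 k2 H (VT s) (Vy s) \<and> vgood k1 k2 H (VU s) (Vy s) \<and> vgood k1 k2 H (vbox_base s) (Vz s) \<and>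
     vgood k1 k2 H (VS s) (Vz s) \<and> vgood k1 k2 H (VT s) (Vz s) \<and> vgood k1 k2 H (VU s) (Vz s)" for s
    using vs0[OF a] vs1[OF a] vs2[OF a] vs3[OF a] vs4[OF a] vs5[OF a] vs6[OF a] vs7[OF a] vs8[OF a] vs9[OF a] vs10[OF a] vs11[OF a] vs12[OF a] vs13[OF a] vs14[OF a] vs15[OF a] vs16[OF a] vs17[OF a] vs18[OF a] vs19[OF a] vs20[OF a] vs21[OF a] vs22[OF a] vs23[OF a] by (cases s) (auto simp: vbox_base_def)
  show ?thesis using e unfolding vbox_edges_def
    by (auto simp: vcok_def sides intro: core voVRTrue[OF a] voVSTrue[OF a] voVRFalse[OF a] voVSFalse[OF a])
qed

definition HH :: "(nat \<times> bool) list list \<Rightarrow> int" where "HH cls = 200 * (int (length (concat cls)) + 2)"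
definition MM :: "(nat \<times> bool) list list \<Rightarrow> int" where "MM cls = 2 * HH cls"
definition Vc :: "(nat \<times> bool) list list \<Rightarrow> nat \<Rightarrow> int" where "Vc cls i = int i * MM cls + HH cls"
definition Vt :: "nat \<Rightarrow> (nat \<times> bool) list list \<Rightarrow> int" where "Vt n cls = int n * MM cls"
definition kk :: "(nat \<times> bool) list list \<Rightarrow> nat \<Rightarrow> bool \<Rightarrow> nat" where "kk cls i p = occ_total cls (i, p)"
definition Dv :: "(nat \<times> bool) list list \<Rightarrow> nat \<Rightarrow> int" where "Dv cls i = 100 * (int (kk cls i False) + 1) + 5"
definition tv :: "(nat \<Rightarrow> bool) \<Rightarrow> (nat \<times> bool) list list \<Rightarrow> nat \<Rightarrow> nat \<Rightarrow> bool" where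
  "tv a cls q s = lit_val a (cls ! q ! s)"
definition sec :: "(nat \<Rightarrow> bool) \<Rightarrow> (nat \<times> bool) list list \<Rightarrow> nat \<Rightarrow> nat \<Rightarrow> bool" where
  "sec a cls q s = (\<exists>s'<s. tv a cls q s' = tv a cls q s)"
definition P1 :: "nat \<Rightarrow> (nat \<times> bool) list list \<Rightarrow> (nat \<Rightarrow> bool) \<Rightarrow> nat \<Rightarrow> nat \<Rightarrow> int" where
  "P1 n cls a q s = Vt n cls + 100 * int (7 * q + s + (if sec a cls q s then 4 else 0) + 1)"
definition Qc :: "nat \<Rightarrow> (nat \<times> bool) list list \<Rightarrow> nat \<Rightarrow> int" where
  "Qc n cls q = Vt n cls + 100 * int (7 * q + 4)"
definition oxc :: "(nat \<times> bool) list list \<Rightarrow> nat \<Rightarrow> nat \<Rightarrow> int" where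
  "oxc cls q s = Vc cls (fst (cls ! q ! s)) + 100 * int (occ_num cls q s) -
      (if snd (cls ! q ! s) then 0 else Dv cls (fst (cls ! q ! s)))"

definition vbG :: "(nat \<times> bool) list list \<Rightarrow> nat \<Rightarrow> vbB \<Rightarrow> bool \<times> rect" where
  "vbG cls i b = vbL (kk cls i True) (kk cls i False) b"
definition vbGC :: "(nat \<times> bool) list list \<Rightarrow> nat \<Rightarrow> vbC \<Rightarrow> int \<times> int" where
  "vbGC cls i c = vbLC (kk cls i True) (kk cls i False) c"
definition chG :: "nat \<Rightarrow> (nat \<times> bool) list list \<Rightarrow> (nat \<Rightarrow> bool) \<Rightarrow> nat \<Rightarrow> nat \<Rightarrow> chB \<Rightarrow> bool \<times> rect" where
  "chG n cls a q s b = chFB (oxc cls q s) (P1 n cls a q s) (Qc n cls q) (\<not> sec a cls q s) b"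
definition chGC :: "nat \<Rightarrow> (nat \<times> bool) list list \<Rightarrow> (nat \<Rightarrow> bool) \<Rightarrow> nat \<Rightarrow> nat \<Rightarrow> chC \<Rightarrow> int \<times> int" where
  "chGC n cls a q s c = chFC (oxc cls q s) (P1 n cls a q s) (Qc n cls q) (\<not> sec a cls q s) c"

fun hG :: "nat \<Rightarrow> (nat \<times> bool) list list \<Rightarrow> (nat \<Rightarrow> bool) \<Rightarrow> gB \<Rightarrow> bool" where
  "hG n cls a (VarB i b) = (fst (vbG cls i b) = a i)"
| "hG n cls a (ChB q s b) = (fst (chG n cls a q s b) = tv a cls q s)"
fun bG :: "nat \<Rightarrow> (nat \<times> bool) list list \<Rightarrow> (nat \<Rightarrow> bool) \<Rightarrow> gB \<Rightarrow> rect" where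
  "bG n cls a (VarB i b) = swR (a i) (shR (Vc cls i) (Vc cls i) (snd (vbG cls i b)))"
| "bG n cls a (ChB q s b) = swR (tv a cls q s) (snd (chG n cls a q s b))"
fun cG :: "nat \<Rightarrow> (nat \<times> bool) list list \<Rightarrow> (nat \<Rightarrow> bool) \<Rightarrow> gC \<Rightarrow> int \<times> int" where
  "cG n cls a (VarC i c) = swP (a i) (shP (Vc cls i) (Vc cls i) (vbGC cls i c))"
| "cG n cls a (ChC q s c) = swP (tv a cls q s) (chGC n cls a q s c)"
| "cG n cls a (ClC q) = (Qc n cls q, Qc n cls q)"

datatype bx = BV nat | B1 nat nat | B2 nat nat | BK nat

fun boxB :: "gB \<Rightarrow> bx" where
  "boxB (VarB i b) = BV i"
| "boxB (ChB q s b) = (if chbox b = 1 then B1 q s else B2 q s)"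
fun boxC :: "gC \<Rightarrow> bx" where
  "boxC (VarC i c) = BV i"
| "boxC (ChC q s c) = (if chcbox c = 1 then B1 q s else B2 q s)"
| "boxC (ClC q) = BK q"
fun rectOf :: "nat \<Rightarrow> (nat \<times> bool) list list \<Rightarrow> (nat \<Rightarrow> bool) \<Rightarrow> bx \<Rightarrow> rect" where
  "rectOf n cls a (BV i) = (Vc cls i - HH cls, Vc cls i + HH cls - 1, Vc cls i - HH cls, Vc cls i + HH cls - 1)"
| "rectOf n cls a (B1 q s) = swR (tv a cls q s) (chrect (oxc cls q s) (P1 n cls a q s) (Qc n cls q) 1)"
| "rectOf n cls a (B2 q s) = swR (tv a cls q s) (chrect (oxc cls q s) (P1 n cls a q s) (Qc n cls q) 2)"
| "rectOf n cls a (BK q) = (Qc n cls q, Qc n cls q, Qc n cls q, Qc n cls q)"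
fun valid :: "nat \<Rightarrow> (nat \<times> bool) list list \<Rightarrow> bx \<Rightarrow> bool" where
  "valid n cls (BV i) = (i < n)"
| "valid n cls (B1 q s) = (q < length cls \<and> s < 3)"
| "valid n cls (B2 q s) = (q < length cls \<and> s < 3)"
| "valid n cls (BK q) = (q < length cls)"

lemma E_cases:
  assumes "(B, c) \<in> nae_bus_edges n cls"
  shows "(\<exists>i b c0. i < n \<and> (b, c0) \<in> vbox_edges (kk cls i True) (kk cls i False) \<and> B = VarB i b \<and> c = VarC i c0) \<or>
    (\<exists>q s b c0. q < length cls \<and> s < 3 \<and> (b, c0) \<in> chain_edges \<and> B = ChB q s b \<and> c = ChC q s c0) \<or>
    (\<exists>q s. q < length cls \<and> s < 3 \<and> B = ChB q s (CB 4 PB) \<and> c = ClC q) \<or>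
    (\<exists>q s. q < length cls \<and> s < 3 \<and> B = ChB q s (CB 1 PB) \<and>
        c = VarC (fst (cls ! q ! s)) (Vo (snd (cls ! q ! s)) (occ_num cls q s)))"
  using assms unfolding nae_bus_edges_def kk_def by blast

lemma swP_swP: "swP b1 (swP b2 p) = swP (b1 = b2) p" by (auto simp: swP_def)
lemma swR_swR: "swR b1 (swR b2 R) = swR (b1 = b2) R" by (cases R) (auto simp: swR_def)
lemma ovl_sw2: "ovl (swR t X) (swR t' Y) = ovl X (swR (t = t') Y)"
  by (cases t; cases t') (auto simp: ovl_def)
lemma inr_sw2: "inr (swP t' p) (swR t X) = inr (swP (t = t') p) X"
  by (cases t; cases t') (auto simp: inr_def)
lemma swP_shP: "swP b (shP d d p) = shP d d (swP b p)" by (auto simp: swP_def shP_def)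
lemma swR_shR: "swR b (shR d d R) = shR d d (swR b R)" by (cases R) (auto simp: swR_def shR_def)

lemma count_list_le_length: "count_list xs x \<le> length xs"
  by (induction xs) auto

lemma occ_total_le: "occ_total cls l \<le> length (concat cls)"
  unfolding occ_total_def by (rule count_list_le_length)

lemma occ_num_inj_aux:
  assumes q: "q < length cls" "q' < length cls" and s: "s < length (cls ! q)" "s' < length (cls ! q')"
    and lt: "q < q' \<or> (q = q' \<and> s < s')"
  shows "\<exists>zs. concat (take q cls) @ take s (cls ! q) @ [cls ! q ! s] @ zs = concat (take q' cls) @ take s' (cls ! q')"
proof (cases "q = q'")
  case True
  then have ss: "s < s'" using lt by auto
  have "take s' (cls ! q) = take s (cls ! q) @ [cls ! q ! s] @ take (s' - Suc s) (drop (Suc s) (cls ! q))"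
  proof -
    have "take s' (cls ! q) = take (Suc s + (s' - Suc s)) (cls ! q)" using ss by simp
    also have "\<dots> = take (Suc s) (cls ! q) @ take (s' - Suc s) (drop (Suc s) (cls ! q))" by (rule take_add)
    also have "take (Suc s) (cls ! q) = take s (cls ! q) @ [cls ! q ! s]" using s(1) by (rule take_Suc_conv_app_nth)
    finally show ?thesis by simp
  qed
  then show ?thesis using True by auto
next
  case False
  then have qq: "q < q'" using lt by auto
  have "take q' cls = take q cls @ [cls ! q] @ take (q' - Suc q) (drop (Suc q) cls)"
  proof -
    have "take q' cls = take (Suc q + (q' - Suc q)) cls" using qq by simp
    also have "\<dots> = take (Suc q) cls @ take (q' - Suc q) (drop (Suc q) cls)" by (rule take_add)
    also have "take (Suc q) cls = take q cls @ [cls ! q]" using q(1) by (rule take_Suc_conv_app_nth)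
    finally show ?thesis by simp
  qed
  moreover have "cls ! q = take s (cls ! q) @ [cls ! q ! s] @ drop (Suc s) (cls ! q)"
    using s(1) by (simp add: id_take_nth_drop)
  ultimately have cq: "concat (take q' cls) = concat (take q cls) @ take s (cls ! q) @ [cls ! q ! s] @
      drop (Suc s) (cls ! q) @ concat (take (q' - Suc q) (drop (Suc q) cls))"
    by (metis append.assoc concat.simps(1,2) concat_append self_append_conv)
  show ?thesis
    by (rule exI[of _ "drop (Suc s) (cls ! q) @ concat (take (q' - Suc q) (drop (Suc q) cls)) @ take s' (cls ! q')"]) (simp add: cq)
qed

lemma occ_num_inj:
  assumes q: "q < length cls" "q' < length cls" and s: "s < length (cls ! q)" "s' < length (cls ! q')"
    and eq: "cls ! q ! s = cls ! q' ! s'" and ne: "(q, s) \<noteq> (q', s')"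
  shows "occ_num cls q s \<noteq> occ_num cls q' s'"
proof -
  have "q < q' \<or> (q = q' \<and> s < s') \<or> q' < q \<or> (q = q' \<and> s' < s)" using ne by auto
  then show ?thesis
  proof (elim disjE)
    assume "q < q'"
    then have "q < q' \<or> (q = q' \<and> s < s')" by auto
    from occ_num_inj_aux[OF q s this] obtain zs where
      z: "concat (take q cls) @ take s (cls ! q) @ [cls ! q ! s] @ zs = concat (take q' cls) @ take s' (cls ! q')" by blast
    have "count_list (concat (take q' cls) @ take s' (cls ! q')) (cls ! q ! s) \<ge>
          count_list (concat (take q cls) @ take s (cls ! q)) (cls ! q ! s) + 1"
      unfolding z[symmetric] by simp
    moreover have "occ_num cls q s = count_list (concat (take q cls) @ take s (cls ! q)) (cls ! q ! s) + 1"
      by (simp add: occ_num_def)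
    moreover have "occ_num cls q' s' = count_list (concat (take q' cls) @ take s' (cls ! q')) (cls ! q ! s) + 1"
      by (simp add: occ_num_def eq)
    ultimately show ?thesis by linarith
  next
    assume "q = q' \<and> s < s'"
    then have "q < q' \<or> (q = q' \<and> s < s')" by auto
    from occ_num_inj_aux[OF q s this] obtain zs where
      z: "concat (take q cls) @ take s (cls ! q) @ [cls ! q ! s] @ zs = concat (take q' cls) @ take s' (cls ! q')" by blast
    have "count_list (concat (take q' cls) @ take s' (cls ! q')) (cls ! q ! s) \<ge>
          count_list (concat (take q cls) @ take s (cls ! q)) (cls ! q ! s) + 1"
      unfolding z[symmetric] by simp
    moreover have "occ_num cls q s = count_list (concat (take q cls) @ take s (cls ! q)) (cls ! q ! s) + 1"
      by (simp add: occ_num_def)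
    moreover have "occ_num cls q' s' = count_list (concat (take q' cls) @ take s' (cls ! q')) (cls ! q ! s) + 1"
      by (simp add: occ_num_def eq)
    ultimately show ?thesis by linarith
  next
    assume "q' < q"
    then have "q' < q \<or> (q' = q \<and> s' < s)" by auto
    from occ_num_inj_aux[OF q(2,1) s(2,1) this] obtain zs where
      z: "concat (take q' cls) @ take s' (cls ! q') @ [cls ! q' ! s'] @ zs = concat (take q cls) @ take s (cls ! q)" by blast
    have "count_list (concat (take q cls) @ take s (cls ! q)) (cls ! q' ! s') \<ge>
          count_list (concat (take q' cls) @ take s' (cls ! q')) (cls ! q' ! s') + 1"
      unfolding z[symmetric] by simp
    moreover have "occ_num cls q' s' = count_list (concat (take q' cls) @ take s' (cls ! q')) (cls ! q' ! s') + 1"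
      by (simp add: occ_num_def)
    moreover have "occ_num cls q s = count_list (concat (take q cls) @ take s (cls ! q)) (cls ! q' ! s') + 1"
      by (simp add: occ_num_def eq)
    ultimately show ?thesis by linarith
  next
    assume "q = q' \<and> s' < s"
    then have "q' < q \<or> (q' = q \<and> s' < s)" by auto
    from occ_num_inj_aux[OF q(2,1) s(2,1) this] obtain zs where
      z: "concat (take q' cls) @ take s' (cls ! q') @ [cls ! q' ! s'] @ zs = concat (take q cls) @ take s (cls ! q)" by blast
    have "count_list (concat (take q cls) @ take s (cls ! q)) (cls ! q' ! s') \<ge>
          count_list (concat (take q' cls) @ take s' (cls ! q')) (cls ! q' ! s') + 1"
      unfolding z[symmetric] by simp
    moreover have "occ_num cls q' s' = count_list (concat (take q' cls) @ take s' (cls ! q')) (cls ! q' ! s') + 1"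
      by (simp add: occ_num_def)
    moreover have "occ_num cls q s = count_list (concat (take q cls) @ take s (cls ! q)) (cls ! q' ! s') + 1"
      by (simp add: occ_num_def eq)
    ultimately show ?thesis by linarith
  qed
qed

locale inst =
  fixes n :: nat and cls :: "(nat \<times> bool) list list" and a :: "nat \<Rightarrow> bool"
  assumes ok: "\<forall>C\<in>set cls. length C = 3 \<and> (\<forall>l\<in>set C. fst l < n)"
    and nae: "\<forall>C\<in>set cls. (\<exists>l\<in>set C. lit_val a l) \<and> (\<exists>l\<in>set C. \<not> lit_val a l)"
begin

abbreviation "NN \<equiv> int (length (concat cls))"

lemma len3: "q < length cls \<Longrightarrow> length (cls ! q) = 3" using ok by auto
lemma lit_var: "q < length cls \<Longrightarrow> s < 3 \<Longrightarrow> fst (cls ! q ! s) < n"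
  using ok len3[of q] by (metis nth_mem)
lemma kk_le: "kk cls i p \<le> length (concat cls)" unfolding kk_def by (rule occ_total_le)
lemma occ_r: "q < length cls \<Longrightarrow> s < 3 \<Longrightarrow>
   1 \<le> occ_num cls q s \<and> occ_num cls q s \<le> kk cls (fst (cls ! q ! s)) (snd (cls ! q ! s))"
  using occ_bound[of q cls s] len3[of q] unfolding kk_def by auto

lemma HH_ge: "100 * (int (kk cls i True) + int (kk cls i False)) + 300 \<le> HH cls"
proof -
  have "int (kk cls i True) \<le> NN" "int (kk cls i False) \<le> NN" using kk_le[of i True] kk_le[of i False] by auto
  then show ?thesis unfolding HH_def by (simp add: algebra_simps)
qed

lemma MM_pos: "MM cls > 0" unfolding MM_def HH_def by simp

lemma band_top: "i < n \<Longrightarrow> Vc cls i + HH cls \<le> Vt n cls"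
proof -
  assume "i < n"
  then have "int i + 1 \<le> int n" by simp
  then have "(int i + 1) * MM cls \<le> int n * MM cls" using MM_pos by (intro mult_right_mono) auto
  then show ?thesis unfolding Vc_def Vt_def MM_def by (simp add: algebra_simps)
qed

lemma band_sep: "i < i' \<Longrightarrow> Vc cls i + HH cls \<le> Vc cls i' - HH cls"
proof -
  assume "i < i'"
  then have "int i + 1 \<le> int i'" by simp
  then have "(int i + 1) * MM cls \<le> int i' * MM cls" using MM_pos by (intro mult_right_mono) auto
  then show ?thesis unfolding Vc_def MM_def by (simp add: algebra_simps)
qed

lemma band_bot: "0 \<le> Vc cls i - HH cls"
  unfolding Vc_def using MM_pos by simp

lemma Vt_nonneg: "0 \<le> Vt n cls" unfolding Vt_def using MM_pos by simp

lemma tv_lit: "tv a cls q s = (a (fst (cls ! q ! s)) = snd (cls ! q ! s))"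
  unfolding tv_def lit_val_def by simp

lemma ox_bounds: assumes "q < length cls" "s < 3"
  shows "Vc cls (fst (cls ! q ! s)) - HH cls + 20 \<le> oxc cls q s \<and> oxc cls q s + 20 \<le> Vc cls (fst (cls ! q ! s)) + HH cls
     \<and> Vc cls (fst (cls ! q ! s)) + 5 + int (occ_num cls q s) + 20 \<le> Vc cls (fst (cls ! q ! s)) + HH cls"
  using occ_r[OF assms] kk_le[of "fst (cls ! q ! s)" "snd (cls ! q ! s)"] kk_le[of "fst (cls ! q ! s)" False]
  unfolding oxc_def Dv_def HH_def by auto

lemma frame_o: assumes "q < length cls" "s < 3"
  shows "swP (tv a cls q s) (cG n cls a (VarC (fst (cls ! q ! s)) (Vo (snd (cls ! q ! s)) (occ_num cls q s)))) =
     (oxc cls q s, Vc cls (fst (cls ! q ! s)) + 5 + int (occ_num cls q s))"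
  unfolding cG.simps swP_swP swP_shP tv_lit vbGC_def
  by (cases "snd (cls ! q ! s)") (auto simp: vbLC_def oxc_def Dv_def swP_def shP_def)

lemma P1_lo: "Vt n cls + 100 \<le> P1 n cls a q s" unfolding P1_def by simp
lemma Q_lo: "Vt n cls + 400 \<le> Qc n cls q" unfolding Qc_def by simp

lemma sec_slot: "s < 3 \<Longrightarrow> (\<not> sec a cls q s \<longrightarrow> P1 n cls a q s + 100 \<le> Qc n cls q) \<and> (sec a cls q s \<longrightarrow> Qc n cls q + 100 \<le> P1 n cls a q s)"
  unfolding P1_def Qc_def by auto

lemma P1_inj: assumes "s < 3" "s' < 3" "(q, s) \<noteq> (q', s')"
  shows "P1 n cls a q s + 100 \<le> P1 n cls a q' s' \<or> P1 n cls a q' s' + 100 \<le> P1 n cls a q s"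
proof -
  define x where "x = 7 * q + s + (if sec a cls q s then 4 else 0) + 1"
  define y where "y = 7 * q' + s' + (if sec a cls q' s' then 4 else 0) + 1"
  have "x \<noteq> y" using assms unfolding x_def y_def by (auto split: if_splits; presburger)
  then have "x + 1 \<le> y \<or> y + 1 \<le> x" by auto
  then show ?thesis unfolding P1_def x_def[symmetric] y_def[symmetric] by auto
qed

lemma P1_Q: assumes "s < 3" shows "P1 n cls a q s + 100 \<le> Qc n cls q' \<or> Qc n cls q' + 100 \<le> P1 n cls a q s"
proof -
  define x where "x = 7 * q + s + (if sec a cls q s then 4 else 0) + 1"
  have "x \<noteq> 7 * q' + 4" using assms unfolding x_def by (auto split: if_splits; presburger)
  then have "x + 1 \<le> 7 * q' + 4 \<or> 7 * q' + 4 + 1 \<le> x" by auto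
  then show ?thesis unfolding P1_def Qc_def x_def[symmetric] by auto
qed

lemma Q_inj: "q \<noteq> q' \<Longrightarrow> Qc n cls q + 100 \<le> Qc n cls q' \<or> Qc n cls q' + 100 \<le> Qc n cls q"
  unfolding Qc_def by auto

lemma ox_inj: assumes "q < length cls" "s < 3" "q' < length cls" "s' < 3" "(q, s) \<noteq> (q', s')"
    and t: "tv a cls q s = tv a cls q' s'"
  shows "oxc cls q s + 20 \<le> oxc cls q' s' \<or> oxc cls q' s' + 20 \<le> oxc cls q s"
proof (cases "fst (cls ! q ! s) = fst (cls ! q' ! s')")
  case True
  then have p: "snd (cls ! q ! s) = snd (cls ! q' ! s')" using t unfolding tv_lit by auto
  then have eq: "cls ! q ! s = cls ! q' ! s'" using True by (simp add: prod_eq_iff)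
  have "occ_num cls q s \<noteq> occ_num cls q' s'"
    using occ_num_inj[OF assms(1,3) _ _ eq assms(5)] len3 assms by auto
  then have "int (occ_num cls q s) + 1 \<le> int (occ_num cls q' s') \<or> int (occ_num cls q' s') + 1 \<le> int (occ_num cls q s)"
    by auto
  then show ?thesis unfolding oxc_def using True p by auto
next
  case False
  then have "fst (cls ! q ! s) < fst (cls ! q' ! s') \<or> fst (cls ! q' ! s') < fst (cls ! q ! s)" by auto
  then show ?thesis
    using band_sep[of "fst (cls ! q ! s)" "fst (cls ! q' ! s')"] band_sep[of "fst (cls ! q' ! s')" "fst (cls ! q ! s)"]
      ox_bounds[OF assms(1,2)] ox_bounds[OF assms(3,4)] by auto
qed

lemma sides: assumes "q < length cls" "s < 3" "s' < 3" "s \<noteq> s'" "tv a cls q s = tv a cls q s'"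
  shows "sec a cls q s \<noteq> sec a cls q s'"
proof -
  have l3: "length (cls ! q) = 3" using len3 assms(1) by auto
  have nt: "\<not> (tv a cls q 0 = tv a cls q 1 \<and> tv a cls q 1 = tv a cls q 2)"
  proof
    assume h: "tv a cls q 0 = tv a cls q 1 \<and> tv a cls q 1 = tv a cls q 2"
    have "set (cls ! q) = {cls ! q ! 0, cls ! q ! 1, cls ! q ! 2}"
      using l3 by (auto simp: set_conv_nth less_Suc_eq numeral_eq_Suc)
    moreover have "(\<exists>l\<in>set (cls ! q). lit_val a l) \<and> (\<exists>l\<in>set (cls ! q). \<not> lit_val a l)"
      using nae assms(1) by simp
    ultimately show False using h unfolding tv_def by (auto simp: numeral_eq_Suc)
  qed
  show ?thesis using assms(2-5) nt unfolding sec_def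
    by (auto simp: less_Suc_eq numeral_eq_Suc) 
qed

end

context inst begin

lemma chrect_simps: "chrect ox P Q 1 = (ox - 6, ox + 1, P - 5, P + 1)" "chrect ox P Q (Suc 0) = (ox - 6, ox + 1, P - 5, P + 1)"
  "chrect ox P Q 2 = (Q - 46, Q + 3, P - 6, P + 24)"
  by (auto simp: chrect_def relrect_def nodeX_def shR_def)

lemma ox_top: "q < length cls \<Longrightarrow> s < 3 \<Longrightarrow> oxc cls q s + 20 \<le> Vt n cls \<and> 0 \<le> oxc cls q s - 20"
  using ox_bounds[of q s] band_top[OF lit_var[of q s]] band_bot[of "fst (cls ! q ! s)"] by auto

lemma H3:
  assumes "valid n cls b" "valid n cls b'" "b \<noteq> b'"
  shows "\<not> ovl (rectOf n cls a b) (rectOf n cls a b')"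
proof (cases b)
  case (BV i)
  note bi = this
  show ?thesis
  proof (cases b')
    case (BV j)
    then have "i < j \<or> j < i" using assms bi by auto
    then show ?thesis using band_sep[of i j] band_sep[of j i] bi BV by (auto simp: ovl_def)
  next
    case (B1 q s) then show ?thesis using assms bi band_top[of i] P1_lo[of q s]
      by (auto simp: ovl_def chrect_simps)
  next
    case (B2 q s) then show ?thesis using assms bi band_top[of i] P1_lo[of q s] Q_lo[of q]
      by (auto simp: ovl_def chrect_simps)
  next
    case (BK q) then show ?thesis using assms bi band_top[of i] Q_lo[of q]
      by (auto simp: ovl_def)
  qed
next
  case (B1 q s)
  note bq = this
  have v: "q < length cls" "s < 3" using assms bq by auto
  show ?thesis
  proof (cases b')
    case (BV i) then show ?thesis using assms bq band_top[of i] P1_lo[of q s]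
      by (auto simp: ovl_def chrect_simps)
  next
    case (B1 q' s')
    then have v': "q' < length cls" "s' < 3" "(q, s) \<noteq> (q', s')" using assms bq by auto
    show ?thesis using B1 bq P1_inj[OF v(2) v'(2) v'(3)] ox_top[OF v] ox_top[OF v'(1,2)] P1_lo[of q s] P1_lo[of q' s']
      by (simp add: ovl_sw2 chrect_simps) (auto simp: ovl_def swR_def)
  next
    case (B2 q' s')
    then have v': "q' < length cls" "s' < 3" using assms bq by auto
    show ?thesis using B2 bq ox_top[OF v] P1_lo[of q s] P1_lo[of q' s'] Q_lo[of q']
      by (simp add: ovl_sw2 chrect_simps) (auto simp: ovl_def swR_def)
  next
    case (BK q')
    show ?thesis using BK bq ox_top[OF v] P1_lo[of q s] Q_lo[of q']
      by (cases "tv a cls q s") (auto simp: ovl_def chrect_simps swR_def)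
  qed
next
  case (B2 q s)
  note bq = this
  have v: "q < length cls" "s < 3" using assms bq by auto
  show ?thesis
  proof (cases b')
    case (BV i) then show ?thesis using assms bq band_top[of i] P1_lo[of q s]
      by (auto simp: ovl_def chrect_simps)
  next
    case (B1 q' s')
    then have v': "q' < length cls" "s' < 3" using assms bq by auto
    show ?thesis using B1 bq ox_top[OF v'] P1_lo[of q s] P1_lo[of q' s'] Q_lo[of q]
      by (simp add: ovl_sw2 chrect_simps) (auto simp: ovl_def swR_def)
  next
    case (B2 q' s')
    then have v': "q' < length cls" "s' < 3" "(q, s) \<noteq> (q', s')" using assms bq by auto
    show ?thesis using B2 bq P1_inj[OF v(2) v'(2) v'(3)] P1_Q[OF v(2), of q q'] P1_Q[OF v'(2), of q' q]
      by (simp add: ovl_sw2 chrect_simps) (auto simp: ovl_def swR_def)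
  next
    case (BK q')
    show ?thesis using BK bq P1_Q[OF v(2), of q q']
      by (cases "tv a cls q s") (auto simp: ovl_def chrect_simps swR_def)
  qed
next
  case (BK q)
  note bq = this
  show ?thesis
  proof (cases b')
    case (BV i) then show ?thesis using assms bq band_top[of i] Q_lo[of q]
      by (auto simp: ovl_def)
  next
    case (B1 q' s')
    then have v': "q' < length cls" "s' < 3" using assms bq by auto
    show ?thesis using B1 bq ox_top[OF v'] P1_lo[of q' s'] Q_lo[of q]
      by (cases "tv a cls q' s'") (auto simp: ovl_def chrect_simps swR_def)
  next
    case (B2 q' s')
    then have v': "q' < length cls" "s' < 3" using assms bq by auto
    show ?thesis using B2 bq P1_Q[OF v'(2), of q' q]
      by (cases "tv a cls q' s'") (auto simp: ovl_def chrect_simps swR_def)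
  next
    case (BK q')
    then show ?thesis using bq assms Q_inj[of q q'] by (auto simp: ovl_def)
  qed
qed

end

context inst begin

lemma sq_sym: "swR t (x1, x2, x1, x2) = (x1, x2, x1, x2)" by (auto simp: swR_def)

lemma rect_BV: "rectOf n cls a (BV j) = (Vc cls j - HH cls, Vc cls j + HH cls - 1, Vc cls j - HH cls, Vc cls j + HH cls - 1)"
  by simp

lemma corr0:
  assumes v: "q < length cls" "s < 3" and b: "valid n cls b" "b \<noteq> B1 q s" "b \<noteq> BV (fst (cls ! q ! s))"
  shows "\<not> ovl (swR (tv a cls q s) (oxc cls q s, oxc cls q s, Vc cls (fst (cls ! q ! s)) + 5 + int (occ_num cls q s), P1 n cls a q s - 5))
             (rectOf n cls a b)"
proof (cases b)
  case (BV j)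
  have i: "fst (cls ! q ! s) < n" using lit_var[OF v] .
  have j: "j < n" "j \<noteq> fst (cls ! q ! s)" using b BV by auto
  then have "j < fst (cls ! q ! s) \<or> fst (cls ! q ! s) < j" by auto
  then show ?thesis using BV band_sep[of j "fst (cls ! q ! s)"] band_sep[of "fst (cls ! q ! s)" j] ox_bounds[OF v]
    by (cases "tv a cls q s") (auto simp: ovl_def swR_def)
next
  case (B1 q' s')
  then have v': "q' < length cls" "s' < 3" "(q, s) \<noteq> (q', s')" using b by auto
  show ?thesis
  proof (cases "tv a cls q s = tv a cls q' s'")
    case True
    then show ?thesis using B1 ox_inj[OF v v'(1,2,3) True] by (simp add: ovl_sw2 chrect_simps) (auto simp: ovl_def)
  next
    case False
    then show ?thesis using B1 ox_top[OF v] P1_lo[of q' s'] by (simp add: ovl_sw2 chrect_simps) (auto simp: ovl_def swR_def)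
  qed
next
  case (B2 q' s')
  then show ?thesis using ox_top[OF v] P1_lo[of q' s'] Q_lo[of q']
    by (cases "tv a cls q s = tv a cls q' s'") (simp_all add: ovl_sw2 chrect_simps; auto simp: ovl_def swR_def)+
next
  case (BK q')
  then show ?thesis using ox_top[OF v] Q_lo[of q']
    by (cases "tv a cls q s") (auto simp: ovl_def swR_def)
qed

lemma corr1:
  assumes v: "q < length cls" "s < 3" and b: "valid n cls b" "b \<noteq> B1 q s" "b \<noteq> B2 q s"
  shows "\<not> ovl (swR (tv a cls q s) (oxc cls q s + 1, Qc n cls q - 45, P1 n cls a q s, P1 n cls a q s))
             (rectOf n cls a b)"
proof (cases b)
  case (BV j)
  then show ?thesis using b band_top[of j] P1_lo[of q s]
    by (cases "tv a cls q s") (auto simp: ovl_def swR_def)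
next
  case (B1 q' s')
  then have v': "q' < length cls" "s' < 3" "(q, s) \<noteq> (q', s')" using b by auto
  show ?thesis using B1 P1_inj[OF v(2) v'(2,3)] ox_top[OF v'(1,2)] P1_lo[of q s]
    by (cases "tv a cls q s = tv a cls q' s'") (simp_all add: ovl_sw2 chrect_simps; auto simp: ovl_def swR_def)+
next
  case (B2 q' s')
  then have v': "q' < length cls" "s' < 3" "(q, s) \<noteq> (q', s')" using b by auto
  show ?thesis using B2 P1_inj[OF v(2) v'(2,3)] P1_Q[OF v(2), of q q']
    by (cases "tv a cls q s = tv a cls q' s'") (simp_all add: ovl_sw2 chrect_simps; auto simp: ovl_def swR_def)+
next
  case (BK q')
  then show ?thesis using P1_Q[OF v(2), of q q']
    by (cases "tv a cls q s") (auto simp: ovl_def swR_def)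
qed

lemma corr4:
  assumes v: "q < length cls" "s < 3" and b: "valid n cls b" "b \<noteq> B2 q s" "b \<noteq> BK q"
  shows "\<not> ovl (swR (tv a cls q s) (if \<not> sec a cls q s then (Qc n cls q, Qc n cls q, P1 n cls a q s + 22, Qc n cls q)
                                     else (Qc n cls q, Qc n cls q, Qc n cls q, P1 n cls a q s + 18)))
             (rectOf n cls a b)"
proof (cases b)
  case (BV j)
  then show ?thesis using b band_top[of j] Q_lo[of q]
    by (cases "tv a cls q s") (auto simp: ovl_def swR_def)
next
  case (B1 q' s')
  then have v': "q' < length cls" "s' < 3" using b by auto
  show ?thesis using B1 ox_top[OF v'] Q_lo[of q] P1_Q[OF v'(2), of q' q] sec_slot[OF v(2), of q]
    by (cases "tv a cls q s = tv a cls q' s'") (simp_all add: ovl_sw2 chrect_simps; auto simp: ovl_def swR_def)+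
next
  case (B2 q' s')
  then have v': "q' < length cls" "s' < 3" "(q, s) \<noteq> (q', s')" using b by auto
  show ?thesis
  proof (cases "tv a cls q s = tv a cls q' s'")
    case False
    then show ?thesis using B2 P1_Q[OF v'(2), of q' q] sec_slot[OF v(2), of q]
      by (simp add: ovl_sw2 chrect_simps) (auto simp: ovl_def swR_def)
  next
    case True
    show ?thesis
    proof (cases "q = q'")
      case False
      then show ?thesis using B2 True Q_inj[of q q'] sec_slot[OF v(2), of q]
        by (simp add: ovl_sw2 chrect_simps) (auto simp: ovl_def)
    next
      case qq: True
      then have ss: "s \<noteq> s'" using v' by auto
      have "sec a cls q s \<noteq> sec a cls q s'" using sides[OF v(1,2) v'(2) ss] True qq by auto
      then show ?thesis using B2 True qq sec_slot[OF v(2), of q] sec_slot[OF v'(2), of q]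
        by (simp add: ovl_sw2 chrect_simps) (auto simp: ovl_def)
    qed
  qed
next
  case (BK q')
  then have "q \<noteq> q'" using b by auto
  then show ?thesis using BK Q_inj[of q q'] sec_slot[OF v(2), of q]
    by (cases "tv a cls q s") (auto simp: ovl_def swR_def)
qed

end

context inst begin

abbreviation "EE \<equiv> nae_bus_edges n cls"
abbreviation "hh \<equiv> hG n cls a"
abbreviation "bb \<equiv> bG n cls a"
abbreviation "cc \<equiv> cG n cls a"
abbreviation "rr \<equiv> rectOf n cls a"

lemma swP_inv: "swP t (swP t p) = p" by (auto simp: swP_def)

lemma chbox12: "chbox b = 1 \<or> chbox b = 2" by (cases b) (auto simp: chbox_def)
lemma chcbox12: "chcbox c = 1 \<or> chcbox c = 2" by (cases c) (auto simp: chcbox_def)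

lemma chain_ok: "(b, c) \<in> chain_edges \<Longrightarrow> chBok b \<and> chCok c"
  using chain_edges_sub unfolding chlist_eq by (auto simp: chBok_def chCok_def)

lemma chain_cross: "(b, c) \<in> chain_edges \<Longrightarrow> chbox b \<noteq> chcbox c \<Longrightarrow> b = CB 2 PB \<and> c = Co 1"
  using chain_edges_sub unfolding chlist_eq by (auto simp: box_simps)

lemma Bs_cases: "B \<in> fst ` EE \<Longrightarrow> (\<exists>i b. i < n \<and> B = VarB i b) \<or> (\<exists>q s b. q < length cls \<and> s < 3 \<and> chBok b \<and> B = ChB q s b)"
proof -
  assume "B \<in> fst ` EE"
  then obtain c where e: "(B, c) \<in> EE" by force
  show ?thesis using E_cases[OF e]
  proof (elim disjE exE conjE)
    fix i b c0 assume "i < n" "(b, c0) \<in> vbox_edges (kk cls i True) (kk cls i False)" "B = VarB i b" "c = VarC i c0"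
    then show ?thesis by blast
  next
    fix q s b c0 assume "q < length cls" "s < 3" "(b, c0) \<in> chain_edges" "B = ChB q s b" "c = ChC q s c0"
    then show ?thesis using chain_ok by blast
  next
    fix q s assume "q < length cls" "s < 3" "B = ChB q s (CB 4 PB)" "c = ClC q" then show ?thesis by (auto simp: chBok_def)
  next
    fix q s assume v: "q < length cls" "s < 3" "B = ChB q s (CB 1 PB)"
      "c = VarC (fst (cls ! q ! s)) (Vo (snd (cls ! q ! s)) (occ_num cls q s))"
    then show ?thesis by (auto simp: chBok_def)
  qed
qed

lemma Cs_cases: "c \<in> snd ` EE \<Longrightarrow> (\<exists>i c0. i < n \<and> vcok (kk cls i True) (kk cls i False) c0 \<and> c = VarC i c0) \<or>
   (\<exists>q s c0. q < length cls \<and> s < 3 \<and> chCok c0 \<and> c = ChC q s c0) \<or> (\<exists>q. q < length cls \<and> c = ClC q)"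
proof -
  assume "c \<in> snd ` EE"
  then obtain B where e: "(B, c) \<in> EE" by force
  show ?thesis using E_cases[OF e]
  proof (elim disjE exE conjE)
    fix i b c0 assume "i < n" "(b, c0) \<in> vbox_edges (kk cls i True) (kk cls i False)" "B = VarB i b" "c = VarC i c0"
    then show ?thesis using vb_edges[OF HH_ge] by blast
  next
    fix q s b c0 assume "q < length cls" "s < 3" "(b, c0) \<in> chain_edges" "B = ChB q s b" "c = ChC q s c0"
    then show ?thesis using chain_ok by blast
  next
    fix q s assume "q < length cls" "s < 3" "B = ChB q s (CB 4 PB)" "c = ClC q" then show ?thesis by blast
  next
    fix q s assume v: "q < length cls" "s < 3" "B = ChB q s (CB 1 PB)"
      "c = VarC (fst (cls ! q ! s)) (Vo (snd (cls ! q ! s)) (occ_num cls q s))"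
    obtain i p where ip: "cls ! q ! s = (i, p)" by fastforce
    have "1 \<le> occ_num cls q s \<and> occ_num cls q s \<le> kk cls i p" using occ_r[OF v(1,2)] ip by simp
    then have "vcok (kk cls i True) (kk cls i False) (Vo p (occ_num cls q s))" by (cases p) (auto simp: vcok_def)
    then show ?thesis using v lit_var[OF v(1,2)] ip by auto
  qed
qed

lemma rect_BV_sw: "rr (BV i) = swR t (shR (Vc cls i) (Vc cls i) (- HH cls, HH cls - 1, - HH cls, HH cls - 1))"
  by (auto simp: swR_def shR_def)

lemma rect_ch: "k = chbox b \<Longrightarrow> rr (if k = 1 then B1 q s else B2 q s) =
    swR (tv a cls q s) (shR (nodeX (oxc cls q s) (Qc n cls q) k) (P1 n cls a q s) (relrect k))"
  using chbox12[of b] by (auto simp: chrect_def)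

lemma rect_chc: "k = chcbox c \<Longrightarrow> rr (if k = 1 then B1 q s else B2 q s) =
    swR (tv a cls q s) (shR (nodeX (oxc cls q s) (Qc n cls q) k) (P1 n cls a q s) (relrect k))"
  using chcbox12[of c] by (auto simp: chrect_def)

lemma bG_ch: "bb (ChB q s b) = swR (tv a cls q s) (shR (nodeX (oxc cls q s) (Qc n cls q) (chbox b)) (P1 n cls a q s)
     (snd (relB (\<not> sec a cls q s) b)))"
  by (simp add: chG_def chFB_def)
lemma hG_ch: "hh (ChB q s b) = (fst (relB (\<not> sec a cls q s) b) = tv a cls q s)"
  by (simp add: chG_def chFB_def)
lemma cG_ch: "cc (ChC q s c) = swP (tv a cls q s) (shP (nodeX (oxc cls q s) (Qc n cls q) (chcbox c)) (P1 n cls a q s)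
     (relC (\<not> sec a cls q s) c))"
  by (simp add: chGC_def chFC_def)

lemma H1: "\<forall>B\<in>fst ` EE. valid n cls (boxB B) \<and> ins (bb B) (rr (boxB B))"
proof
  fix B assume "B \<in> fst ` EE"
  from Bs_cases[OF this] show "valid n cls (boxB B) \<and> ins (bb B) (rr (boxB B))"
  proof (elim disjE exE conjE)
    fix i b assume v: "i < n" "B = VarB i b"
    have l: "ins (snd (vbG cls i b)) (- HH cls, HH cls - 1, - HH cls, HH cls - 1)"
      using vb_objs(1)[OF HH_ge, of i] unfolding vbG_def by blast
    have "ins (bb (VarB i b)) (rr (BV i))"
      unfolding rect_BV_sw[of i "a i"] bG.simps ins_sw ins_sh by (rule l)
    then show ?thesis using v by simp
  next
    fix q s b assume v: "q < length cls" "s < 3" "chBok b" "B = ChB q s b"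
    have l: "ins (snd (relB (\<not> sec a cls q s) b)) (relrect (chbox b))"
      using rel_objs(1)[of "\<not> sec a cls q s"] v(3) by blast
    have "ins (bb (ChB q s b)) (rr (if chbox b = 1 then B1 q s else B2 q s))"
      unfolding rect_ch[OF refl, of b q s] bG_ch ins_sw ins_sh by (rule l)
    then show ?thesis using v by simp
  qed
qed

end

context inst begin

lemma orient_sw: "(if (h = t) then ry1 (swR t X) = ry2 (swR t X) else rx1 (swR t X) = rx2 (swR t X)) =
                  (if h then ry1 X = ry2 X else rx1 X = rx2 X)"
  by (cases t; cases h) auto
lemma orient_sh: "(if h then ry1 (shR d e X) = ry2 (shR d e X) else rx1 (shR d e X) = rx2 (shR d e X)) =
                  (if h then ry1 X = ry2 X else rx1 X = rx2 X)"
  by (cases h) auto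

lemma attach_sw: "(if (h = t) then rx1 (swR t X) \<le> fst (swP t p) \<and> fst (swP t p) \<le> rx2 (swR t X)
                    else ry1 (swR t X) \<le> snd (swP t p) \<and> snd (swP t p) \<le> ry2 (swR t X)) =
                  (if h then rx1 X \<le> fst p \<and> fst p \<le> rx2 X else ry1 X \<le> snd p \<and> snd p \<le> ry2 X)"
  by (cases t; cases h) auto
lemma attach_sh: "(if h then rx1 (shR d e X) \<le> fst (shP d e p) \<and> fst (shP d e p) \<le> rx2 (shR d e X)
                    else ry1 (shR d e X) \<le> snd (shP d e p) \<and> snd (shP d e p) \<le> ry2 (shR d e X)) =
                  (if h then rx1 X \<le> fst p \<and> fst p \<le> rx2 X else ry1 X \<le> snd p \<and> snd p \<le> ry2 X)"
  by (cases h) auto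

lemma H2: "\<forall>c\<in>snd ` EE. valid n cls (boxC c) \<and> inr (cc c) (rr (boxC c))"
proof
  fix c assume "c \<in> snd ` EE"
  from Cs_cases[OF this] show "valid n cls (boxC c) \<and> inr (cc c) (rr (boxC c))"
  proof (elim disjE exE conjE)
    fix i c0 assume v: "i < n" "vcok (kk cls i True) (kk cls i False) c0" "c = VarC i c0"
    have l: "inr (vbGC cls i c0) (- HH cls, HH cls - 1, - HH cls, HH cls - 1)"
      using vb_objs(2)[OF HH_ge, of i] v(2) unfolding vbGC_def by blast
    have "inr (cc (VarC i c0)) (rr (BV i))"
      unfolding rect_BV_sw[of i "a i"] cG.simps inr_sw inr_sh by (rule l)
    then show ?thesis using v by simp
  next
    fix q s c0 assume v: "q < length cls" "s < 3" "chCok c0" "c = ChC q s c0"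
    have l: "inr (relC (\<not> sec a cls q s) c0) (relrect (chcbox c0))"
      using rel_objs(2)[of "\<not> sec a cls q s"] v(3) by blast
    have "inr (cc (ChC q s c0)) (rr (if chcbox c0 = 1 then B1 q s else B2 q s))"
      unfolding rect_chc[OF refl, of c0 q s] cG_ch inr_sw inr_sh by (rule l)
    then show ?thesis using v by simp
  next
    fix q assume "q < length cls" "c = ClC q" then show ?thesis by (simp add: inr_def)
  qed
qed

lemma W: "\<forall>B\<in>fst ` EE. wfr (bb B) \<and> (if hh B then ry1 (bb B) = ry2 (bb B) else rx1 (bb B) = rx2 (bb B))"
proof
  fix B assume "B \<in> fst ` EE"
  from Bs_cases[OF this] show "wfr (bb B) \<and> (if hh B then ry1 (bb B) = ry2 (bb B) else rx1 (bb B) = rx2 (bb B))"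
  proof (elim disjE exE conjE)
    fix i b assume v: "i < n" "B = VarB i b"
    have l: "wfr (snd (vbG cls i b)) \<and> (if fst (vbG cls i b) then ry1 (snd (vbG cls i b)) = ry2 (snd (vbG cls i b))
                else rx1 (snd (vbG cls i b)) = rx2 (snd (vbG cls i b)))"
      using vb_objs(1)[OF HH_ge, of i] unfolding vbG_def by blast
    show ?thesis unfolding v bG.simps hG.simps wfr_sw wfr_sh orient_sw orient_sh by (rule l)
  next
    fix q s b assume v: "q < length cls" "s < 3" "chBok b" "B = ChB q s b"
    have l: "wfr (snd (relB (\<not> sec a cls q s) b)) \<and> (if fst (relB (\<not> sec a cls q s) b) then ry1 (snd (relB (\<not> sec a cls q s) b)) = ry2 (snd (relB (\<not> sec a cls q s) b))
                else rx1 (snd (relB (\<not> sec a cls q s) b)) = rx2 (snd (relB (\<not> sec a cls q s) b)))"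
      using rel_objs(1)[of "\<not> sec a cls q s"] v(3) by blast
    show ?thesis unfolding v bG_ch hG_ch wfr_sw wfr_sh orient_sw orient_sh by (rule l)
  qed
qed

lemma GE_int: "chbox b = chcbox c \<Longrightarrow> eRect (hh (ChB q s b)) (bb (ChB q s b)) (cc (ChC q s c)) =
   swR (tv a cls q s) (shR (nodeX (oxc cls q s) (Qc n cls q) (chbox b)) (P1 n cls a q s)
     (eRect (fst (relB (\<not> sec a cls q s) b)) (snd (relB (\<not> sec a cls q s) b)) (relC (\<not> sec a cls q s) c)))"
  unfolding hG_ch bG_ch cG_ch eRect_sw by (simp add: eRect_sh)

lemma GE_vb: "eRect (hh (VarB i b)) (bb (VarB i b)) (cc (VarC i c)) =
   swR (a i) (shR (Vc cls i) (Vc cls i) (eRect (fst (vbG cls i b)) (snd (vbG cls i b)) (vbGC cls i c)))"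
  unfolding hG.simps bG.simps cG.simps eRect_sw by (simp add: eRect_sh)

lemma rgood_ch: "(b, c) \<in> chain_edges \<Longrightarrow> chbox b = chcbox c \<Longrightarrow> rgood up b c"
  using rgood_all chain_edges_sub by blast

lemma vgood_i: "i < n \<Longrightarrow> (b, c) \<in> vbox_edges (kk cls i True) (kk cls i False) \<Longrightarrow>
   vgood (kk cls i True) (kk cls i False) (HH cls) b c"
  using vb_edges[OF HH_ge] by blast

lemma H4: "\<forall>(B, c)\<in>EE. boxB B = boxC c \<longrightarrow> ins (eRect (hh B) (bb B) (cc c)) (rr (boxB B))"
proof (intro ballI, clarify)
  fix B c assume e: "(B, c) \<in> EE" and bx: "boxB B = boxC c"
  show "ins (eRect (hh B) (bb B) (cc c)) (rr (boxB B))" using E_cases[OF e]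
  proof (elim disjE exE conjE)
    fix i b c0 assume v: "i < n" "(b, c0) \<in> vbox_edges (kk cls i True) (kk cls i False)" "B = VarB i b" "c = VarC i c0"
    have "ins (eRect (fst (vbG cls i b)) (snd (vbG cls i b)) (vbGC cls i c0)) (- HH cls, HH cls - 1, - HH cls, HH cls - 1)"
      using vgood_i[OF v(1,2)] unfolding vgood_def Let_def vbG_def vbGC_def by blast
    then show ?thesis unfolding v boxB.simps GE_vb rect_BV_sw[of i "a i"] ins_sw ins_sh .
  next
    fix q s b c0 assume v: "q < length cls" "s < 3" "(b, c0) \<in> chain_edges" "B = ChB q s b" "c = ChC q s c0"
    have bc: "chbox b = chcbox c0" using bx v chbox12[of b] chcbox12[of c0] by (auto split: if_splits)
    have "ins (eRect (fst (relB (\<not> sec a cls q s) b)) (snd (relB (\<not> sec a cls q s) b)) (relC (\<not> sec a cls q s) c0)) (relrect (chbox b))"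
      using rgood_ch[OF v(3) bc] unfolding rgood_def Let_def by blast
    then show ?thesis unfolding v boxB.simps GE_int[OF bc] rect_ch[OF refl, of b q s] ins_sw ins_sh .
  next
    fix q s assume "B = ChB q s (CB 4 PB)" "c = ClC q" then show ?thesis using bx by (simp add: box_simps)
  next
    fix q s assume "B = ChB q s (CB 1 PB)" "c = VarC (fst (cls ! q ! s)) (Vo (snd (cls ! q ! s)) (occ_num cls q s))"
    then show ?thesis using bx by (simp add: box_simps)
  qed
qed

end

context inst begin

lemma tp: "(tv a cls q s = a (fst (cls ! q ! s))) = snd (cls ! q ! s)"
  unfolding tv_lit by auto

abbreviation "oyc q s \<equiv> Vc cls (fst (cls ! q ! s)) + 5 + int (occ_num cls q s)"
abbreviation "ocn q s \<equiv> VarC (fst (cls ! q ! s)) (Vo (snd (cls ! q ! s)) (occ_num cls q s))"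

lemma cc_o: "q < length cls \<Longrightarrow> s < 3 \<Longrightarrow> cc (ocn q s) = swP (tv a cls q s) (oxc cls q s, oyc q s)"
  using frame_o[of q s] swP_inv by metis

lemma oy_lt: assumes "q < length cls" "s < 3" shows "oyc q s + 10 < P1 n cls a q s"
  using ox_bounds[OF assms] band_top[OF lit_var[OF assms]] P1_lo[of q s] by auto

lemma L0g: assumes v: "q < length cls" "s < 3"
  shows "eRect (hh (ChB q s (CB 1 PB))) (bb (ChB q s (CB 1 PB))) (cc (ocn q s)) =
         swR (tv a cls q s) (oxc cls q s, oxc cls q s, oyc q s, P1 n cls a q s - 5)"
proof -
  have l: "eRect (fst (chG n cls a q s (CB 1 PB))) (snd (chG n cls a q s (CB 1 PB))) (oxc cls q s, oyc q s) =
           (oxc cls q s, oxc cls q s, oyc q s, P1 n cls a q s - 5)"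
    using L0_local[OF oy_lt[OF v], where ox="oxc cls q s" and Q="Qc n cls q" and up="\<not> sec a cls q s"] unfolding chG_def Let_def by blast
  show ?thesis unfolding hG.simps bG.simps cc_o[OF v] eRect_sw l ..
qed

lemma L1g: assumes v: "q < length cls" "s < 3"
  shows "eRect (hh (ChB q s (CB 2 PB))) (bb (ChB q s (CB 2 PB))) (cc (ChC q s (Co 1))) =
         swR (tv a cls q s) (oxc cls q s + 1, Qc n cls q - 45, P1 n cls a q s, P1 n cls a q s)"
proof -
  have "oxc cls q s + 100 < Qc n cls q" using ox_top[OF v] Q_lo[of q] by auto
  then have l: "eRect (fst (chG n cls a q s (CB 2 PB))) (snd (chG n cls a q s (CB 2 PB))) (chGC n cls a q s (Co 1)) =
           (oxc cls q s + 1, Qc n cls q - 45, P1 n cls a q s, P1 n cls a q s)"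
    by (simp add: chG_def chGC_def fdefs min_def max_def)
  show ?thesis unfolding hG.simps bG.simps cG.simps eRect_sw l ..
qed

lemma up_facts: assumes "s < 3" shows "(\<not> sec a cls q s) \<Longrightarrow> P1 n cls a q s + 30 < Qc n cls q"
  "\<not> (\<not> sec a cls q s) \<Longrightarrow> Qc n cls q + 30 < P1 n cls a q s"
  using sec_slot[OF assms, of q] by auto

lemma L4g: assumes v: "q < length cls" "s < 3"
  shows "eRect (hh (ChB q s (CB 4 PB))) (bb (ChB q s (CB 4 PB))) (cc (ClC q)) =
         swR (tv a cls q s) (if \<not> sec a cls q s then (Qc n cls q, Qc n cls q, P1 n cls a q s + 22, Qc n cls q)
                                     else (Qc n cls q, Qc n cls q, Qc n cls q, P1 n cls a q s + 18))"
proof -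
  have l: "eRect (fst (chG n cls a q s (CB 4 PB))) (snd (chG n cls a q s (CB 4 PB))) (Qc n cls q, Qc n cls q) =
     (if \<not> sec a cls q s then (Qc n cls q, Qc n cls q, P1 n cls a q s + 22, Qc n cls q)
                                     else (Qc n cls q, Qc n cls q, Qc n cls q, P1 n cls a q s + 18))"
    using L4_local[OF up_facts[OF v(2)], where ox="oxc cls q s"] unfolding chG_def Let_def by blast
  have c: "cc (ClC q) = swP (tv a cls q s) (Qc n cls q, Qc n cls q)" by (simp add: swP_def)
  show ?thesis unfolding hG.simps bG.simps c eRect_sw l ..
qed

lemma H5':
  assumes e: "(B, c) \<in> EE" and bx: "boxB B \<noteq> boxC c" and b: "valid n cls b" "b \<noteq> boxB B" "b \<noteq> boxC c"
  shows "\<not> ovl (eRect (hh B) (bb B) (cc c)) (rr b)"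
  using E_cases[OF e]
  proof (elim disjE exE conjE)
    fix i b0 c0 assume "i < n" "(b0, c0) \<in> vbox_edges (kk cls i True) (kk cls i False)" "B = VarB i b0" "c = VarC i c0"
    then show ?thesis using bx by simp
  next
    fix q s b0 c0 assume v: "q < length cls" "s < 3" "(b0, c0) \<in> chain_edges" "B = ChB q s b0" "c = ChC q s c0"
    have "chbox b0 \<noteq> chcbox c0" using bx v by (auto split: if_splits)
    then have bc: "b0 = CB 2 PB" "c0 = Co 1" using chain_cross v(3) by auto
    show ?thesis unfolding v(4,5) bc L1g[OF v(1,2)]
      by (rule corr1[OF v(1,2) b(1)]) (use b v bc in \<open>auto simp: box_simps\<close>)
  next
    fix q s assume v: "q < length cls" "s < 3" "B = ChB q s (CB 4 PB)" "c = ClC q"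
    show ?thesis unfolding v(3,4) L4g[OF v(1,2)]
      by (rule corr4[OF v(1,2) b(1)]) (use b v in \<open>auto simp: box_simps\<close>)
  next
    fix q s assume v: "q < length cls" "s < 3" "B = ChB q s (CB 1 PB)" "c = ocn q s"
    show ?thesis unfolding v(3,4) L0g[OF v(1,2)]
      by (rule corr0[OF v(1,2) b(1)]) (use b v in \<open>auto simp: box_simps\<close>)
  qed

lemma H5: "\<forall>(B, c)\<in>EE. boxB B \<noteq> boxC c \<longrightarrow> (\<forall>b. valid n cls b \<longrightarrow> b \<noteq> boxB B \<longrightarrow> b \<noteq> boxC c \<longrightarrow>
                 \<not> ovl (eRect (hh B) (bb B) (cc c)) (rr b))"
  using H5' by blast

end

context inst begin

lemma B'_cases:
  assumes "B' \<in> fst ` EE"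
  obtains (V) i b' where "i < n" "B' = VarB i b'" | (C) q s b' where "q < length cls" "s < 3" "chBok b'" "B' = ChB q s b'"
  using Bs_cases[OF assms] by blast

lemma C'_cases:
  assumes "c' \<in> snd ` EE"
  obtains (V) i c0 where "i < n" "vcok (kk cls i True) (kk cls i False) c0" "c' = VarC i c0"
  | (C) q s c0 where "q < length cls" "s < 3" "chCok c0" "c' = ChC q s c0"
  | (K) q where "q < length cls" "c' = ClC q"
  using Cs_cases[OF assms] by blast

lemma vbcorr_glob:
  assumes v: "q < length cls" "s < 3"
  shows "\<not> ovl (swR (tv a cls q s) (oxc cls q s, oxc cls q s, oyc q s, P1 n cls a q s - 5)) (bb (VarB (fst (cls ! q ! s)) b'))"
    "vcok (kk cls (fst (cls ! q ! s)) True) (kk cls (fst (cls ! q ! s)) False) c0 \<Longrightarrow> c0 \<noteq> Vo (snd (cls ! q ! s)) (occ_num cls q s) \<Longrightarrow>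
     \<not> inr (cc (VarC (fst (cls ! q ! s)) c0)) (swR (tv a cls q s) (oxc cls q s, oxc cls q s, oyc q s, P1 n cls a q s - 5))"
proof -
  define i where "i = fst (cls ! q ! s)"
  define p where "p = snd (cls ! q ! s)"
  define r where "r = occ_num cls q s"
  define V where "V = Vc cls i"
  define k1 where "k1 = kk cls i True"
  define k2 where "k2 = kk cls i False"
  have tp': "(tv a cls q s = a i) = p" using tp unfolding i_def p_def .
  have rr: "1 \<le> r" "r \<le> (if p then k1 else k2)"
    using occ_r[OF v] unfolding r_def k1_def k2_def i_def p_def by (auto split: if_splits)
  have hh: "100 * (int k1 + int k2) + 300 \<le> HH cls" using HH_ge unfolding k1_def k2_def .
  have Y: "HH cls \<le> P1 n cls a q s - 5 - V"
    using band_top[OF lit_var[OF v]] P1_lo[of q s] unfolding V_def i_def by auto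
  have o: "(oxc cls q s, oyc q s) = shP V V (swP p (vbLC k1 k2 (Vo p r)))"
  proof -
    have "(oxc cls q s, oyc q s) = swP (tv a cls q s) (cc (ocn q s))" using frame_o[OF v] by simp
    also have "\<dots> = shP V V (swP p (vbLC k1 k2 (Vo p r)))"
      unfolding cG.simps swP_swP swP_shP vbGC_def i_def[symmetric] p_def[symmetric] r_def[symmetric] tp'
        V_def k1_def k2_def ..
    finally show ?thesis .
  qed
  have X: "(oxc cls q s, oxc cls q s, oyc q s, P1 n cls a q s - 5) =
       shR V V (fst (swP p (vbLC k1 k2 (Vo p r))), fst (swP p (vbLC k1 k2 (Vo p r))), snd (swP p (vbLC k1 k2 (Vo p r))), P1 n cls a q s - 5 - V)"
    using o by (auto simp: shR_def shP_def prod_eq_iff)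
  note C = vb_corr[OF hh Y rr(1) rr(2)]
  let ?X1 = "(fst (swP p (vbLC k1 k2 (Vo p r))), fst (swP p (vbLC k1 k2 (Vo p r))), snd (swP p (vbLC k1 k2 (Vo p r))), P1 n cls a q s - 5 - V)"
  have bbv: "bb (VarB (fst (cls ! q ! s)) b') = swR (a i) (shR V V (snd (vbL k1 k2 b')))"
    by (simp add: vbG_def V_def k1_def k2_def i_def)
  have "ovl (swR (tv a cls q s) (oxc cls q s, oxc cls q s, oyc q s, P1 n cls a q s - 5)) (bb (VarB (fst (cls ! q ! s)) b'))
      = ovl (shR V V ?X1) (swR p (shR V V (snd (vbL k1 k2 b'))))"
    unfolding bbv ovl_sw2 tp' X ..
  also have "\<dots> = ovl ?X1 (swR p (snd (vbL k1 k2 b')))" unfolding swR_shR ovl_sh ..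
  finally show "\<not> ovl (swR (tv a cls q s) (oxc cls q s, oxc cls q s, oyc q s, P1 n cls a q s - 5)) (bb (VarB (fst (cls ! q ! s)) b'))"
    using C(1) by blast
  assume c0: "vcok (kk cls (fst (cls ! q ! s)) True) (kk cls (fst (cls ! q ! s)) False) c0"
    "c0 \<noteq> Vo (snd (cls ! q ! s)) (occ_num cls q s)"
  have ccv: "cc (VarC (fst (cls ! q ! s)) c0) = swP (a i) (shP V V (vbLC k1 k2 c0))"
    by (simp add: vbGC_def V_def k1_def k2_def i_def)
  have "inr (cc (VarC (fst (cls ! q ! s)) c0)) (swR (tv a cls q s) (oxc cls q s, oxc cls q s, oyc q s, P1 n cls a q s - 5))
      = inr (swP p (shP V V (vbLC k1 k2 c0))) (shR V V ?X1)"
    unfolding ccv inr_sw2 tp' X ..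
  also have "\<dots> = inr (swP p (vbLC k1 k2 c0)) ?X1" unfolding swP_shP inr_sh ..
  finally show "\<not> inr (cc (VarC (fst (cls ! q ! s)) c0)) (swR (tv a cls q s) (oxc cls q s, oxc cls q s, oyc q s, P1 n cls a q s - 5))"
    using C(2) c0 unfolding i_def[symmetric] p_def[symmetric] r_def[symmetric] k1_def[symmetric] k2_def[symmetric] by blast
qed

end

context inst begin

lemma bb_chG: "bb (ChB q s b) = swR (tv a cls q s) (snd (chG n cls a q s b))" by simp
lemma cc_chG: "cc (ChC q s c) = swP (tv a cls q s) (chGC n cls a q s c)" by simp
lemma eR_chG: "eRect (hh (ChB q s b)) (bb (ChB q s b)) (swP (tv a cls q s) p) =
   swR (tv a cls q s) (eRect (fst (chG n cls a q s b)) (snd (chG n cls a q s b)) p)"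
  unfolding hG.simps bG.simps eRect_sw ..
lemma cc_K: "cc (ClC q) = swP t (Qc n cls q, Qc n cls q)" by (simp add: swP_def)

lemma H6':
  assumes e: "(B, c) \<in> EE" and B': "B' \<in> fst ` EE" "B' \<noteq> B" and bx: "boxB B' = boxB B \<or> boxB B' = boxC c"
  shows "\<not> ovl (eRect (hh B) (bb B) (cc c)) (bb B')"
  using E_cases[OF e]
proof (elim disjE exE conjE)
  fix i b0 c0 assume v: "i < n" "(b0, c0) \<in> vbox_edges (kk cls i True) (kk cls i False)" "B = VarB i b0" "c = VarC i c0"
  from B'(1) show ?thesis
  proof (cases rule: B'_cases)
    case (V j b')
    have ji: "j = i" using bx v V by simp
    have nb: "b' \<noteq> b0" using B'(2) v V ji by simp
    have "\<forall>b'. b' \<noteq> b0 \<longrightarrow> \<not> ovl (eRect (fst (vbG cls i b0)) (snd (vbG cls i b0)) (vbGC cls i c0)) (snd (vbG cls i b'))"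
      using vgood_i[OF v(1,2)] unfolding vgood_def Let_def vbG_def vbGC_def by blast
    then have "\<not> ovl (eRect (fst (vbG cls i b0)) (snd (vbG cls i b0)) (vbGC cls i c0)) (snd (vbG cls i b'))"
      using nb by blast
    then show ?thesis unfolding v(3,4) V(2) ji GE_vb unfolding bG.simps ovl_sw ovl_sh .
  next
    case (C q s b') then show ?thesis using bx v by (simp split: if_splits)
  qed
next
  fix q s b0 c0 assume v: "q < length cls" "s < 3" "(b0, c0) \<in> chain_edges" "B = ChB q s b0" "c = ChC q s c0"
  from B'(1) show ?thesis
  proof (cases rule: B'_cases)
    case (V j b') then show ?thesis using bx v by (simp split: if_splits)
  next
    case (C q' s' b')
    have qs: "q' = q" "s' = s" using bx v C by (simp_all split: if_splits)
    show ?thesis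
    proof (cases "chbox b0 = chcbox c0")
      case True
      have bb': "chbox b' = chbox b0" using bx v C qs True chbox12[of b'] chbox12[of b0] by (auto split: if_splits)
      have nb: "b' \<noteq> b0" using B'(2) v C qs by simp
      have "\<forall>b'. chBok b' \<longrightarrow> b' \<noteq> b0 \<longrightarrow> chbox b' = chbox b0 \<longrightarrow>
          \<not> ovl (eRect (fst (relB (\<not> sec a cls q s) b0)) (snd (relB (\<not> sec a cls q s) b0)) (relC (\<not> sec a cls q s) c0))
                (snd (relB (\<not> sec a cls q s) b'))"
        using rgood_ch[OF v(3) True] unfolding rgood_def Let_def by blast
      then have "\<not> ovl (eRect (fst (relB (\<not> sec a cls q s) b0)) (snd (relB (\<not> sec a cls q s) b0)) (relC (\<not> sec a cls q s) c0))
                (snd (relB (\<not> sec a cls q s) b'))" using C(3) nb bb' by blast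
      then show ?thesis unfolding v(4,5) C(4) qs GE_int[OF True] unfolding bG_ch bb' ovl_sw ovl_sh .
    next
      case False
      then have bc: "b0 = CB 2 PB" "c0 = Co 1" using chain_cross v(3) by auto
      have "oxc cls q s + 100 < Qc n cls q" using ox_top[OF v(1,2)] Q_lo[of q] by auto
      from L1_local[OF this, of "P1 n cls a q s" "\<not> sec a cls q s"]
      have "\<forall>b'. chBok b' \<longrightarrow> b' \<noteq> CB 2 PB \<longrightarrow> \<not> ovl (eRect (fst (chG n cls a q s (CB 2 PB))) (snd (chG n cls a q s (CB 2 PB))) (chGC n cls a q s (Co 1)))
           (snd (chG n cls a q s b'))"
        unfolding Let_def chG_def chGC_def by blast
      moreover have "b' \<noteq> CB 2 PB" using B'(2) v C qs bc by simp
      ultimately have "\<not> ovl (eRect (fst (chG n cls a q s (CB 2 PB))) (snd (chG n cls a q s (CB 2 PB))) (chGC n cls a q s (Co 1)))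
           (snd (chG n cls a q s b'))" using C(3) by blast
      then show ?thesis unfolding v(4,5) C(4) qs bc cc_chG unfolding eR_chG unfolding bb_chG ovl_sw .
    qed
  qed
next
  fix q s assume v: "q < length cls" "s < 3" "B = ChB q s (CB 4 PB)" "c = ClC q"
  from B'(1) show ?thesis
  proof (cases rule: B'_cases)
    case (V j b') then show ?thesis using bx v by (simp add: box_simps)
  next
    case (C q' s' b')
    have qs: "q' = q" "s' = s" "chbox b' = 2" using bx v C chbox12[of b'] by (simp_all add: box_simps split: if_splits)
    from L4_local[OF up_facts[OF v(2)], where ox="oxc cls q s"]
    have "\<forall>b'. chBok b' \<longrightarrow> b' \<noteq> CB 4 PB \<longrightarrow> chbox b' = 2 \<longrightarrow>
       \<not> ovl (eRect (fst (chG n cls a q s (CB 4 PB))) (snd (chG n cls a q s (CB 4 PB))) (Qc n cls q, Qc n cls q)) (snd (chG n cls a q s b'))"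
      unfolding Let_def chG_def by blast
    moreover have "b' \<noteq> CB 4 PB" using B'(2) v C qs by simp
    ultimately have "\<not> ovl (eRect (fst (chG n cls a q s (CB 4 PB))) (snd (chG n cls a q s (CB 4 PB))) (Qc n cls q, Qc n cls q)) (snd (chG n cls a q s b'))"
      using C(3) qs(3) by blast
    then show ?thesis unfolding v(3,4) C(4) qs(1,2) cc_K[of q "tv a cls q s"] unfolding eR_chG unfolding bb_chG ovl_sw .
  qed
next
  fix q s assume v: "q < length cls" "s < 3" "B = ChB q s (CB 1 PB)" "c = ocn q s"
  from B'(1) show ?thesis
  proof (cases rule: B'_cases)
    case (V j b')
    have j: "j = fst (cls ! q ! s)" using bx v V by (simp add: box_simps)
    show ?thesis unfolding v(3,4) V(2) j L0g[OF v(1,2)] by (rule vbcorr_glob(1)[OF v(1,2)])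
  next
    case (C q' s' b')
    have qs: "q' = q" "s' = s" "chbox b' = 1" using bx v C chbox12[of b'] by (simp_all add: box_simps split: if_splits)
    from L0_local[OF oy_lt[OF v(1,2)], where ox="oxc cls q s" and Q="Qc n cls q" and up="\<not> sec a cls q s"]
    have "\<forall>b'. chBok b' \<longrightarrow> b' \<noteq> CB 1 PB \<longrightarrow> chbox b' = 1 \<longrightarrow>
       \<not> ovl (eRect (fst (chG n cls a q s (CB 1 PB))) (snd (chG n cls a q s (CB 1 PB))) (oxc cls q s, oyc q s)) (snd (chG n cls a q s b'))"
      unfolding Let_def chG_def by blast
    moreover have "b' \<noteq> CB 1 PB" using B'(2) v C qs by simp
    ultimately have "\<not> ovl (eRect (fst (chG n cls a q s (CB 1 PB))) (snd (chG n cls a q s (CB 1 PB))) (oxc cls q s, oyc q s)) (snd (chG n cls a q s b'))"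
      using C(3) qs(3) by blast
    then show ?thesis unfolding v(3,4) C(4) qs(1,2) cc_o[OF v(1,2)] unfolding eR_chG unfolding bb_chG ovl_sw .
  qed
qed

end

context inst begin

lemma H7':
  assumes e: "(B, c) \<in> EE" and C': "c' \<in> snd ` EE" "c' \<noteq> c" and bx: "boxC c' = boxB B \<or> boxC c' = boxC c"
  shows "\<not> inr (cc c') (eRect (hh B) (bb B) (cc c))"
  using E_cases[OF e]
proof (elim disjE exE conjE)
  fix i b0 c0 assume v: "i < n" "(b0, c0) \<in> vbox_edges (kk cls i True) (kk cls i False)" "B = VarB i b0" "c = VarC i c0"
  from C'(1) show ?thesis
  proof (cases rule: C'_cases)
    case (V j c1)
    have ji: "j = i" using bx v V by simp
    have nc: "c1 \<noteq> c0" using C'(2) v V ji by simp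
    have "\<forall>c'. vcok (kk cls i True) (kk cls i False) c' \<longrightarrow> c' \<noteq> c0 \<longrightarrow>
        \<not> inr (vbGC cls i c') (eRect (fst (vbG cls i b0)) (snd (vbG cls i b0)) (vbGC cls i c0))"
      using vgood_i[OF v(1,2)] unfolding vgood_def Let_def vbG_def vbGC_def by blast
    then have "\<not> inr (vbGC cls i c1) (eRect (fst (vbG cls i b0)) (snd (vbG cls i b0)) (vbGC cls i c0))"
      using nc V(2) ji by blast
    then show ?thesis unfolding v(3,4) V(3) ji GE_vb unfolding cG.simps inr_sw inr_sh .
  next
    case (C q s c1) then show ?thesis using bx v by (simp split: if_splits)
  next
    case (K q) then show ?thesis using bx v by simp
  qed
next
  fix q s b0 c0 assume v: "q < length cls" "s < 3" "(b0, c0) \<in> chain_edges" "B = ChB q s b0" "c = ChC q s c0"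
  from C'(1) show ?thesis
  proof (cases rule: C'_cases)
    case (V j c1) then show ?thesis using bx v by (simp split: if_splits)
  next
    case (K q') then show ?thesis using bx v by (simp split: if_splits)
  next
    case (C q' s' c1)
    have qs: "q' = q" "s' = s" using bx v C by (simp_all split: if_splits)
    show ?thesis
    proof (cases "chbox b0 = chcbox c0")
      case True
      have cb: "chcbox c1 = chbox b0" using bx v C qs True chcbox12[of c1] chbox12[of b0] chcbox12[of c0] by (auto split: if_splits)
      have nc: "c1 \<noteq> c0" using C'(2) v C qs by simp
      have "\<forall>c'. chCok c' \<longrightarrow> c' \<noteq> c0 \<longrightarrow> chcbox c' = chbox b0 \<longrightarrow>
          \<not> inr (relC (\<not> sec a cls q s) c') (eRect (fst (relB (\<not> sec a cls q s) b0)) (snd (relB (\<not> sec a cls q s) b0)) (relC (\<not> sec a cls q s) c0))"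
        using rgood_ch[OF v(3) True] unfolding rgood_def Let_def by blast
      then have "\<not> inr (relC (\<not> sec a cls q s) c1) (eRect (fst (relB (\<not> sec a cls q s) b0)) (snd (relB (\<not> sec a cls q s) b0)) (relC (\<not> sec a cls q s) c0))"
        using C(3) nc cb by blast
      then show ?thesis unfolding v(4,5) C(4) qs GE_int[OF True] unfolding cG_ch cb inr_sw inr_sh .
    next
      case False
      then have bc: "b0 = CB 2 PB" "c0 = Co 1" using chain_cross v(3) by auto
      have "oxc cls q s + 100 < Qc n cls q" using ox_top[OF v(1,2)] Q_lo[of q] by auto
      from L1_local[OF this, of "P1 n cls a q s" "\<not> sec a cls q s"]
      have "\<forall>c'. chCok c' \<longrightarrow> c' \<noteq> Co 1 \<longrightarrow> \<not> inr (chGC n cls a q s c') (eRect (fst (chG n cls a q s (CB 2 PB))) (snd (chG n cls a q s (CB 2 PB))) (chGC n cls a q s (Co 1)))"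
        unfolding Let_def chG_def chGC_def by blast
      moreover have "c1 \<noteq> Co 1" using C'(2) v C qs bc by simp
      ultimately have "\<not> inr (chGC n cls a q s c1) (eRect (fst (chG n cls a q s (CB 2 PB))) (snd (chG n cls a q s (CB 2 PB))) (chGC n cls a q s (Co 1)))"
        using C(3) by blast
      then show ?thesis unfolding v(4,5) C(4) qs bc cc_chG unfolding eR_chG unfolding inr_sw .
    qed
  qed
next
  fix q s assume v: "q < length cls" "s < 3" "B = ChB q s (CB 4 PB)" "c = ClC q"
  from C'(1) show ?thesis
  proof (cases rule: C'_cases)
    case (V j c1) then show ?thesis using bx v by (simp add: box_simps)
  next
    case (K q') then show ?thesis using bx v C'(2) by (simp add: box_simps)
  next
    case (C q' s' c1)
    have qs: "q' = q" "s' = s" "chcbox c1 = 2" using bx v C chcbox12[of c1] by (simp_all add: box_simps split: if_splits)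
    from L4_local[OF up_facts[OF v(2)], where ox="oxc cls q s"]
    have "\<forall>c'. chCok c' \<longrightarrow> chcbox c' = 2 \<longrightarrow>
       \<not> inr (chGC n cls a q s c') (eRect (fst (chG n cls a q s (CB 4 PB))) (snd (chG n cls a q s (CB 4 PB))) (Qc n cls q, Qc n cls q))"
      unfolding Let_def chG_def chGC_def by blast
    then have "\<not> inr (chGC n cls a q s c1) (eRect (fst (chG n cls a q s (CB 4 PB))) (snd (chG n cls a q s (CB 4 PB))) (Qc n cls q, Qc n cls q))"
      using C(3) qs(3) by blast
    then show ?thesis unfolding v(3,4) C(4) qs(1,2) cc_K[of q "tv a cls q s"] unfolding eR_chG unfolding cc_chG inr_sw .
  qed
next
  fix q s assume v: "q < length cls" "s < 3" "B = ChB q s (CB 1 PB)" "c = ocn q s"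
  from C'(1) show ?thesis
  proof (cases rule: C'_cases)
    case (V j c1)
    have j: "j = fst (cls ! q ! s)" using bx v V by (simp add: box_simps)
    have nc: "c1 \<noteq> Vo (snd (cls ! q ! s)) (occ_num cls q s)" using C'(2) v V j by simp
    show ?thesis unfolding v(3,4) V(3) j L0g[OF v(1,2)]
      by (rule vbcorr_glob(2)[OF v(1,2)]) (use V j nc in auto)
  next
    case (K q') then show ?thesis using bx v by (simp add: box_simps)
  next
    case (C q' s' c1)
    have qs: "q' = q" "s' = s" "chcbox c1 = 1" using bx v C chcbox12[of c1] by (simp_all add: box_simps split: if_splits)
    from L0_local[OF oy_lt[OF v(1,2)], where ox="oxc cls q s" and Q="Qc n cls q" and up="\<not> sec a cls q s"]
    have "\<forall>c'. chCok c' \<longrightarrow> chcbox c' = 1 \<longrightarrow>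
       \<not> inr (chGC n cls a q s c') (eRect (fst (chG n cls a q s (CB 1 PB))) (snd (chG n cls a q s (CB 1 PB))) (oxc cls q s, oyc q s))"
      unfolding Let_def chG_def chGC_def by blast
    then have "\<not> inr (chGC n cls a q s c1) (eRect (fst (chG n cls a q s (CB 1 PB))) (snd (chG n cls a q s (CB 1 PB))) (oxc cls q s, oyc q s))"
      using C(3) qs(3) by blast
    then show ?thesis unfolding v(3,4) C(4) qs(1,2) cc_o[OF v(1,2)] unfolding eR_chG unfolding cc_chG inr_sw .
  qed
qed

end

context inst begin

lemma H8: "\<forall>B\<in>fst ` EE. \<forall>B'\<in>fst ` EE. B \<noteq> B' \<longrightarrow> boxB B = boxB B' \<longrightarrow> \<not> ovl (bb B) (bb B')"
proof (intro ballI impI)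
  fix B B' assume B: "B \<in> fst ` EE" and B': "B' \<in> fst ` EE" and ne: "B \<noteq> B'" and bx: "boxB B = boxB B'"
  from B show "\<not> ovl (bb B) (bb B')"
  proof (cases rule: B'_cases)
    case (V i b)
    from B' show ?thesis
    proof (cases rule: B'_cases)
      case (V j b')
      have ij: "j = i" "b \<noteq> b'" using bx ne \<open>B = VarB i b\<close> V by auto
      have "\<not> ovl (snd (vbG cls i b)) (snd (vbG cls i b'))" using vb_bb ij(2) unfolding vbG_def by blast
      then show ?thesis unfolding \<open>B = VarB i b\<close> V(2) ij(1) bG.simps ovl_sw ovl_sh .
    next
      case (C q s b') then show ?thesis using bx \<open>B = VarB i b\<close> by (simp split: if_splits)
    qed
  next
    case (C q s b)
    from B' show ?thesis
    proof (cases rule: B'_cases)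
      case (V j b') then show ?thesis using bx \<open>B = ChB q s b\<close> by (simp split: if_splits)
    next
      case C2: (C q' s' b')
      have qs: "q' = q" "s' = s" "chbox b' = chbox b" using bx C C2 chbox12[of b] chbox12[of b'] by (auto split: if_splits)
      have nb: "b \<noteq> b'" using ne C C2 qs by auto
      have "\<not> ovl (snd (relB (\<not> sec a cls q s) b)) (snd (relB (\<not> sec a cls q s) b'))"
        using rel_bb1 C(3) C2(3) nb qs(3) by metis
      then show ?thesis unfolding C(4) C2(4) qs(1,2) bG_ch qs(3) ovl_sw ovl_sh .
    qed
  qed
qed

lemma H9: "\<forall>c\<in>snd ` EE. \<forall>c'\<in>snd ` EE. c \<noteq> c' \<longrightarrow> boxC c = boxC c' \<longrightarrow> cc c \<noteq> cc c'"
proof (intro ballI impI)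
  fix c c' assume c: "c \<in> snd ` EE" and c': "c' \<in> snd ` EE" and ne: "c \<noteq> c'" and bx: "boxC c = boxC c'"
  from c show "cc c \<noteq> cc c'"
  proof (cases rule: C'_cases)
    case (V i c0)
    from c' show ?thesis
    proof (cases rule: C'_cases)
      case V2: (V j c1)
      have ij: "j = i" "c0 \<noteq> c1" using bx ne V V2 by auto
      have "vbGC cls i c0 \<noteq> vbGC cls i c1" using vb_cc V(2) V2(2) ij unfolding vbGC_def by blast
      then show ?thesis unfolding V(3) V2(3) ij(1) cG.simps swP_eq shP_eq .
    next
      case (C q s c1) then show ?thesis using bx V by (simp split: if_splits)
    next
      case (K q) then show ?thesis using bx V by simp
    qed
  next
    case (C q s c0)
    from c' show ?thesis
    proof (cases rule: C'_cases)
      case (V j c1) then show ?thesis using bx C by (simp split: if_splits)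
    next
      case C2: (C q' s' c1)
      have qs: "q' = q" "s' = s" "chcbox c1 = chcbox c0" using bx C C2 chcbox12[of c0] chcbox12[of c1] by (auto split: if_splits)
      have nc: "c0 \<noteq> c1" using ne C C2 qs by auto
      have "relC (\<not> sec a cls q s) c0 \<noteq> relC (\<not> sec a cls q s) c1"
        using rel_cc C(3) C2(3) nc qs(3) by metis
      then show ?thesis unfolding C(4) C2(4) qs(1,2) cG_ch qs(3) swP_eq shP_eq .
    next
      case (K q') then show ?thesis using bx C by (simp split: if_splits)
    qed
  next
    case (K q)
    from c' show ?thesis
    proof (cases rule: C'_cases)
      case (V j c1) then show ?thesis using bx K by simp
    next
      case (C q' s' c1) then show ?thesis using bx K by (simp split: if_splits)
    next
      case K2: (K q') then show ?thesis using bx K ne by simp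
    qed
  qed
qed

lemma H10: "\<forall>B\<in>fst ` EE. \<forall>c\<in>snd ` EE. boxB B = boxC c \<longrightarrow> \<not> inr (cc c) (bb B)"
proof (intro ballI impI)
  fix B c assume B: "B \<in> fst ` EE" and c: "c \<in> snd ` EE" and bx: "boxB B = boxC c"
  from B show "\<not> inr (cc c) (bb B)"
  proof (cases rule: B'_cases)
    case (V i b)
    from c show ?thesis
    proof (cases rule: C'_cases)
      case V2: (V j c1)
      have ij: "j = i" using bx V V2 by auto
      have "\<not> inr (vbGC cls i c1) (snd (vbG cls i b))" using vb_cb V2(2) ij unfolding vbGC_def vbG_def by blast
      then show ?thesis unfolding V(2) V2(3) ij cG.simps bG.simps inr_sw inr_sh .
    next
      case (C q s c1) then show ?thesis using bx V by (simp split: if_splits)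
    next
      case (K q) then show ?thesis using bx V by simp
    qed
  next
    case (C q s b)
    from c show ?thesis
    proof (cases rule: C'_cases)
      case (V j c1) then show ?thesis using bx C by (simp split: if_splits)
    next
      case C2: (C q' s' c1)
      have qs: "q' = q" "s' = s" "chcbox c1 = chbox b" using bx C C2 chcbox12[of c1] chbox12[of b] by (auto split: if_splits)
      have "\<not> inr (relC (\<not> sec a cls q s) c1) (snd (relB (\<not> sec a cls q s) b))"
        using rel_cb C(3) C2(3) qs(3) by metis
      then show ?thesis unfolding C(4) C2(4) qs(1,2) cG_ch bG_ch qs(3) inr_sw inr_sh .
    next
      case (K q') then show ?thesis using bx C by (simp split: if_splits)
    qed
  qed
qed

end

context inst begin

definition att :: "bool \<Rightarrow> rect \<Rightarrow> int \<times> int \<Rightarrow> bool" where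
  "att h X p \<longleftrightarrow> (if h then rx1 X \<le> fst p \<and> fst p \<le> rx2 X else ry1 X \<le> snd p \<and> snd p \<le> ry2 X)"

lemma att_sw: "att (h = t) (swR t X) (swP t p) = att h X p" unfolding att_def using attach_sw .
lemma att_sh: "att h (shR d e X) (shP d e p) = att h X p" unfolding att_def using attach_sh .

lemma A': assumes e: "(B, c) \<in> EE" shows "att (hh B) (bb B) (cc c)"
  using E_cases[OF e]
proof (elim disjE exE conjE)
  fix i b0 c0 assume v: "i < n" "(b0, c0) \<in> vbox_edges (kk cls i True) (kk cls i False)" "B = VarB i b0" "c = VarC i c0"
  have "att (fst (vbG cls i b0)) (snd (vbG cls i b0)) (vbGC cls i c0)"
    using vgood_i[OF v(1,2)] unfolding vgood_def Let_def vbG_def vbGC_def att_def by blast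
  then show ?thesis unfolding v(3,4) hG.simps bG.simps cG.simps att_sw att_sh .
next
  fix q s b0 c0 assume v: "q < length cls" "s < 3" "(b0, c0) \<in> chain_edges" "B = ChB q s b0" "c = ChC q s c0"
  show ?thesis
  proof (cases "chbox b0 = chcbox c0")
    case True
    have "att (fst (relB (\<not> sec a cls q s) b0)) (snd (relB (\<not> sec a cls q s) b0)) (relC (\<not> sec a cls q s) c0)"
      using rgood_ch[OF v(3) True] unfolding rgood_def Let_def att_def by blast
    then show ?thesis unfolding v(4,5) hG_ch bG_ch cG_ch True att_sw att_sh .
  next
    case False
    then have bc: "b0 = CB 2 PB" "c0 = Co 1" using chain_cross v(3) by auto
    have "oxc cls q s + 100 < Qc n cls q" using ox_top[OF v(1,2)] Q_lo[of q] by auto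
    from L1_local[OF this, of "P1 n cls a q s" "\<not> sec a cls q s"]
    have "att (fst (chG n cls a q s (CB 2 PB))) (snd (chG n cls a q s (CB 2 PB))) (chGC n cls a q s (Co 1))"
      unfolding Let_def chG_def chGC_def att_def by blast
    then show ?thesis unfolding v(4,5) bc hG.simps bG.simps cG.simps att_sw .
  qed
next
  fix q s assume v: "q < length cls" "s < 3" "B = ChB q s (CB 4 PB)" "c = ClC q"
  from L4_local[OF up_facts[OF v(2)], where ox="oxc cls q s"]
  have "att (fst (chG n cls a q s (CB 4 PB))) (snd (chG n cls a q s (CB 4 PB))) (Qc n cls q, Qc n cls q)"
    unfolding Let_def chG_def att_def by blast
  then show ?thesis unfolding v(3,4) cc_K[of q "tv a cls q s"] hG.simps bG.simps att_sw .
next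
  fix q s assume v: "q < length cls" "s < 3" "B = ChB q s (CB 1 PB)" "c = ocn q s"
  from L0_local[OF oy_lt[OF v(1,2)], where ox="oxc cls q s" and Q="Qc n cls q" and up="\<not> sec a cls q s"]
  have "att (fst (chG n cls a q s (CB 1 PB))) (snd (chG n cls a q s (CB 1 PB))) (oxc cls q s, oyc q s)"
    unfolding Let_def chG_def att_def by blast
  then show ?thesis unfolding v(3,4) cc_o[OF v(1,2)] hG.simps bG.simps att_sw .
qed

lemma int_real_main: "int_real (fst ` EE) (snd ` EE) EE hh bb cc"
proof (rule box_combine[where valid = "valid n cls" and boxB = boxB and boxC = boxC and rectOf = rr])
  show "\<forall>B\<in>fst ` EE. valid n cls (boxB B) \<and> ins (bb B) (rr (boxB B))" by (rule H1)
  show "\<forall>c\<in>snd ` EE. valid n cls (boxC c) \<and> inr (cc c) (rr (boxC c))" by (rule H2)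
  show "\<forall>b b'. valid n cls b \<longrightarrow> valid n cls b' \<longrightarrow> b \<noteq> b' \<longrightarrow> \<not> ovl (rr b) (rr b')" using H3 by blast
  show "\<forall>(B, c)\<in>EE. boxB B = boxC c \<longrightarrow> ins (eRect (hh B) (bb B) (cc c)) (rr (boxB B))" by (rule H4)
  show "\<forall>(B, c)\<in>EE. boxB B \<noteq> boxC c \<longrightarrow> (\<forall>b. valid n cls b \<longrightarrow> b \<noteq> boxB B \<longrightarrow> b \<noteq> boxC c \<longrightarrow>
                 \<not> ovl (eRect (hh B) (bb B) (cc c)) (rr b))" by (rule H5)
  show "\<forall>(B, c)\<in>EE. \<forall>B'\<in>fst ` EE. B' \<noteq> B \<longrightarrow> (boxB B' = boxB B \<or> boxB B' = boxC c) \<longrightarrow>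
                 \<not> ovl (eRect (hh B) (bb B) (cc c)) (bb B')" using H6' by blast
  show "\<forall>(B, c)\<in>EE. \<forall>c'\<in>snd ` EE. c' \<noteq> c \<longrightarrow> (boxC c' = boxB B \<or> boxC c' = boxC c) \<longrightarrow>
                 \<not> inr (cc c') (eRect (hh B) (bb B) (cc c))" using H7' by blast
  show "\<forall>B\<in>fst ` EE. \<forall>B'\<in>fst ` EE. B \<noteq> B' \<longrightarrow> boxB B = boxB B' \<longrightarrow> \<not> ovl (bb B) (bb B')" by (rule H8)
  show "\<forall>c\<in>snd ` EE. \<forall>c'\<in>snd ` EE. c \<noteq> c' \<longrightarrow> boxC c = boxC c' \<longrightarrow> cc c \<noteq> cc c'" by (rule H9)
  show "\<forall>B\<in>fst ` EE. \<forall>c\<in>snd ` EE. boxB B = boxC c \<longrightarrow> \<not> inr (cc c) (bb B)" by (rule H10)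
  show "\<forall>B\<in>fst ` EE. wfr (bb B) \<and> (if hh B then ry1 (bb B) = ry2 (bb B) else rx1 (bb B) = rx2 (bb B))" by (rule W)
  show "\<forall>(B, c)\<in>EE. if hh B then rx1 (bb B) \<le> fst (cc c) \<and> fst (cc c) \<le> rx2 (bb B)
                         else ry1 (bb B) \<le> snd (cc c) \<and> snd (cc c) \<le> ry2 (bb B)"
    using A' unfolding att_def by blast
  show "EE \<subseteq> fst ` EE \<times> snd ` EE" by force
qed

lemma realizable_main: "realizable (fst ` EE) (snd ` EE) EE"
  unfolding realizable_def using int_real_imp[OF _ int_real_main] by force

end

lemma hard_dir:
  assumes ok: "\<forall>C\<in>set cls. length C = 3 \<and> (\<forall>l\<in>set C. fst l < n)" and ns: "nae_sat cls"
  shows "realizable (fst ` nae_bus_edges n cls) (snd ` nae_bus_edges n cls) (nae_bus_edges n cls)"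
proof -
  obtain a where a: "\<forall>C\<in>set cls. (\<exists>l\<in>set C. lit_val a l) \<and> (\<exists>l\<in>set C. \<not> lit_val a l)"
    using ns unfolding nae_sat_def by blast
  interpret inst n cls a using ok a by unfold_locales
  show ?thesis by (rule realizable_main)
qed

theorem lemma7:
  fixes n :: nat and cls :: "(nat \<times> bool) list list"
  assumes "\<forall>C\<in>set cls. length C = 3 \<and> (\<forall>l\<in>set C. fst l < n)"
  shows "nae_sat cls \<longleftrightarrow>
    (case nae_bus_graph n cls of (Bs, Cs, E) \<Rightarrow> realizable Bs Cs E)"
proof -
  have g: "nae_bus_graph n cls = (fst ` nae_bus_edges n cls, snd ` nae_bus_edges n cls, nae_bus_edges n cls)"
    unfolding nae_bus_graph_def Let_def ..
  show ?thesis unfolding g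
  proof (simp only: prod.case, rule iffI)
    assume "nae_sat cls" then show "realizable (fst ` nae_bus_edges n cls) (snd ` nae_bus_edges n cls) (nae_bus_edges n cls)"
      using hard_dir assms by blast
  next
    assume "realizable (fst ` nae_bus_edges n cls) (snd ` nae_bus_edges n cls) (nae_bus_edges n cls)"
    then obtain hor bus pt where R: "bus_realization (fst ` nae_bus_edges n cls) (snd ` nae_bus_edges n cls) (nae_bus_edges n cls) hor bus pt"
      unfolding realizable_def by blast
    show "nae_sat cls" by (rule easy_dir[OF R assms])
  qed
qed

end
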